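(* Let $\mathbb D$ be a nonempty set of database instances over the same schema. (1) If $\mathbb D$ has bounded instance size, then $\mathcal D\in\mathsf{FO}(\mathsf{TI})$ for every probabilistic database $\mathcal D$ with $\mathrm{worlds}(\mathcal D)=\mathbb D$. (2) If $\mathbb D$ has unbounded instance size, then there exist probabilistic databases $\mathcal D_1\in\mathsf{FO}(\mathsf{TI})$ and $\mathcal D_2\notin\mathsf{FO}(\mathsf{TI})$ such that $\mathrm{worlds}(\mathcal D_1)=\mathrm{worlds}(\mathcal D_2)=\mathbb D$.
   Context: Fix a countably infinite universe $U$. A database schema is a finite nonempty set of relation symbols with arities; facts are $R(u_1,\dots,u_{\mathrm{ar}(R)})$ with $u_i\in U$; an instance is a finite set of facts ($|D|$ = number of facts); $\mathrm{adom}(D)$ is the set of elements of $U$ occurring in $D$. A probabilistic database (PDB) is a discrete probability space $(\mathbb D,P)$ with $\mathbb D$ a nonempty countable set of instances over a schema; $\mathrm{worlds}(\mathcal D)$ is the set of instances $D$ with $P(\{D\})>0$. A set of instances has bounded instance size if there is $c$ with $|D|\le c$ for all its members, and unbounded instance size otherwise. A PDB $\mathcal I$ is tuple-independent if for all pairwise distinct facts $f_1,\dots,f_k$, $\Pr_{I\sim\mathcal I}(f_1\in I,\dots,f_k\in I)=\prod_i\Pr_{I\sim\mathcal I}(f_i\in I)$. An FO-view consists of one first-order formula $\Phi_R(x_1,\dots,x_{\mathrm{ar}(R)})$ per output relation symbol $R$, evaluated under active domain semantics (quantifiers range over $\mathrm{adom}(D)$ and the formula's constants), mapping $D$ to the instance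 containing $R(\bar a)$ for all tuples $\bar a$ over $\mathrm{adom}(D)\cup\mathrm{adom}(\Phi_R)$ with $D\models\Phi_R[\bar a]$. The image of a PDB $(\mathbb D,P)$ under a view $V$ is the PDB on $V(\mathbb D)$ with $P'(\{D'\})=P(\{D:V(D)=D'\})$. $\mathsf{FO}(\mathsf{TI})$ is the class of images of tuple-independent PDBs under FO-views. *)

theory Defs
  imports "HOL-Probability.Probability"
begin

(* A relation symbol is identified by a name together with its arity. *)
type_synonym rel = "nat \<times> nat"

definition arity :: "rel \<Rightarrow> nat" where
  "arity R = snd R"

type_synonym 'u fact = "rel \<times> 'u list"

type_synonym 'u inst = "'u fact set"

definition schema :: "rel set \<Rightarrow> bool" where
  "schema S \<longleftrightarrow> finite S \<and> S \<noteq> {}"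

definition instance_over :: "rel set \<Rightarrow> 'u inst \<Rightarrow> bool" where
  "instance_over S D \<longleftrightarrow> finite D \<and> (\<forall>(R, as) \<in> D. R \<in> S \<and> length as = arity R)"

definition adom :: "'u inst \<Rightarrow> 'u set" where
  "adom D = (\<Union>(R, as) \<in> D. set as)"

definition bounded_instance_size :: "'u inst set \<Rightarrow> bool" where
  "bounded_instance_size DD \<longleftrightarrow> (\<exists>c::nat. \<forall>D \<in> DD. card D \<le> c)"

definition pdb :: "rel set \<Rightarrow> 'u inst pmf \<Rightarrow> bool" where
  "pdb S P \<longleftrightarrow> schema S \<and> (\<forall>D \<in> set_pmf P. instance_over S D)"

definition worlds :: "'u inst pmf \<Rightarrow> 'u inst set" where
  "worlds P = set_pmf P"

definition tuple_independent :: "'u inst pmf \<Rightarrow> bool" where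
  "tuple_independent P \<longleftrightarrow>
     (\<forall>F :: 'u fact set. finite F \<longrightarrow>
        measure_pmf.prob P {I. F \<subseteq> I} = (\<Prod>f\<in>F. measure_pmf.prob P {I. f \<in> I}))"

datatype 'u trm = Var nat | Const 'u

datatype 'u fo =
    FTrue | FFalse
  | Atom rel "'u trm list"
  | FEq "'u trm" "'u trm"
  | Neg "'u fo"
  | Conj "'u fo" "'u fo"
  | Disj "'u fo" "'u fo"
  | Impl "'u fo" "'u fo"
  | FEx nat "'u fo"
  | FAll nat "'u fo"

fun trm_consts :: "'u trm \<Rightarrow> 'u set" where
  "trm_consts (Var _) = {}"
| "trm_consts (Const c) = {c}"

fun trm_vars :: "'u trm \<Rightarrow> nat set" where
  "trm_vars (Var x) = {x}"
| "trm_vars (Const _) = {}"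

fun fo_consts :: "'u fo \<Rightarrow> 'u set" where
  "fo_consts FTrue = {}"
| "fo_consts FFalse = {}"
| "fo_consts (Atom R ts) = (\<Union>t \<in> set ts. trm_consts t)"
| "fo_consts (FEq s t) = trm_consts s \<union> trm_consts t"
| "fo_consts (Neg \<phi>) = fo_consts \<phi>"
| "fo_consts (Conj \<phi> \<psi>) = fo_consts \<phi> \<union> fo_consts \<psi>"
| "fo_consts (Disj \<phi> \<psi>) = fo_consts \<phi> \<union> fo_consts \<psi>"
| "fo_consts (Impl \<phi> \<psi>) = fo_consts \<phi> \<union> fo_consts \<psi>"
| "fo_consts (FEx x \<phi>) = fo_consts \<phi>"
| "fo_consts (FAll x \<phi>) = fo_consts \<phi>"

fun fv :: "'u fo \<Rightarrow> nat set" where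
  "fv FTrue = {}"
| "fv FFalse = {}"
| "fv (Atom R ts) = (\<Union>t \<in> set ts. trm_vars t)"
| "fv (FEq s t) = trm_vars s \<union> trm_vars t"
| "fv (Neg \<phi>) = fv \<phi>"
| "fv (Conj \<phi> \<psi>) = fv \<phi> \<union> fv \<psi>"
| "fv (Disj \<phi> \<psi>) = fv \<phi> \<union> fv \<psi>"
| "fv (Impl \<phi> \<psi>) = fv \<phi> \<union> fv \<psi>"
| "fv (FEx x \<phi>) = fv \<phi> - {x}"
| "fv (FAll x \<phi>) = fv \<phi> - {x}"

fun rels :: "'u fo \<Rightarrow> rel set" where
  "rels FTrue = {}"
| "rels FFalse = {}"
| "rels (Atom R ts) = {R}"
| "rels (FEq s t) = {}"
| "rels (Neg \<phi>) = rels \<phi>"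
| "rels (Conj \<phi> \<psi>) = rels \<phi> \<union> rels \<psi>"
| "rels (Disj \<phi> \<psi>) = rels \<phi> \<union> rels \<psi>"
| "rels (Impl \<phi> \<psi>) = rels \<phi> \<union> rels \<psi>"
| "rels (FEx x \<phi>) = rels \<phi>"
| "rels (FAll x \<phi>) = rels \<phi>"

fun eval_trm :: "(nat \<Rightarrow> 'u) \<Rightarrow> 'u trm \<Rightarrow> 'u" where
  "eval_trm \<sigma> (Var x) = \<sigma> x"
| "eval_trm \<sigma> (Const c) = c"

fun sat :: "'u inst \<Rightarrow> 'u set \<Rightarrow> (nat \<Rightarrow> 'u) \<Rightarrow> 'u fo \<Rightarrow> bool" where
  "sat D A \<sigma> FTrue = True"
| "sat D A \<sigma> FFalse = False"
| "sat D A \<sigma> (Atom R ts) = ((R, map (eval_trm \<sigma>) ts) \<in> D)"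
| "sat D A \<sigma> (FEq s t) = (eval_trm \<sigma> s = eval_trm \<sigma> t)"
| "sat D A \<sigma> (Neg \<phi>) = (\<not> sat D A \<sigma> \<phi>)"
| "sat D A \<sigma> (Conj \<phi> \<psi>) = (sat D A \<sigma> \<phi> \<and> sat D A \<sigma> \<psi>)"
| "sat D A \<sigma> (Disj \<phi> \<psi>) = (sat D A \<sigma> \<phi> \<or> sat D A \<sigma> \<psi>)"
| "sat D A \<sigma> (Impl \<phi> \<psi>) = (sat D A \<sigma> \<phi> \<longrightarrow> sat D A \<sigma> \<psi>)"
| "sat D A \<sigma> (FEx x \<phi>) = (\<exists>a \<in> A. sat D A (\<sigma>(x := a)) \<phi>)"
| "sat D A \<sigma> (FAll x \<phi>) = (\<forall>a \<in> A. sat D A (\<sigma>(x := a)) \<phi>)"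

definition sat_adom :: "'u inst \<Rightarrow> 'u fo \<Rightarrow> 'u list \<Rightarrow> bool" where
  "sat_adom D \<phi> as = sat D (adom D \<union> fo_consts \<phi>) (\<lambda>i. as ! i) \<phi>"

definition fo_view :: "rel set \<Rightarrow> rel set \<Rightarrow> (rel \<Rightarrow> 'u fo) \<Rightarrow> bool" where
  "fo_view Sin Sout \<Phi> \<longleftrightarrow> schema Sin \<and> schema Sout \<and>
     (\<forall>R \<in> Sout. fv (\<Phi> R) \<subseteq> {..<arity R} \<and> rels (\<Phi> R) \<subseteq> Sin)"

definition view_apply :: "rel set \<Rightarrow> (rel \<Rightarrow> 'u fo) \<Rightarrow> 'u inst \<Rightarrow> 'u inst" where
  "view_apply Sout \<Phi> D =
     {(R, as) | R as. R \<in> Sout \<and> length as = arity R \<and>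
        set as \<subseteq> adom D \<union> fo_consts (\<Phi> R) \<and> sat_adom D (\<Phi> R) as}"

definition in_FO_TI :: "rel set \<Rightarrow> 'u inst pmf \<Rightarrow> bool" where
  "in_FO_TI S P \<longleftrightarrow>
     (\<exists>Sin (I :: 'u inst pmf) \<Phi>. pdb Sin I \<and> tuple_independent I \<and> fo_view Sin S \<Phi> \<and>
        P = map_pmf (view_apply S \<Phi>) I)"

end

theory Submission
  imports Defs
begin

definition ti :: "'a set pmf \<Rightarrow> bool" where
  "ti P \<longleftrightarrow> (\<forall>F. finite F \<longrightarrow>
      measure_pmf.prob P {I. F \<subseteq> I} = (\<Prod>f\<in>F. measure_pmf.prob P {I. f \<in> I}))"

lemma tuple_independent_ti: "tuple_independent P = ti P"
  unfolding tuple_independent_def ti_def ..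

lemma prob_cong_support:
  assumes "\<And>x. x \<in> set_pmf P \<Longrightarrow> x \<in> A \<longleftrightarrow> x \<in> B"
  shows "measure_pmf.prob P A = measure_pmf.prob P B"
proof -
  have "A \<inter> set_pmf P = B \<inter> set_pmf P" using assms by blast
  then show ?thesis by (metis measure_Int_set_pmf)
qed

lemma prob_zero_support:
  assumes "\<And>x. x \<in> set_pmf P \<Longrightarrow> x \<notin> A"
  shows "measure_pmf.prob P A = 0"
proof -
  have "measure_pmf.prob P A = measure_pmf.prob P {}"
    by (rule prob_cong_support) (use assms in auto)
  then show ?thesis by simp
qed

lemma ti_map_inj:
  assumes ti: "ti P" and sup: "\<And>X. X \<in> set_pmf P \<Longrightarrow> X \<subseteq> U" and inj: "inj_on h U"
  shows "ti (map_pmf ((`) h) P)"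
  unfolding ti_def
proof (intro allI impI)
  fix F :: "'b set" assume fin: "finite F"
  have marg: "measure_pmf.prob (map_pmf ((`) h) P) {I. f \<in> I} = measure_pmf.prob P {X. f \<in> h ` X}" for f
    by (simp add: vimage_def)
  have jnt: "measure_pmf.prob (map_pmf ((`) h) P) {I. F \<subseteq> I} = measure_pmf.prob P {X. F \<subseteq> h ` X}"
    by (simp add: vimage_def)
  show "measure_pmf.prob (map_pmf ((`) h) P) {I. F \<subseteq> I} =
        (\<Prod>f\<in>F. measure_pmf.prob (map_pmf ((`) h) P) {I. f \<in> I})"
  proof (cases "F \<subseteq> h ` U")
    case True
    define F' where "F' = U \<inter> h -` F"
    have hF': "h ` F' = F" using True by (auto simp: F'_def)
    have F'U: "F' \<subseteq> U" by (simp add: F'_def)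
    have inj': "inj_on h F'" using inj_on_subset[OF inj F'U] .
    have finF': "finite F'" using fin hF' inj' finite_image_iff by metis
    have "measure_pmf.prob P {X. F \<subseteq> h ` X} = measure_pmf.prob P {X. F' \<subseteq> X}"
    proof (rule prob_cong_support)
      fix X assume "X \<in> set_pmf P"
      then have XU: "X \<subseteq> U" by (rule sup)
      show "X \<in> {X. F \<subseteq> h ` X} \<longleftrightarrow> X \<in> {X. F' \<subseteq> X}"
      proof
        assume "X \<in> {X. F \<subseteq> h ` X}"
        then have "F \<subseteq> h ` X" by simp
        show "X \<in> {X. F' \<subseteq> X}"
        proof (clarsimp)
          fix x assume "x \<in> F'"
          then have "h x \<in> F" "x \<in> U" by (auto simp: F'_def)
          then obtain y where "y \<in> X" "h x = h y" using \<open>F \<subseteq> h ` X\<close> by auto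
          then have "x = y" using inj XU \<open>x \<in> U\<close> by (auto dest: inj_onD)
          then show "x \<in> X" using \<open>y \<in> X\<close> by simp
        qed
      next
        assume "X \<in> {X. F' \<subseteq> X}"
        then show "X \<in> {X. F \<subseteq> h ` X}" using hF' by auto
      qed
    qed
    also have "\<dots> = (\<Prod>f\<in>F'. measure_pmf.prob P {X. f \<in> X})"
      using ti finF' unfolding ti_def by blast
    also have "\<dots> = (\<Prod>f\<in>F'. measure_pmf.prob P {X. h f \<in> h ` X})"
    proof (rule prod.cong[OF refl])
      fix f assume "f \<in> F'"
      then have fU: "f \<in> U" using F'U by auto
      show "measure_pmf.prob P {X. f \<in> X} = measure_pmf.prob P {X. h f \<in> h ` X}"
      proof (rule prob_cong_support)
        fix X assume "X \<in> set_pmf P"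
        then have XU: "X \<subseteq> U" by (rule sup)
        show "X \<in> {X. f \<in> X} \<longleftrightarrow> X \<in> {X. h f \<in> h ` X}"
          using inj XU fU by (auto dest: inj_onD)
      qed
    qed
    also have "\<dots> = (\<Prod>f\<in>F. measure_pmf.prob P {X. f \<in> h ` X})"
      using prod.reindex[OF inj', of "\<lambda>f. measure_pmf.prob P {X. f \<in> h ` X}"] hF' by simp
    finally show ?thesis using marg jnt by simp
  next
    case False
    then obtain f where fF: "f \<in> F" and fnot: "f \<notin> h ` U" by auto
    have z: "measure_pmf.prob P {X. f \<in> h ` X} = 0"
      by (rule prob_zero_support) (use sup fnot in blast)
    have z2: "measure_pmf.prob P {X. F \<subseteq> h ` X} = 0"
      by (rule prob_zero_support) (use sup fnot fF in blast)
    have "(\<Prod>f\<in>F. measure_pmf.prob P {X. f \<in> h ` X}) = 0"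
      using fin fF z by (metis (no_types, lifting) prod_zero_iff)
    then show ?thesis using marg jnt z2 by simp
  qed
qed

lemma prob_pair_product:
  "measure_pmf.prob (pair_pmf A B) {(X,Y). X \<in> SA \<and> Y \<in> SB} =
     measure_pmf.prob A SA * measure_pmf.prob B SB"
proof -
  have "measure_pmf.prob (pair_pmf A B) {(X,Y). X \<in> SA \<and> Y \<in> SB} =
        measure_pmf.prob (pair_pmf A B) ((SA \<inter> set_pmf A) \<times> (SB \<inter> set_pmf B))"
    by (rule prob_cong_support) auto
  also have "\<dots> = measure_pmf.prob A (SA \<inter> set_pmf A) * measure_pmf.prob B (SB \<inter> set_pmf B)"
    by (rule measure_pmf_prob_product) (auto intro: countable_subset[OF _ countable_set_pmf])
  also have "\<dots> = measure_pmf.prob A SA * measure_pmf.prob B SB"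
    by (simp add: measure_Int_set_pmf)
  finally show ?thesis .
qed

definition upair :: "'a set pmf \<Rightarrow> 'a set pmf \<Rightarrow> 'a set pmf" where
  "upair A B = map_pmf (\<lambda>(X,Y). X \<union> Y) (pair_pmf A B)"

lemma set_pmf_upair: "set_pmf (upair A B) = {X \<union> Y |X Y. X \<in> set_pmf A \<and> Y \<in> set_pmf B}"
  unfolding upair_def by auto

lemma upair_prob:
  assumes supA: "\<And>X. X \<in> set_pmf A \<Longrightarrow> X \<subseteq> UA" and supB: "\<And>Y. Y \<in> set_pmf B \<Longrightarrow> Y \<subseteq> UB"
    and disj: "UA \<inter> UB = {}" and FU: "F \<subseteq> UA \<union> UB"
  shows "measure_pmf.prob (upair A B) {I. F \<subseteq> I} =
      measure_pmf.prob A {X. F \<inter> UA \<subseteq> X} * measure_pmf.prob B {Y. F \<inter> UB \<subseteq> Y}"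
proof -
  have "measure_pmf.prob (upair A B) {I. F \<subseteq> I} = measure_pmf.prob (pair_pmf A B) {(X,Y). F \<subseteq> X \<union> Y}"
    unfolding upair_def measure_map_pmf by (intro arg_cong[where f="measure_pmf.prob _"]) auto
  also have "\<dots> = measure_pmf.prob (pair_pmf A B) {(X,Y). X \<in> {X. F \<inter> UA \<subseteq> X} \<and> Y \<in> {Y. F \<inter> UB \<subseteq> Y}}"
  proof (rule prob_cong_support)
    fix z assume "z \<in> set_pmf (pair_pmf A B)"
    then obtain X Y where z: "z = (X,Y)" "X \<in> set_pmf A" "Y \<in> set_pmf B" by auto
    then have "X \<subseteq> UA" "Y \<subseteq> UB" using supA supB by auto
    then show "z \<in> {(X,Y). F \<subseteq> X \<union> Y} \<longleftrightarrow> z \<in> {(X,Y). X \<in> {X. F \<inter> UA \<subseteq> X} \<and> Y \<in> {Y. F \<inter> UB \<subseteq> Y}}"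
      using z disj FU by auto
  qed
  also have "\<dots> = measure_pmf.prob A {X. F \<inter> UA \<subseteq> X} * measure_pmf.prob B {Y. F \<inter> UB \<subseteq> Y}"
    by (rule prob_pair_product)
  finally show ?thesis .
qed

lemma upair_prob_out:
  assumes supA: "\<And>X. X \<in> set_pmf A \<Longrightarrow> X \<subseteq> UA" and supB: "\<And>Y. Y \<in> set_pmf B \<Longrightarrow> Y \<subseteq> UB"
    and FU: "\<not> F \<subseteq> UA \<union> UB"
  shows "measure_pmf.prob (upair A B) {I. F \<subseteq> I} = 0"
proof (rule prob_zero_support)
  fix I assume "I \<in> set_pmf (upair A B)"
  then have "I \<subseteq> UA \<union> UB" using supA supB by (auto simp: set_pmf_upair)
  then show "I \<notin> {I. F \<subseteq> I}" using FU by auto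
qed

lemma ti_upair:
  assumes tiA: "ti A" and tiB: "ti B"
    and supA: "\<And>X. X \<in> set_pmf A \<Longrightarrow> X \<subseteq> UA" and supB: "\<And>Y. Y \<in> set_pmf B \<Longrightarrow> Y \<subseteq> UB"
    and disj: "UA \<inter> UB = {}"
  shows "ti (upair A B)"
  unfolding ti_def
proof (intro allI impI)
  fix F :: "'a set" assume fin: "finite F"
  have margA: "measure_pmf.prob (upair A B) {I. f \<in> I} = measure_pmf.prob A {X. f \<in> X}" if "f \<in> UA" for f
  proof -
    have "{f} \<inter> UB = {}" using that disj by auto
    moreover have "{f} \<inter> UA = {f}" using that by auto
    ultimately show ?thesis using upair_prob[of A UA B UB "{f}"] supA supB disj that by simp
  qed
  have margB: "measure_pmf.prob (upair A B) {I. f \<in> I} = measure_pmf.prob B {X. f \<in> X}" if "f \<in> UB" for f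
  proof -
    have "{f} \<inter> UA = {}" using that disj by auto
    moreover have "{f} \<inter> UB = {f}" using that by auto
    ultimately show ?thesis using upair_prob[of A UA B UB "{f}"] supA supB disj that by simp
  qed
  show "measure_pmf.prob (upair A B) {I. F \<subseteq> I} = (\<Prod>f\<in>F. measure_pmf.prob (upair A B) {I. f \<in> I})"
  proof (cases "F \<subseteq> UA \<union> UB")
    case True
    have FA: "finite (F \<inter> UA)" "finite (F \<inter> UB)" using fin by auto
    have "measure_pmf.prob (upair A B) {I. F \<subseteq> I} =
      measure_pmf.prob A {X. F \<inter> UA \<subseteq> X} * measure_pmf.prob B {Y. F \<inter> UB \<subseteq> Y}"
      by (rule upair_prob[of A UA B UB F]) (use supA supB disj True in auto)
    also have "\<dots> = (\<Prod>f\<in>F \<inter> UA. measure_pmf.prob A {X. f \<in> X}) * (\<Prod>f\<in>F \<inter> UB. measure_pmf.prob B {X. f \<in> X})"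
      using tiA tiB FA unfolding ti_def by simp
    also have "\<dots> = (\<Prod>f\<in>F \<inter> UA. measure_pmf.prob (upair A B) {I. f \<in> I}) * (\<Prod>f\<in>F \<inter> UB. measure_pmf.prob (upair A B) {I. f \<in> I})"
      using margA margB by simp
    also have "\<dots> = (\<Prod>f\<in>(F \<inter> UA) \<union> (F \<inter> UB). measure_pmf.prob (upair A B) {I. f \<in> I})"
      by (rule prod.union_disjoint[symmetric]) (use FA disj in auto)
    also have "(F \<inter> UA) \<union> (F \<inter> UB) = F" using True by auto
    finally show ?thesis .
  next
    case False
    then obtain f where fF: "f \<in> F" "f \<notin> UA \<union> UB" by auto
    have z: "measure_pmf.prob (upair A B) {I. f \<in> I} = 0"
      using upair_prob_out[of A UA B UB "{f}"] supA supB fF by simp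
    have "(\<Prod>f\<in>F. measure_pmf.prob (upair A B) {I. f \<in> I}) = 0"
      using fin fF z by (metis (no_types, lifting) prod_zero_iff)
    then show ?thesis using upair_prob_out[of A UA B UB F] supA supB False by simp
  qed
qed

lemma ti_small:
  assumes "\<And>X. X \<in> set_pmf P \<Longrightarrow> X \<subseteq> {a}"
  shows "ti P"
  unfolding ti_def
proof (intro allI impI)
  fix F :: "'a set" assume fin: "finite F"
  show "measure_pmf.prob P {I. F \<subseteq> I} = (\<Prod>f\<in>F. measure_pmf.prob P {I. f \<in> I})"
  proof (cases "F \<subseteq> {a}")
    case True
    then consider "F = {}" | "F = {a}" by blast
    then show ?thesis by cases auto
  next
    case False
    then obtain f where fF: "f \<in> F" "f \<noteq> a" by auto
    have z: "measure_pmf.prob P {I. f \<in> I} = 0"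
      by (rule prob_zero_support) (use assms fF in blast)
    have z2: "measure_pmf.prob P {I. F \<subseteq> I} = 0"
      by (rule prob_zero_support) (use assms fF in blast)
    have "(\<Prod>f\<in>F. measure_pmf.prob P {I. f \<in> I}) = 0"
      using fin fF z by (metis (no_types, lifting) prod_zero_iff)
    then show ?thesis using z2 by simp
  qed
qed

lemma pmf_upair:
  assumes supA: "\<And>X. X \<in> set_pmf A \<Longrightarrow> X \<subseteq> UA" and supB: "\<And>Y. Y \<in> set_pmf B \<Longrightarrow> Y \<subseteq> UB"
    and disj: "UA \<inter> UB = {}" and ZU: "Z \<subseteq> UA \<union> UB"
  shows "pmf (upair A B) Z = pmf A (Z \<inter> UA) * pmf B (Z \<inter> UB)"
proof -
  have "pmf (upair A B) Z = measure_pmf.prob (pair_pmf A B) ((\<lambda>(X,Y). X \<union> Y) -` {Z})"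
    unfolding upair_def by (rule pmf_map)
  also have "\<dots> = measure_pmf.prob (pair_pmf A B) {(Z \<inter> UA, Z \<inter> UB)}"
  proof (rule prob_cong_support)
    fix z assume "z \<in> set_pmf (pair_pmf A B)"
    then obtain X Y where z: "z = (X,Y)" "X \<in> set_pmf A" "Y \<in> set_pmf B" by auto
    then have "X \<subseteq> UA" "Y \<subseteq> UB" using supA supB by auto
    then show "z \<in> (\<lambda>(X,Y). X \<union> Y) -` {Z} \<longleftrightarrow> z \<in> {(Z \<inter> UA, Z \<inter> UB)}"
      using z disj ZU by auto
  qed
  also have "\<dots> = pmf A (Z \<inter> UA) * pmf B (Z \<inter> UB)"
    by (simp add: measure_pmf_single pmf_pair)
  finally show ?thesis .
qed

definition ell :: "(nat \<Rightarrow> real) \<Rightarrow> nat \<Rightarrow> real" where "ell q n = ln (1 + q n)"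
definition Tq :: "(nat \<Rightarrow> real) \<Rightarrow> nat \<Rightarrow> real" where "Tq q n = exp (- (\<Sum>j. ell q (j + n)))"
definition pq :: "(nat \<Rightarrow> real) \<Rightarrow> nat \<Rightarrow> real" where "pq q n = q n / (1 + q n)"
definition nd :: "(nat \<Rightarrow> real) \<Rightarrow> nat \<Rightarrow> real" where
  "nd q N = (case N of 0 \<Rightarrow> Tq q 0 | Suc m \<Rightarrow> Tq q (Suc m) - Tq q m)"
definition Nd :: "(nat \<Rightarrow> real) \<Rightarrow> nat pmf" where "Nd q = embed_pmf (nd q)"

primrec bsub :: "(nat \<Rightarrow> real) \<Rightarrow> nat \<Rightarrow> nat set pmf" where
  "bsub p 0 = return_pmf {}"
| "bsub p (Suc n) = upair (map_pmf (\<lambda>b. if b then {n} else {}) (bernoulli_pmf (p n))) (bsub p n)"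

definition Lam :: "(nat \<Rightarrow> real) \<Rightarrow> nat set pmf" where
  "Lam q = bind_pmf (Nd q) (\<lambda>N. case N of 0 \<Rightarrow> return_pmf {} | Suc n \<Rightarrow> map_pmf (insert n) (bsub (pq q) n))"

lemma bsub_sup: "X \<in> set_pmf (bsub p n) \<Longrightarrow> X \<subseteq> {..<n}"
proof (induction n arbitrary: X)
  case 0 then show ?case by simp
next
  case (Suc n)
  from Suc.prems obtain X1 Y where X: "X = X1 \<union> Y" "X1 \<in> set_pmf (map_pmf (\<lambda>b. if b then {n} else {}) (bernoulli_pmf (p n)))"
    "Y \<in> set_pmf (bsub p n)" by (auto simp: set_pmf_upair)
  have "X1 \<subseteq> {n}" using X(2) by auto
  moreover have "Y \<subseteq> {..<n}" using Suc.IH X(3) by simp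
  ultimately show ?case using X(1) by auto
qed

lemma bern_single_sup: "X \<in> set_pmf (map_pmf (\<lambda>b. if b then {n} else {}) (bernoulli_pmf r)) \<Longrightarrow> X \<subseteq> {n}"
  by auto

lemma bern_single_prob:
  assumes "0 \<le> r" "r \<le> 1" and that: "G \<subseteq> {n}"
  shows "measure_pmf.prob (map_pmf (\<lambda>b. if b then {n} else {}) (bernoulli_pmf r)) {X. G \<subseteq> X} =
     (if n \<in> G then r else 1)"
proof (cases "n \<in> G")
  case True
  then have G: "G = {n}" using that by auto
  have "(\<lambda>b. if b then {n} else {}) -` {X. G \<subseteq> X} = {True}" using G by (auto split: if_splits)
  then show ?thesis using True assms by (simp add: measure_pmf_single pmf_bernoulli_True)
next
  case False
  then have G: "G = {}" using that by auto
  then show ?thesis by simp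
qed

lemma bern_single_pmf:
  assumes "0 \<le> r" "r \<le> 1"
  shows "pmf (map_pmf (\<lambda>b. if b then {n} else {}) (bernoulli_pmf r)) {n} = r"
    and "pmf (map_pmf (\<lambda>b. if b then {n} else {}) (bernoulli_pmf r)) {} = 1 - r"
proof -
  have "(\<lambda>b. if b then {n} else {}) -` {{n}} = {True}" by (auto split: if_splits)
  then show "pmf (map_pmf (\<lambda>b. if b then {n} else {}) (bernoulli_pmf r)) {n} = r"
    using assms by (simp add: pmf_map measure_pmf_single pmf_bernoulli_True)
  have "(\<lambda>b. if b then {n} else {}) -` {{}} = {False}" by (auto split: if_splits)
  then show "pmf (map_pmf (\<lambda>b. if b then {n} else {}) (bernoulli_pmf r)) {} = 1 - r"
    using assms by (simp add: pmf_map measure_pmf_single pmf_bernoulli_False)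
qed

lemma bsub_prob:
  assumes p: "\<And>j. 0 \<le> p j \<and> p j \<le> 1"
  shows "F \<subseteq> {..<n} \<Longrightarrow> measure_pmf.prob (bsub p n) {X. F \<subseteq> X} = (\<Prod>j\<in>F. p j)"
proof (induction n arbitrary: F)
  case 0 then show ?case by simp
next
  case (Suc n)
  have disj: "{n} \<inter> {..<n} = {}" by auto
  have FU: "F \<subseteq> {n} \<union> {..<n}" using Suc.prems by auto
  have "measure_pmf.prob (bsub p (Suc n)) {X. F \<subseteq> X} =
    measure_pmf.prob (map_pmf (\<lambda>b. if b then {n} else {}) (bernoulli_pmf (p n))) {X. F \<inter> {n} \<subseteq> X}
    * measure_pmf.prob (bsub p n) {Y. F \<inter> {..<n} \<subseteq> Y}"
    unfolding bsub.simps
    by (rule upair_prob[OF _ _ disj FU]) (auto dest: bsub_sup)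
  also have "\<dots> = (if n \<in> F then p n else 1) * (\<Prod>j\<in>F \<inter> {..<n}. p j)"
    using bern_single_prob[of "p n" "F \<inter> {n}" n] p Suc.IH[of "F \<inter> {..<n}"] by auto
  also have "\<dots> = (\<Prod>j\<in>F. p j)"
  proof (cases "n \<in> F")
    case True
    have "F = insert n (F \<inter> {..<n})" using True Suc.prems by auto
    then have "(\<Prod>j\<in>F. p j) = p n * (\<Prod>j\<in>F \<inter> {..<n}. p j)"
      by (metis (no_types, lifting) finite_Int finite_lessThan lessThan_iff prod.insert IntE less_irrefl)
    then show ?thesis using True by simp
  next
    case False
    then have "F \<inter> {..<n} = F" using Suc.prems by (auto simp: less_Suc_eq)
    then show ?thesis using False by simp
  qed
  finally show ?case .
qed

lemma bsub_pmf:
  assumes p: "\<And>j. 0 \<le> p j \<and> p j \<le> 1"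
  shows "A \<subseteq> {..<n} \<Longrightarrow> pmf (bsub p n) A = (\<Prod>j\<in>A. p j) * (\<Prod>j\<in>{..<n} - A. 1 - p j)"
proof (induction n arbitrary: A)
  case 0 then show ?case by simp
next
  case (Suc n)
  have disj: "{n} \<inter> {..<n} = {}" by auto
  have AU: "A \<subseteq> {n} \<union> {..<n}" using Suc.prems by auto
  have "pmf (bsub p (Suc n)) A =
    pmf (map_pmf (\<lambda>b. if b then {n} else {}) (bernoulli_pmf (p n))) (A \<inter> {n})
    * pmf (bsub p n) (A \<inter> {..<n})"
    unfolding bsub.simps
    by (rule pmf_upair[OF _ _ disj AU]) (auto dest: bsub_sup)
  also have "\<dots> = (if n \<in> A then p n else 1 - p n) *
      ((\<Prod>j\<in>A \<inter> {..<n}. p j) * (\<Prod>j\<in>{..<n} - (A \<inter> {..<n}). 1 - p j))"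
  proof -
    have "A \<inter> {n} = (if n \<in> A then {n} else {})" by auto
    then show ?thesis using bern_single_pmf[of "p n" n] p Suc.IH[of "A \<inter> {..<n}"] by auto
  qed
  also have "\<dots> = (\<Prod>j\<in>A. p j) * (\<Prod>j\<in>{..<Suc n} - A. 1 - p j)"
  proof (cases "n \<in> A")
    case True
    have A: "A = insert n (A \<inter> {..<n})" using True Suc.prems by auto
    have "(\<Prod>j\<in>A. p j) = p n * (\<Prod>j\<in>A \<inter> {..<n}. p j)"
      by (subst A) (auto intro!: prod.insert)
    moreover have "{..<Suc n} - A = {..<n} - (A \<inter> {..<n})" using True by (auto simp: less_Suc_eq)
    ultimately show ?thesis using True by simp
  next
    case False
    then have A: "A \<inter> {..<n} = A" using Suc.prems by (auto simp: subset_iff less_Suc_eq)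
    have B: "{..<Suc n} - A = insert n ({..<n} - A)" using False by auto
    have "(\<Prod>j\<in>{..<Suc n} - A. 1 - p j) = (1 - p n) * (\<Prod>j\<in>{..<n} - A. 1 - p j)"
      by (subst B) (auto intro!: prod.insert)
    then show ?thesis using False A by simp
  qed
  finally show ?case .
qed

locale qseq =
  fixes q :: "nat \<Rightarrow> real"
  assumes q_nonneg: "\<And>n. 0 \<le> q n" and q_summable: "summable q"
begin

lemma ell_nonneg: "0 \<le> ell q n"
  unfolding ell_def using q_nonneg[of n] by simp

lemma summable_ell: "summable (ell q)"
proof (rule summable_comparison_test'[OF q_summable])
  fix n show "norm (ell q n) \<le> q n"
    using ell_nonneg[of n] ln_add_one_self_le_self[OF q_nonneg[of n]] by (simp add: ell_def)
qed

lemma tail_step: "(\<Sum>j. ell q (j + n)) = ell q n + (\<Sum>j. ell q (j + Suc n))"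
proof -
  have s: "summable (\<lambda>j. ell q (j + n))" using summable_ell by (simp add: summable_iff_shift)
  have "(\<Sum>j. ell q (Suc j + n)) = (\<Sum>j. ell q (j + n)) - ell q (0 + n)"
    by (rule suminf_split_head[OF s])
  then show ?thesis by simp
qed

lemma Tq_pos: "0 < Tq q n" unfolding Tq_def by simp

lemma Tq_le1: "Tq q n \<le> 1"
proof -
  have "0 \<le> (\<Sum>j. ell q (j + n))"
    using summable_ell ell_nonneg by (intro suminf_nonneg) (auto simp: summable_iff_shift)
  then show ?thesis unfolding Tq_def by simp
qed

lemma Tq_Suc: "Tq q (Suc n) = Tq q n * (1 + q n)"
proof -
  have "Tq q n = exp (- ell q n) * Tq q (Suc n)"
    unfolding Tq_def by (subst tail_step) (simp add: exp_add[symmetric])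
  moreover have "exp (- ell q n) = 1 / (1 + q n)"
    unfolding ell_def using q_nonneg[of n] by (simp add: exp_minus exp_ln divide_inverse)
  ultimately show ?thesis using q_nonneg[of n] by (simp add: field_simps)
qed

lemma pq_props: "0 \<le> pq q j" "pq q j < 1" "1 - pq q j = 1 / (1 + q j)"
  using q_nonneg[of j] by (auto simp: pq_def field_simps)

lemma Tq_0: "Tq q 0 = Tq q n * (\<Prod>j<n. 1 - pq q j)"
proof (induction n)
  case 0 then show ?case by simp
next
  case (Suc n)
  have "Tq q n = Tq q (Suc n) * (1 - pq q n)"
    unfolding pq_props(3) Tq_Suc using q_nonneg[of n] by (simp add: field_simps)
  then show ?case using Suc by (simp add: mult.assoc)
qed

lemma Tq_lim: "(\<lambda>n. Tq q n) \<longlonglongrightarrow> 1"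
proof -
  have "(\<lambda>n. \<Sum>j. ell q (j + n)) \<longlonglongrightarrow> 0" by (rule suminf_exist_split2[OF summable_ell])
  then have "(\<lambda>n. exp (- (\<Sum>j. ell q (j + n)))) \<longlonglongrightarrow> exp (- 0)"
    by (intro tendsto_intros)
  then show ?thesis unfolding Tq_def by simp
qed

lemma nd_nonneg: "0 \<le> nd q N"
proof (cases N)
  case 0 then show ?thesis using Tq_pos[of 0] by (simp add: nd_def)
next
  case (Suc m)
  then show ?thesis using Tq_Suc[of m] Tq_pos[of m] q_nonneg[of m] by (simp add: nd_def algebra_simps)
qed

lemma sum_nd: "(\<Sum>i<Suc n. nd q i) = Tq q n"
  by (induction n) (auto simp: nd_def)

lemma nd_sums: "nd q sums 1"
  unfolding sums_def
proof -
  have "(\<lambda>n. \<Sum>i<Suc n. nd q i) \<longlonglongrightarrow> 1" unfolding sum_nd by (rule Tq_lim)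
  then show "(\<lambda>n. \<Sum>i<n. nd q i) \<longlonglongrightarrow> 1"
    apply - apply (rule LIMSEQ_imp_Suc) by simp
qed

lemma nd_ok: "(\<integral>\<^sup>+x. ennreal (nd q x) \<partial>count_space UNIV) = 1"
  by (simp add: nn_integral_count_space_nat suminf_ennreal_eq[OF nd_nonneg nd_sums])

lemma pmf_Nd: "pmf (Nd q) N = nd q N"
  unfolding Nd_def by (rule pmf_embed_pmf[OF nd_nonneg nd_ok])

lemma prob_Nd_le: "measure_pmf.prob (Nd q) {..n} = Tq q n"
proof -
  have "measure_pmf.prob (Nd q) {..n} = (\<Sum>i\<in>{..n}. nd q i)"
    by (simp add: measure_measure_pmf_finite pmf_Nd)
  also have "\<dots> = (\<Sum>i<Suc n. nd q i)" by (simp only: lessThan_Suc_atMost)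
  also have "\<dots> = Tq q n" by (rule sum_nd)
  finally show ?thesis .
qed

lemma prob_Nd_gt: "measure_pmf.prob (Nd q) {n<..} = 1 - Tq q n"
proof -
  have "{n<..} = space (measure_pmf (Nd q)) - {..n}" by auto
  then show ?thesis using measure_pmf.prob_compl[of "{..n}" "Nd q"] prob_Nd_le by simp
qed

lemma pq_bounds: "0 \<le> pq q j \<and> pq q j \<le> 1"
  using pq_props[of j] by simp

lemma nd_Suc: "nd q (Suc m) = Tq q m * q m"
  using Tq_Suc[of m] by (simp add: nd_def algebra_simps)

lemma nd_Suc': "nd q (Suc m) = Tq q (Suc m) * pq q m"
  using Tq_Suc[of m] q_nonneg[of m] by (simp add: nd_def pq_def field_simps)

definition K :: "nat \<Rightarrow> nat set pmf" where
  "K N = (case N of 0 \<Rightarrow> return_pmf {} | Suc n \<Rightarrow> map_pmf (insert n) (bsub (pq q) n))"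

lemma Lam_K: "Lam q = bind_pmf (Nd q) K"
  unfolding Lam_def K_def ..

lemma pmf_K_empty: "pmf (K N) {} = indicator {0} N"
  by (cases N) (auto simp: K_def pmf_map vimage_def)

lemma pmf_K_ne:
  assumes fin: "finite A" and ne: "A \<noteq> {}"
  shows "pmf (K N) A = pmf (bsub (pq q) (Max A)) (A - {Max A}) * indicator {Suc (Max A)} N"
proof (cases N)
  case 0 then show ?thesis using ne by (simp add: K_def)
next
  case (Suc n)
  have "pmf (K N) A = measure_pmf.prob (bsub (pq q) n) (insert n -` {A})"
    using Suc by (simp add: K_def pmf_map)
  also have "\<dots> = (if n = Max A then pmf (bsub (pq q) (Max A)) (A - {Max A}) else 0)"
  proof (cases "n = Max A")
    case True
    have "measure_pmf.prob (bsub (pq q) n) (insert n -` {A}) = measure_pmf.prob (bsub (pq q) n) {A - {n}}"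
    proof (rule prob_cong_support)
      fix X assume "X \<in> set_pmf (bsub (pq q) n)"
      then have "X \<subseteq> {..<n}" by (rule bsub_sup)
      moreover have "n \<in> A" using True fin ne by simp
      ultimately show "X \<in> insert n -` {A} \<longleftrightarrow> X \<in> {A - {n}}" by auto
    qed
    then show ?thesis using True by (simp add: measure_pmf_single)
  next
    case False
    have "measure_pmf.prob (bsub (pq q) n) (insert n -` {A}) = 0"
    proof (rule prob_zero_support)
      fix X assume "X \<in> set_pmf (bsub (pq q) n)"
      then have X: "X \<subseteq> {..<n}" by (rule bsub_sup)
      show "X \<notin> insert n -` {A}"
      proof
        assume "X \<in> insert n -` {A}"
        then have A: "A = insert n X" by simp
        then have "Max A = n" using X fin by (intro Max_eqI) auto
        then show False using False by simp
      qed
    qed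
    then show ?thesis using False by simp
  qed
  finally show ?thesis using Suc by auto
qed

lemma pmf_K_inf: assumes inf: "infinite A" shows "pmf (K N) A = 0"
proof (cases N)
  case 0 then show ?thesis using inf by (auto simp: K_def indicator_def)
next
  case (Suc n)
  have "pmf (K N) A = measure_pmf.prob (bsub (pq q) n) (insert n -` {A})"
    using Suc by (simp add: K_def pmf_map)
  also have "\<dots> = 0"
  proof (rule prob_zero_support)
    fix X assume "X \<in> set_pmf (bsub (pq q) n)"
    then have X: "X \<subseteq> {..<n}" by (rule bsub_sup)
    then have "finite (insert n X)" using finite_subset by blast
    then show "X \<notin> insert n -` {A}" using inf by auto
  qed
  finally show ?thesis .
qed

lemma pmf_Lam_gen: "ennreal (pmf (Lam q) A) = (\<integral>\<^sup>+N. ennreal (pmf (K N) A) \<partial>Nd q)"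
  unfolding Lam_K by (rule ennreal_pmf_bind)

lemma pmf_Lam_empty: "pmf (Lam q) {} = Tq q 0"
proof -
  have "ennreal (pmf (Lam q) {}) = (\<integral>\<^sup>+N. ennreal (indicator {0} N) \<partial>Nd q)"
    unfolding pmf_Lam_gen pmf_K_empty ..
  also have "\<dots> = (\<integral>\<^sup>+N. (indicator {0} N :: ennreal) \<partial>Nd q)"
    by (intro nn_integral_cong) (auto simp: indicator_def)
  also have "\<dots> = emeasure (Nd q) {0}"
    by (rule nn_integral_indicator) simp
  also have "\<dots> = ennreal (Tq q 0)" by (simp add: emeasure_pmf_single pmf_Nd nd_def)
  finally show ?thesis using Tq_pos[of 0] by simp
qed

lemma pmf_Lam_ne:
  assumes fin: "finite A" and ne: "A \<noteq> {}"
  shows "pmf (Lam q) A = pmf (bsub (pq q) (Max A)) (A - {Max A}) * nd q (Suc (Max A))"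
proof -
  define c where "c = pmf (bsub (pq q) (Max A)) (A - {Max A})"
  have "ennreal (pmf (Lam q) A) = (\<integral>\<^sup>+N. ennreal c * indicator {Suc (Max A)} N \<partial>Nd q)"
    unfolding pmf_Lam_gen pmf_K_ne[OF fin ne] c_def
    by (intro nn_integral_cong) (simp add: indicator_def)
  also have "\<dots> = ennreal c * emeasure (Nd q) {Suc (Max A)}"
    by (rule nn_integral_cmult_indicator) simp
  also have "\<dots> = ennreal (c * nd q (Suc (Max A)))"
    by (simp add: emeasure_pmf_single pmf_Nd ennreal_mult nd_nonneg c_def)
  finally have "ennreal (pmf (Lam q) A) = ennreal (c * nd q (Suc (Max A)))" .
  then show ?thesis unfolding c_def
    using nd_nonneg by (subst (asm) ennreal_inj) auto
qed

lemma pmf_Lam_inf: "infinite A \<Longrightarrow> pmf (Lam q) A = 0"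
proof -
  assume inf: "infinite A"
  have "ennreal (pmf (Lam q) A) = 0"
    unfolding pmf_Lam_gen using pmf_K_inf[OF inf] by simp
  then show ?thesis by simp
qed

lemma pmf_Lam_single: "pmf (Lam q) {n} = q n * Tq q 0"
proof -
  have "pmf (Lam q) {n} = pmf (bsub (pq q) n) {} * nd q (Suc n)"
    using pmf_Lam_ne[of "{n}"] by simp
  also have "pmf (bsub (pq q) n) {} = (\<Prod>j<n. 1 - pq q j)"
    using bsub_pmf[OF pq_bounds, of "{}" n] by simp
  finally show ?thesis using Tq_0[of n] nd_Suc[of n] by (simp add: algebra_simps)
qed

lemma Lam_pos:
  assumes fin: "finite A" and pos: "\<And>n. n \<in> A \<Longrightarrow> 0 < q n"
  shows "0 < pmf (Lam q) A"
proof (cases "A = {}")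
  case True then show ?thesis using Tq_pos by (simp add: pmf_Lam_empty)
next
  case False
  define m where "m = Max A"
  have mA: "m \<in> A" using fin False by (simp add: m_def)
  have sub: "A - {m} \<subseteq> {..<m}"
  proof
    fix x assume "x \<in> A - {m}"
    then have "x \<le> m" "x \<noteq> m" using Max_ge[OF fin] m_def by auto
    then show "x \<in> {..<m}" by simp
  qed
  have "pmf (bsub (pq q) m) (A - {m}) = (\<Prod>j\<in>A - {m}. pq q j) * (\<Prod>j\<in>{..<m} - (A - {m}). 1 - pq q j)"
    using bsub_pmf[OF pq_bounds sub] .
  also have "\<dots> > 0"
  proof (intro mult_pos_pos prod_pos)
    fix j assume "j \<in> A - {m}"
    then show "0 < pq q j" using pos by (auto simp: pq_def intro!: divide_pos_pos add_pos_nonneg q_nonneg)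
  next
    fix j show "0 < 1 - pq q j" using pq_props(2)[of j] by simp
  qed
  finally have "0 < pmf (bsub (pq q) m) (A - {m})" .
  moreover have "0 < nd q (Suc m)" using nd_Suc[of m] Tq_pos[of m] pos[OF mA] by simp
  ultimately show ?thesis using pmf_Lam_ne[OF fin False] m_def by simp
qed

lemma Lam_sup:
  assumes "A \<in> set_pmf (Lam q)"
  shows "finite A" "\<And>n. n \<in> A \<Longrightarrow> 0 < q n"
proof -
  have nz: "pmf (Lam q) A \<noteq> 0" using assms by (simp add: set_pmf_iff)
  then show fin: "finite A" using pmf_Lam_inf by blast
  fix n assume nA: "n \<in> A"
  then have ne: "A \<noteq> {}" by auto
  define m where "m = Max A"
  have sub: "A - {m} \<subseteq> {..<m}"
  proof
    fix x assume "x \<in> A - {m}"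
    then have "x \<le> m" "x \<noteq> m" using Max_ge[OF fin] m_def by auto
    then show "x \<in> {..<m}" by simp
  qed
  have nz2: "pmf (bsub (pq q) m) (A - {m}) \<noteq> 0" and nz3: "nd q (Suc m) \<noteq> 0"
    using nz pmf_Lam_ne[OF fin ne] m_def by auto
  show "0 < q n"
  proof (cases "n = m")
    case True
    then show ?thesis using nz3 nd_Suc[of m] q_nonneg[of m] by (simp add: order.order_iff_strict)
  next
    case False
    then have "n \<in> A - {m}" using nA by auto
    then have "pq q n \<noteq> 0"
      using nz2 bsub_pmf[OF pq_bounds sub] by (auto simp: prod_zero_iff fin)
    then show ?thesis using q_nonneg[of n] by (auto simp: pq_def order.order_iff_strict)
  qed
qed

lemma prob_K:
  assumes fin: "finite F" and ne: "F \<noteq> {}"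
  shows "measure_pmf.prob (K N) {X. F \<subseteq> X} =
    (\<Prod>j\<in>F - {Max F}. pq q j) * indicator {Suc (Max F)} N + (\<Prod>j\<in>F. pq q j) * indicator {Suc (Max F)<..} N"
proof (cases N)
  case 0 then show ?thesis using ne by (simp add: K_def)
next
  case (Suc n)
  define m where "m = Max F"
  have mF: "m \<in> F" using fin ne m_def by simp
  have Fle: "\<And>x. x \<in> F \<Longrightarrow> x \<le> m" using fin m_def by simp
  have "measure_pmf.prob (K N) {X. F \<subseteq> X} = measure_pmf.prob (bsub (pq q) n) {X. F \<subseteq> insert n X}"
    using Suc by (simp add: K_def vimage_def)
  also have "\<dots> = (if n = m then (\<Prod>j\<in>F - {m}. pq q j) else if m < n then (\<Prod>j\<in>F. pq q j) else 0)"
  proof -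
    consider "n = m" | "m < n" | "n < m" by linarith
    then show ?thesis
    proof cases
      case 1
      have "measure_pmf.prob (bsub (pq q) n) {X. F \<subseteq> insert n X} = measure_pmf.prob (bsub (pq q) n) {X. F - {m} \<subseteq> X}"
        using 1 by (intro arg_cong[where f="measure_pmf.prob _"]) auto
      also have "\<dots> = (\<Prod>j\<in>F - {m}. pq q j)"
        by (rule bsub_prob[OF pq_bounds]) (use Fle 1 in \<open>auto simp: order.order_iff_strict\<close>)
      finally show ?thesis using 1 by simp
    next
      case 2
      have "measure_pmf.prob (bsub (pq q) n) {X. F \<subseteq> insert n X} = measure_pmf.prob (bsub (pq q) n) {X. F \<subseteq> X}"
        using 2 Fle by (intro arg_cong[where f="measure_pmf.prob _"]) fastforce
      also have "\<dots> = (\<Prod>j\<in>F. pq q j)"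
        by (rule bsub_prob[OF pq_bounds]) (use Fle 2 in fastforce)
      finally show ?thesis using 2 by simp
    next
      case 3
      have "measure_pmf.prob (bsub (pq q) n) {X. F \<subseteq> insert n X} = 0"
      proof (rule prob_zero_support)
        fix X assume "X \<in> set_pmf (bsub (pq q) n)"
        then have "X \<subseteq> {..<n}" by (rule bsub_sup)
        then show "X \<notin> {X. F \<subseteq> insert n X}" using mF 3 by auto
      qed
      then show ?thesis using 3 by simp
    qed
  qed
  finally show ?thesis using Suc m_def by (auto simp: indicator_def)
qed

lemma Lam_prob:
  assumes fin: "finite F"
  shows "measure_pmf.prob (Lam q) {X. F \<subseteq> X} = (\<Prod>j\<in>F. pq q j)"
proof (cases "F = {}")
  case True then show ?thesis by simp
next
  case ne: False
  define m where "m = Max F"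
  define a where "a = (\<Prod>j\<in>F - {m}. pq q j)"
  define b where "b = (\<Prod>j\<in>F. pq q j)"
  have a0: "0 \<le> a" unfolding a_def using pq_bounds by (simp add: prod_nonneg)
  have b0: "0 \<le> b" unfolding b_def using pq_bounds by (simp add: prod_nonneg)
  have mF: "m \<in> F" using fin ne m_def by simp
  have ba: "b = pq q m * a"
    unfolding a_def b_def using mF fin by (simp add: prod.remove)
  have "emeasure (measure_pmf (Lam q)) {X. F \<subseteq> X} = (\<integral>\<^sup>+N. emeasure (measure_pmf (K N)) {X. F \<subseteq> X} \<partial>Nd q)"
    unfolding Lam_K by (rule emeasure_bind_pmf)
  also have "\<dots> = (\<integral>\<^sup>+N. (ennreal a * indicator {Suc m} N + ennreal b * indicator {Suc m<..} N) \<partial>Nd q)"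
    by (intro nn_integral_cong)
       (simp add: measure_pmf.emeasure_eq_measure prob_K[OF fin ne] a_def b_def m_def indicator_def)
  also have "\<dots> = (\<integral>\<^sup>+N. ennreal a * indicator {Suc m} N \<partial>Nd q) + (\<integral>\<^sup>+N. ennreal b * indicator {Suc m<..} N \<partial>Nd q)"
    by (rule nn_integral_add) (auto simp: measurable_pmf_measure1)
  also have "\<dots> = ennreal a * emeasure (Nd q) {Suc m} + ennreal b * emeasure (Nd q) {Suc m<..}"
    by (simp add: nn_integral_cmult_indicator)
  also have "\<dots> = ennreal (a * nd q (Suc m) + b * (1 - Tq q (Suc m)))"
  proof -
    have e1: "emeasure (Nd q) {Suc m} = ennreal (nd q (Suc m))" by (simp add: emeasure_pmf_single pmf_Nd)
    have e2: "emeasure (Nd q) {Suc m<..} = ennreal (1 - Tq q (Suc m))"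
      by (simp add: measure_pmf.emeasure_eq_measure prob_Nd_gt)
    have p1: "0 \<le> a * nd q (Suc m)" using a0 nd_nonneg[of "Suc m"] by simp
    have p2: "0 \<le> b * (1 - Tq q (Suc m))" using b0 Tq_le1[of "Suc m"] by simp
    show ?thesis unfolding e1 e2 ennreal_plus[OF p1 p2]
      using a0 b0 nd_nonneg[of "Suc m"] Tq_le1[of "Suc m"] by (simp add: ennreal_mult)
  qed
  also have "a * nd q (Suc m) + b * (1 - Tq q (Suc m)) = b"
    using nd_Suc'[of m] ba by (simp add: algebra_simps)
  finally have "ennreal (measure_pmf.prob (Lam q) {X. F \<subseteq> X}) = ennreal b"
    by (simp add: measure_pmf.emeasure_eq_measure)
  then show ?thesis using b0 unfolding b_def by simp
qed

lemma Lam_marg: "measure_pmf.prob (Lam q) {X. n \<in> X} = pq q n"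
  using Lam_prob[of "{n}"] by simp

lemma Lam_ti: "ti (Lam q)"
  unfolding ti_def using Lam_prob Lam_marg by simp

end

lemma prob_le_finite_sums:
  assumes "\<And>F. finite F \<Longrightarrow> F \<subseteq> A \<Longrightarrow> sum (pmf P) F \<le> b"
  shows "measure_pmf.prob P A \<le> b"
proof -
  have abs: "Infinite_Set_Sum.abs_summable_on (pmf P) A" by (rule pmf_abs_summable)
  have "measure_pmf.prob P A = infsum (pmf P) A"
    by (simp add: measure_pmf_conv_infsetsum infsetsum_infsum[OF abs])
  also have "\<dots> \<le> b"
  proof (rule infsum_le_finite_sums)
    show "pmf P summable_on A"
      using abs abs_summable_equivalent abs_summable_summable by blast
  qed (use assms in auto)
  finally show ?thesis .
qed

lemma prob_mono_support:
  assumes "\<And>x. x \<in> set_pmf P \<Longrightarrow> x \<in> A \<Longrightarrow> x \<in> B"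
  shows "measure_pmf.prob P A \<le> measure_pmf.prob P B"
proof -
  have "measure_pmf.prob P A = measure_pmf.prob P (A \<inter> set_pmf P)" by (simp add: measure_Int_set_pmf)
  also have "\<dots> \<le> measure_pmf.prob P B"
    by (rule measure_pmf.finite_measure_mono) (use assms in auto)
  finally show ?thesis .
qed

context
  fixes P :: "'a set pmf"
  assumes tiP: "ti P"
begin

abbreviation pr :: "'a \<Rightarrow> real" where "pr f \<equiv> measure_pmf.prob P {X. f \<in> X}"

lemma ti_avoid:
  assumes "finite H"
  shows "finite F \<Longrightarrow> F \<inter> H = {} \<Longrightarrow>
    measure_pmf.prob P {X. F \<subseteq> X \<and> X \<inter> H = {}} = (\<Prod>f\<in>F. pr f) * (\<Prod>h\<in>H. 1 - pr h)"
  using assms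
proof (induction H arbitrary: F rule: finite_induct)
  case empty
  then show ?case using tiP unfolding ti_def by simp
next
  case (insert h H)
  have eq: "{X. F \<subseteq> X \<and> X \<inter> insert h H = {}} =
      {X. F \<subseteq> X \<and> X \<inter> H = {}} - {X. insert h F \<subseteq> X \<and> X \<inter> H = {}}" by auto
  have "measure_pmf.prob P {X. F \<subseteq> X \<and> X \<inter> insert h H = {}} =
      measure_pmf.prob P {X. F \<subseteq> X \<and> X \<inter> H = {}} - measure_pmf.prob P {X. insert h F \<subseteq> X \<and> X \<inter> H = {}}"
    unfolding eq by (rule measure_pmf.finite_measure_Diff) auto
  also have "\<dots> = (\<Prod>f\<in>F. pr f) * (\<Prod>h\<in>H. 1 - pr h) - (\<Prod>f\<in>insert h F. pr f) * (\<Prod>h\<in>H. 1 - pr h)"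
    using insert.IH[of F] insert.IH[of "insert h F"] insert.prems insert.hyps by auto
  also have "\<dots> = (\<Prod>f\<in>F. pr f) * (\<Prod>h\<in>insert h H. 1 - pr h)"
  proof -
    have "h \<notin> F" using insert.prems by auto
    then show ?thesis using insert.prems insert.hyps by (simp add: algebra_simps)
  qed
  finally show ?case .
qed

lemma ti_sum_bound:
  assumes D0: "D0 \<in> set_pmf P" "finite D0" and G: "finite G"
  shows "(\<Sum>f\<in>G. pr f) \<le> real (card D0) - ln (pmf P D0)"
proof -
  define H where "H = G - D0"
  have finH: "finite H" using G by (simp add: H_def)
  have pos: "0 < pmf P D0" using D0 by (simp add: pmf_positive)
  have "pmf P D0 \<le> measure_pmf.prob P {X. {} \<subseteq> X \<and> X \<inter> H = {}}"
    unfolding measure_pmf_single[symmetric]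
    by (rule measure_pmf.finite_measure_mono) (auto simp: H_def)
  also have "\<dots> = (\<Prod>h\<in>H. 1 - pr h)" using ti_avoid[OF finH, of "{}"] by simp
  also have "\<dots> \<le> (\<Prod>h\<in>H. exp (- pr h))"
  proof (rule prod_mono)
    fix h assume "h \<in> H"
    have "pr h \<le> 1" by simp
    then show "0 \<le> 1 - pr h \<and> 1 - pr h \<le> exp (- pr h)"
      using exp_ge_add_one_self[of "- pr h"] by simp
  qed
  also have "\<dots> = exp (- (\<Sum>h\<in>H. pr h))" using exp_sum[OF finH, of "\<lambda>h. - pr h"] by (simp add: sum_negf)
  finally have "pmf P D0 \<le> exp (- (\<Sum>h\<in>H. pr h))" .
  then have "ln (pmf P D0) \<le> ln (exp (- (\<Sum>h\<in>H. pr h)))"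
    using pos by (subst ln_le_cancel_iff) auto
  then have "ln (pmf P D0) \<le> - (\<Sum>h\<in>H. pr h)" by simp
  then have sH: "(\<Sum>h\<in>H. pr h) \<le> - ln (pmf P D0)" by simp
  have "(\<Sum>f\<in>G. pr f) = (\<Sum>f\<in>G \<inter> D0. pr f) + (\<Sum>f\<in>H. pr f)"
    unfolding H_def using G by (metis Diff_eq sum.Int_Diff)
  also have "(\<Sum>f\<in>G \<inter> D0. pr f) \<le> (\<Sum>f\<in>G \<inter> D0. 1)"
    by (rule sum_mono) simp
  also have "(\<Sum>f\<in>G \<inter> D0. (1::real)) \<le> real (card D0)"
    using D0(2) by (simp add: card_mono)
  finally show ?thesis using sH by simp
qed

lemma ti_markov:
  assumes fin: "\<And>X. X \<in> set_pmf P \<Longrightarrow> finite X"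
  shows "\<exists>K. \<forall>t::nat. 0 < t \<longrightarrow> measure_pmf.prob P {X. t \<le> card X} \<le> K / real t"
proof -
  obtain D0 where D0: "D0 \<in> set_pmf P" using set_pmf_not_empty[of P] by blast
  define K where "K = real (card D0) - ln (pmf P D0)"
  have bound: "(\<Sum>f\<in>G. pr f) \<le> K" if "finite G" for G
    unfolding K_def by (rule ti_sum_bound[OF D0 fin[OF D0] that])
  show ?thesis
  proof (intro exI allI impI)
    fix t :: nat assume t: "0 < t"
    show "measure_pmf.prob P {X. t \<le> card X} \<le> K / real t"
    proof (rule prob_le_finite_sums)
      fix A :: "'a set set" assume finA: "finite A" and A: "A \<subseteq> {X. t \<le> card X}"
      define A' where "A' = A \<inter> set_pmf P"
      have finA': "finite A'" using finA by (simp add: A'_def)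
      have "sum (pmf P) A = sum (pmf P) A'"
        unfolding A'_def by (rule sum.mono_neutral_right) (auto simp: finA set_pmf_iff)
      define G where "G = \<Union>A'"
      have finG: "finite G" unfolding G_def using finA' fin by (auto simp: A'_def)
      have "real t * sum (pmf P) A' \<le> (\<Sum>X\<in>A'. pmf P X * real (card X))"
        unfolding sum_distrib_left
      proof (rule sum_mono)
        fix X assume "X \<in> A'"
        then have "real t \<le> real (card X)" using A by (auto simp: A'_def)
        then show "real t * pmf P X \<le> pmf P X * real (card X)"
          by (simp add: mult.commute mult_right_mono)
      qed
      also have "\<dots> = (\<Sum>X\<in>A'. \<Sum>f\<in>{f\<in>G. f \<in> X}. pmf P X)"
      proof (rule sum.cong[OF refl])
        fix X assume "X \<in> A'"
        then have "{f\<in>G. f \<in> X} = X" by (auto simp: G_def)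
        then show "pmf P X * real (card X) = (\<Sum>f\<in>{f\<in>G. f \<in> X}. pmf P X)" by simp
      qed
      also have "\<dots> = (\<Sum>f\<in>G. \<Sum>X\<in>{X. X \<in> A' \<and> f \<in> X}. pmf P X)"
        by (rule sum.swap_restrict[OF finA' finG])
      also have "\<dots> \<le> (\<Sum>f\<in>G. pr f)"
      proof (rule sum_mono)
        fix f
        have "(\<Sum>X\<in>{X. X \<in> A' \<and> f \<in> X}. pmf P X) = measure_pmf.prob P {X. X \<in> A' \<and> f \<in> X}"
          by (rule measure_measure_pmf_finite[symmetric]) (use finA' in auto)
        also have "\<dots> \<le> pr f" by (rule measure_pmf.finite_measure_mono) auto
        finally show "(\<Sum>X\<in>{X. X \<in> A' \<and> f \<in> X}. pmf P X) \<le> pr f" .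
      qed
      also have "\<dots> \<le> K" by (rule bound[OF finG])
      finally have "real t * sum (pmf P) A' \<le> K" .
      then show "sum (pmf P) A \<le> K / real t"
        using \<open>sum (pmf P) A = sum (pmf P) A'\<close> t by (simp add: field_simps)
    qed
  qed
qed

end


lemma trm_consts_finite: "finite (trm_consts t)" by (cases t) auto

lemma fo_consts_finite: "finite (fo_consts \<phi>)"
  by (induction \<phi>) (auto simp: trm_consts_finite)

lemma card_adom:
  assumes D: "instance_over Sin D" and M: "\<forall>R\<in>Sin. arity R \<le> M"
  shows "card (adom D) \<le> M * card D"
proof -
  have finD: "finite D" using D by (simp add: instance_over_def)
  have ad: "adom D = (\<Union>x\<in>D. set (snd x))" unfolding adom_def by (auto simp: case_prod_beta)
  have "card (adom D) \<le> (\<Sum>x\<in>D. card (set (snd x)))"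
    unfolding ad by (rule card_UN_le[OF finD])
  also have "\<dots> \<le> (\<Sum>x\<in>D. M)"
  proof (rule sum_mono)
    fix x assume "x \<in> D"
    then have "fst x \<in> Sin" "length (snd x) = arity (fst x)"
      using D unfolding instance_over_def by (auto simp: case_prod_beta)
    then show "card (set (snd x)) \<le> M" using M card_length[of "snd x"] by fastforce
  qed
  finally show ?thesis by (simp add: mult.commute)
qed

lemma view_card:
  fixes \<Phi> :: "rel \<Rightarrow> 'a fo"
  assumes fv: "fo_view Sin S \<Phi>"
  shows "\<exists>C k. (1::nat) \<le> C \<and> (\<forall>D. instance_over Sin D \<longrightarrow> card (view_apply S \<Phi> D) \<le> C * (card D + 1) ^ k)"
proof -
  have Sin: "finite Sin" "Sin \<noteq> {}" and S: "finite S" "S \<noteq> {}"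
    using fv by (auto simp: fo_view_def schema_def)
  define M where "M = Max (arity ` Sin)"
  define ka where "ka = Max (arity ` S)"
  define c0 where "c0 = (\<Sum>R\<in>S. card (fo_consts (\<Phi> R)))"
  define B where "B = M + c0 + 1"
  define C where "C = card S * B ^ ka + 1"
  have MS: "\<forall>R\<in>Sin. arity R \<le> M" using Sin by (auto simp: M_def)
  have kaS: "\<And>R. R \<in> S \<Longrightarrow> arity R \<le> ka" using S by (auto simp: ka_def)
  have c0R: "\<And>R. R \<in> S \<Longrightarrow> card (fo_consts (\<Phi> R)) \<le> c0"
    unfolding c0_def using S by (intro member_le_sum) auto
  show ?thesis
  proof (intro exI conjI allI impI)
    show "1 \<le> C" by (simp add: C_def)
    fix D :: "'a inst" assume D: "instance_over Sin D"
    define d where "d = card D"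
    define L where "L = (\<lambda>R. {as. set as \<subseteq> adom D \<union> fo_consts (\<Phi> R) \<and> length as = arity R})"
    have finD: "finite D" using D by (simp add: instance_over_def)
    have finad: "finite (adom D)" unfolding adom_def using finD by (auto simp: case_prod_beta)
    have finA: "finite (adom D \<union> fo_consts (\<Phi> R))" for R using finad fo_consts_finite by simp
    have sub: "view_apply S \<Phi> D \<subseteq> (\<Union>R\<in>S. Pair R ` L R)"
      unfolding view_apply_def L_def by auto
    have finL: "finite (L R)" for R unfolding L_def by (rule finite_lists_length_eq[OF finA])
    have "card (view_apply S \<Phi> D) \<le> card (\<Union>R\<in>S. Pair R ` L R)"
      by (rule card_mono[OF _ sub]) (use S finL in auto)
    also have "\<dots> \<le> (\<Sum>R\<in>S. card (Pair R ` L R))" by (rule card_UN_le[OF S(1)])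
    also have "\<dots> \<le> (\<Sum>R\<in>S. (B * (d + 1)) ^ ka)"
    proof (rule sum_mono)
      fix R assume RS: "R \<in> S"
      have "card (Pair R ` L R) \<le> card (L R)" by (rule card_image_le[OF finL])
      also have "card (L R) = card (adom D \<union> fo_consts (\<Phi> R)) ^ arity R"
        unfolding L_def by (rule card_lists_length_eq[OF finA])
      also have "\<dots> \<le> (B * (d + 1)) ^ arity R"
      proof (rule power_mono)
        have "card (adom D \<union> fo_consts (\<Phi> R)) \<le> card (adom D) + card (fo_consts (\<Phi> R))"
          by (rule card_Un_le)
        also have "\<dots> \<le> M * d + c0" using card_adom[OF D MS] c0R[OF RS] by (simp add: d_def)
        also have "\<dots> \<le> B * (d + 1)" by (simp add: B_def algebra_simps)
        finally show "card (adom D \<union> fo_consts (\<Phi> R)) \<le> B * (d + 1)" .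
      qed simp
      also have "\<dots> \<le> (B * (d + 1)) ^ ka"
        by (rule power_increasing[OF kaS[OF RS]]) (simp add: B_def)
      finally show "card (Pair R ` L R) \<le> (B * (d + 1)) ^ ka" .
    qed
    also have "\<dots> = card S * B ^ ka * (d + 1) ^ ka" by (simp only: sum_constant power_mult_distrib mult.assoc of_nat_id)
    also have "\<dots> \<le> C * (d + 1) ^ ka" by (simp add: C_def)
    finally show "card (view_apply S \<Phi> D) \<le> C * (card D + 1) ^ ka" by (simp add: d_def)
  qed
qed

lemma FO_TI_tail:
  assumes "in_FO_TI S P"
  shows "\<exists>C K k. (1::nat) \<le> C \<and> (\<forall>t::nat. measure_pmf.prob P {D. C * (t+1)^k < card D} \<le> K / real (t+1))"
proof -
  obtain Sin I \<Phi> where pdb: "pdb Sin I" and ti: "tuple_independent I" and fv: "fo_view Sin S \<Phi>"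
    and P: "P = map_pmf (view_apply S \<Phi>) I"
    using assms unfolding in_FO_TI_def by blast
  have tiI: "ti I" using ti by (simp add: tuple_independent_ti)
  have inst: "\<And>X. X \<in> set_pmf I \<Longrightarrow> instance_over Sin X" using pdb by (simp add: pdb_def)
  then have finI: "\<And>X. X \<in> set_pmf I \<Longrightarrow> finite X" by (simp add: instance_over_def)
  obtain K where Kb: "\<forall>t::nat. 0 < t \<longrightarrow> measure_pmf.prob I {X. t \<le> card X} \<le> K / real t"
    using ti_markov[OF tiI finI] by blast
  obtain C k where C: "1 \<le> C" and Ck: "\<forall>D. instance_over Sin D \<longrightarrow> card (view_apply S \<Phi> D) \<le> C * (card D + 1) ^ k"
    using view_card[OF fv] by blast
  show ?thesis
  proof (intro exI conjI allI)
    show "1 \<le> C" by (rule C)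
    fix t :: nat
    have "measure_pmf.prob P {D. C * (t+1)^k < card D} = measure_pmf.prob I {X. C * (t+1)^k < card (view_apply S \<Phi> X)}"
      by (simp only: P measure_map_pmf vimage_def mem_Collect_eq)
    also have "\<dots> \<le> measure_pmf.prob I {X. t + 1 \<le> card X}"
    proof (rule prob_mono_support)
      fix X assume XI: "X \<in> set_pmf I" and lt: "X \<in> {X. C * (t+1)^k < card (view_apply S \<Phi> X)}"
      have "card (view_apply S \<Phi> X) \<le> C * (card X + 1) ^ k" using Ck inst[OF XI] by blast
      moreover have "C * (t+1)^k < card (view_apply S \<Phi> X)" using lt by simp
      ultimately have "C * (t+1)^k < C * (card X + 1) ^ k" by linarith
      then have "(t+1)^k < (card X + 1)^k" by simp
      then have "t + 1 < card X + 1" by (rule power_less_imp_less_base) simp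
      then show "X \<in> {X. t + 1 \<le> card X}" by simp
    qed
    also have "\<dots> \<le> K / real (t + 1)" using Kb[rule_format, of "t+1"] by simp
    finally show "measure_pmf.prob P {D. C * (t+1)^k < card D} \<le> K / real (t+1)" .
  qed
qed

lemma not_FO_TI_heavy:
  fixes P2 :: "'u inst pmf" and E :: "nat \<Rightarrow> 'u inst"
  assumes big: "\<And>n. (n * 2^(n+3))^n < card (E n)"
    and low: "\<And>n A. E n \<in> A \<Longrightarrow> 1 / 2^(n+2) \<le> measure_pmf.prob P2 A"
  shows "\<not> in_FO_TI S P2"
proof
  assume "in_FO_TI S P2"
  then obtain C K k where C: "(1::nat) \<le> C" and tail: "\<And>t::nat. measure_pmf.prob P2 {D. C * (t+1)^k < card D} \<le> K / real (t+1)"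
    using FO_TI_tail by blast
  define K' where "K' = nat \<lceil>max K 1\<rceil>"
  have K'1: "1 \<le> K'" unfolding K'_def by linarith
  have KK': "K \<le> real K'" unfolding K'_def by linarith
  define n where "n = C + K' + k + 1"
  define t where "t = K' * 2^(n+3) - 1"
  have pos: "0 < K' * 2^(n+3)" using K'1 by simp
  have t1: "t + 1 = K' * 2^(n+3)" using pos unfolding t_def by linarith
  have Cn: "C \<le> n" and K'n: "K' \<le> n" and kn: "k + 1 \<le> n" and n0: "0 < n" by (simp_all add: n_def)
  have "0 < n * 2^(n+3)" using n0 by simp
  then have b1: "1 \<le> n * 2^(n+3)" by linarith
  have "K' * 2^(n+3) \<le> n * 2^(n+3)" using K'n by simp
  then have "(K' * 2^(n+3))^k \<le> (n * 2^(n+3))^k" by (rule power_mono) simp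
  have "C * (t+1)^k \<le> n * (n * 2^(n+3))^k"
    unfolding t1 by (rule mult_mono[OF Cn \<open>(K' * 2^(n+3))^k \<le> (n * 2^(n+3))^k\<close>]) simp_all
  also have "\<dots> \<le> (n * 2^(n+3)) * (n * 2^(n+3))^k"
    by (intro mult_right_mono) auto
  also have "\<dots> = (n * 2^(n+3))^(k+1)" by simp
  also have "\<dots> \<le> (n * 2^(n+3))^n"
    by (rule power_increasing[OF kn b1])
  also have "\<dots> < card (E n)" by (rule big)
  finally have "E n \<in> {D. C * (t+1)^k < card D}" by simp
  then have "1 / 2^(n+2) \<le> measure_pmf.prob P2 {D. C * (t+1)^k < card D}" by (rule low)
  also have "\<dots> \<le> K / real (t+1)" by (rule tail)
  also have "\<dots> \<le> real K' / real (t+1)" using KK' by (simp add: divide_right_mono)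
  also have "\<dots> = 1 / 2^(n+3)" unfolding t1 using K'1 by simp
  finally have "(1::real) / 2^(n+2) \<le> 1 / 2^(n+3)" .
  moreover have "(1::real) / 2^(n+3) < 1 / 2^(n+2)"
  proof (rule divide_strict_left_mono)
    show "(2::real)^(n+2) < 2^(n+3)" by (rule power_strict_increasing) auto
  qed auto
  ultimately show False by linarith
qed

lemma heavy_pmf_exists:
  fixes P1 :: "'a pmf"
  assumes P1: "set_pmf P1 = DD" and E: "\<And>n. E n \<in> DD"
  shows "\<exists>P2. set_pmf P2 = DD \<and> (\<forall>n A. E n \<in> A \<longrightarrow> 1/2^(n+2) \<le> measure_pmf.prob P2 A)"
proof -
  define f where "f = (\<lambda>((b::bool, n::nat), D). if b then D else E n)"
  define Q where "Q = pair_pmf (pair_pmf (bernoulli_pmf (1/2)) (geometric_pmf (1/2))) P1"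
  define P2 where "P2 = map_pmf f Q"
  have geo: "set_pmf (geometric_pmf (1/2)) = UNIV"
    by (auto simp: set_pmf_iff geometric_pmf.rep_eq)
  have bern: "set_pmf (bernoulli_pmf (1/2)) = UNIV" by (simp add: set_pmf_bernoulli)
  have ne: "DD \<noteq> {}" using P1 set_pmf_not_empty by blast
  have "set_pmf P2 = DD"
  proof
    show "set_pmf P2 \<subseteq> DD" unfolding P2_def Q_def f_def using P1 E by auto
    show "DD \<subseteq> set_pmf P2"
    proof
      fix D assume D: "D \<in> DD"
      have "((True, 0), D) \<in> set_pmf Q" unfolding Q_def using D P1 geo bern by auto
      then show "D \<in> set_pmf P2" unfolding P2_def f_def by force
    qed
  qed
  moreover have "1/2^(n+2) \<le> measure_pmf.prob P2 A" if "E n \<in> A" for n A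
  proof -
    have "measure_pmf.prob Q {(x,D). x \<in> {(False,n)} \<and> D \<in> UNIV} \<le> measure_pmf.prob Q (f -` A)"
      by (rule measure_pmf.finite_measure_mono) (use that in \<open>auto simp: f_def\<close>)
    moreover have "measure_pmf.prob Q {(x,D). x \<in> {(False,n)} \<and> D \<in> UNIV} = 1/2^(n+2)"
    proof -
      have "measure_pmf.prob Q {(x,D). x \<in> {(False,n)} \<and> D \<in> UNIV} =
        measure_pmf.prob (pair_pmf (bernoulli_pmf (1/2)) (geometric_pmf (1/2))) {(False,n)} * measure_pmf.prob P1 UNIV"
        unfolding Q_def by (rule prob_pair_product)
      also have "\<dots> = 1/2 * ((1/2)^n * (1/2))"
        by (simp add: measure_pmf_single pmf_pair geometric_pmf.rep_eq)
      also have "\<dots> = 1/2^(n+2)" by (simp add: power_add field_simps)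
      finally show ?thesis .
    qed
    ultimately show ?thesis unfolding P2_def by simp
  qed
  ultimately show ?thesis by blast
qed

fun bigconj :: "'u fo list \<Rightarrow> 'u fo" where
  "bigconj [] = FTrue" | "bigconj (\<phi> # \<phi>s) = Conj \<phi> (bigconj \<phi>s)"
fun bigdisj :: "'u fo list \<Rightarrow> 'u fo" where
  "bigdisj [] = FFalse" | "bigdisj (\<phi> # \<phi>s) = Disj \<phi> (bigdisj \<phi>s)"
primrec exN :: "nat \<Rightarrow> nat \<Rightarrow> 'u fo \<Rightarrow> 'u fo" where
  "exN v 0 \<phi> = \<phi>" | "exN v (Suc n) \<phi> = FEx v (exN (Suc v) n \<phi>)"
primrec allN :: "nat \<Rightarrow> nat \<Rightarrow> 'u fo \<Rightarrow> 'u fo" where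
  "allN v 0 \<phi> = \<phi>" | "allN v (Suc n) \<phi> = FAll v (allN (Suc v) n \<phi>)"
definition vars :: "nat \<Rightarrow> nat \<Rightarrow> 'u trm list" where "vars v n = map Var [v..<v+n]"
definition upd :: "(nat \<Rightarrow> 'u) \<Rightarrow> nat \<Rightarrow> 'u list \<Rightarrow> nat \<Rightarrow> 'u" where
  "upd \<sigma> v vs = (\<lambda>i. if v \<le> i \<and> i < v + length vs then vs ! (i - v) else \<sigma> i)"

lemma sat_bigconj: "sat D A \<sigma> (bigconj \<phi>s) \<longleftrightarrow> (\<forall>\<phi>\<in>set \<phi>s. sat D A \<sigma> \<phi>)"
  by (induction \<phi>s) auto
lemma sat_bigdisj: "sat D A \<sigma> (bigdisj \<phi>s) \<longleftrightarrow> (\<exists>\<phi>\<in>set \<phi>s. sat D A \<sigma> \<phi>)"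
  by (induction \<phi>s) auto

lemma upd_Nil: "upd \<sigma> v [] = \<sigma>" by (rule ext) (auto simp: upd_def)

lemma upd_Cons: "upd (\<sigma>(v := a)) (Suc v) vs = upd \<sigma> v (a # vs)"
proof
  fix i
  consider "i < v" | "i = v" | "v < i" by linarith
  then show "upd (\<sigma>(v := a)) (Suc v) vs i = upd \<sigma> v (a # vs) i"
  proof cases
    case 3
    then have "i - v = Suc (i - Suc v)" by simp
    then show ?thesis using 3 by (simp add: upd_def)
  qed (auto simp: upd_def)
qed

lemma upd_low: "i < v \<Longrightarrow> upd \<sigma> v vs i = \<sigma> i" by (simp add: upd_def)
lemma upd_high: "v + length vs \<le> i \<Longrightarrow> upd \<sigma> v vs i = \<sigma> i" by (simp add: upd_def)
lemma upd_in: "i < length vs \<Longrightarrow> upd \<sigma> v vs (v + i) = vs ! i" by (simp add: upd_def)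

lemma sat_exN: "sat D A \<sigma> (exN v n \<phi>) \<longleftrightarrow> (\<exists>vs. length vs = n \<and> set vs \<subseteq> A \<and> sat D A (upd \<sigma> v vs) \<phi>)"
proof (induction n arbitrary: v \<sigma>)
  case 0 then show ?case by (simp add: upd_Nil)
next
  case (Suc n)
  have "sat D A \<sigma> (exN v (Suc n) \<phi>) \<longleftrightarrow> (\<exists>a\<in>A. sat D A (\<sigma>(v := a)) (exN (Suc v) n \<phi>))"
    by simp
  also have "\<dots> \<longleftrightarrow> (\<exists>a\<in>A. \<exists>vs. length vs = n \<and> set vs \<subseteq> A \<and> sat D A (upd (\<sigma>(v := a)) (Suc v) vs) \<phi>)"
    by (simp only: Suc.IH)
  also have "\<dots> \<longleftrightarrow> (\<exists>a\<in>A. \<exists>vs. length vs = n \<and> set vs \<subseteq> A \<and> sat D A (upd \<sigma> v (a # vs)) \<phi>)"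
    by (simp only: upd_Cons)
  also have "\<dots> \<longleftrightarrow> (\<exists>vs. length vs = Suc n \<and> set vs \<subseteq> A \<and> sat D A (upd \<sigma> v vs) \<phi>)"
  proof
    assume "\<exists>a\<in>A. \<exists>vs. length vs = n \<and> set vs \<subseteq> A \<and> sat D A (upd \<sigma> v (a # vs)) \<phi>"
    then obtain a vs where "a \<in> A" "length vs = n" "set vs \<subseteq> A" "sat D A (upd \<sigma> v (a # vs)) \<phi>" by blast
    then show "\<exists>vs. length vs = Suc n \<and> set vs \<subseteq> A \<and> sat D A (upd \<sigma> v vs) \<phi>"
      by (intro exI[of _ "a # vs"]) auto
  next
    assume "\<exists>vs. length vs = Suc n \<and> set vs \<subseteq> A \<and> sat D A (upd \<sigma> v vs) \<phi>"
    then obtain ws where ws: "length ws = Suc n" "set ws \<subseteq> A" "sat D A (upd \<sigma> v ws) \<phi>" by blast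
    then obtain a vs where "ws = a # vs" by (cases ws) auto
    then show "\<exists>a\<in>A. \<exists>vs. length vs = n \<and> set vs \<subseteq> A \<and> sat D A (upd \<sigma> v (a # vs)) \<phi>"
      using ws by auto
  qed
  finally show ?case .
qed

lemma sat_allN: "sat D A \<sigma> (allN v n \<phi>) \<longleftrightarrow> (\<forall>vs. length vs = n \<longrightarrow> set vs \<subseteq> A \<longrightarrow> sat D A (upd \<sigma> v vs) \<phi>)"
proof (induction n arbitrary: v \<sigma>)
  case 0 then show ?case by (simp add: upd_Nil)
next
  case (Suc n)
  have "sat D A \<sigma> (allN v (Suc n) \<phi>) \<longleftrightarrow> (\<forall>a\<in>A. sat D A (\<sigma>(v := a)) (allN (Suc v) n \<phi>))"
    by simp
  also have "\<dots> \<longleftrightarrow> (\<forall>a\<in>A. \<forall>vs. length vs = n \<longrightarrow> set vs \<subseteq> A \<longrightarrow> sat D A (upd (\<sigma>(v := a)) (Suc v) vs) \<phi>)"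
    by (simp only: Suc.IH)
  also have "\<dots> \<longleftrightarrow> (\<forall>a\<in>A. \<forall>vs. length vs = n \<longrightarrow> set vs \<subseteq> A \<longrightarrow> sat D A (upd \<sigma> v (a # vs)) \<phi>)"
    by (simp only: upd_Cons)
  also have "\<dots> \<longleftrightarrow> (\<forall>vs. length vs = Suc n \<longrightarrow> set vs \<subseteq> A \<longrightarrow> sat D A (upd \<sigma> v vs) \<phi>)"
  proof
    assume H: "\<forall>a\<in>A. \<forall>vs. length vs = n \<longrightarrow> set vs \<subseteq> A \<longrightarrow> sat D A (upd \<sigma> v (a # vs)) \<phi>"
    show "\<forall>vs. length vs = Suc n \<longrightarrow> set vs \<subseteq> A \<longrightarrow> sat D A (upd \<sigma> v vs) \<phi>"
    proof (intro allI impI)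
      fix ws :: "'a list" assume ws: "length ws = Suc n" "set ws \<subseteq> A"
      then obtain a vs where "ws = a # vs" by (cases ws) auto
      then show "sat D A (upd \<sigma> v ws) \<phi>" using ws H by auto
    qed
  next
    assume H: "\<forall>vs. length vs = Suc n \<longrightarrow> set vs \<subseteq> A \<longrightarrow> sat D A (upd \<sigma> v vs) \<phi>"
    show "\<forall>a\<in>A. \<forall>vs. length vs = n \<longrightarrow> set vs \<subseteq> A \<longrightarrow> sat D A (upd \<sigma> v (a # vs)) \<phi>"
      using H[rule_format, of "_ # _"] by auto
  qed
  finally show ?case .
qed

lemma eval_vars: "length vs = n \<Longrightarrow> map (eval_trm (upd \<sigma> v vs)) (vars v n) = vs"
  by (auto simp: vars_def upd_def intro!: nth_equalityI)

lemma length_vars[simp]: "length (vars v n) = n" by (simp add: vars_def)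

lemma fv_exN: "fv (exN v n \<phi>) = fv \<phi> - {v..<v+n}"
  by (induction n arbitrary: v) auto
lemma fv_allN: "fv (allN v n \<phi>) = fv \<phi> - {v..<v+n}"
  by (induction n arbitrary: v) auto
lemma fv_bigconj: "fv (bigconj \<phi>s) = (\<Union>\<phi>\<in>set \<phi>s. fv \<phi>)" by (induction \<phi>s) auto
lemma fv_bigdisj: "fv (bigdisj \<phi>s) = (\<Union>\<phi>\<in>set \<phi>s. fv \<phi>)" by (induction \<phi>s) auto
lemma rels_exN: "rels (exN v n \<phi>) = rels \<phi>" by (induction n arbitrary: v) auto
lemma rels_allN: "rels (allN v n \<phi>) = rels \<phi>" by (induction n arbitrary: v) auto
lemma rels_bigconj: "rels (bigconj \<phi>s) = (\<Union>\<phi>\<in>set \<phi>s. rels \<phi>)" by (induction \<phi>s) auto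
lemma rels_bigdisj: "rels (bigdisj \<phi>s) = (\<Union>\<phi>\<in>set \<phi>s. rels \<phi>)" by (induction \<phi>s) auto
lemma consts_exN: "fo_consts (exN v n \<phi>) = fo_consts \<phi>" by (induction n arbitrary: v) auto
lemma consts_allN: "fo_consts (allN v n \<phi>) = fo_consts \<phi>" by (induction n arbitrary: v) auto
lemma consts_bigconj: "fo_consts (bigconj \<phi>s) = (\<Union>\<phi>\<in>set \<phi>s. fo_consts \<phi>)" by (induction \<phi>s) auto
lemma consts_bigdisj: "fo_consts (bigdisj \<phi>s) = (\<Union>\<phi>\<in>set \<phi>s. fo_consts \<phi>)" by (induction \<phi>s) auto
lemma vars_vars: "(\<Union>t\<in>set (vars v n). trm_vars t) = {v..<v+n}" by (auto simp: vars_def)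
lemma consts_vars: "(\<Union>t\<in>set (vars v n). trm_consts t) = {}" by (auto simp: vars_def)

definition lst :: "'a set \<Rightarrow> 'a list" where "lst D = (SOME xs. set xs = D \<and> distinct xs)"

lemma lst: "finite D \<Longrightarrow> set (lst D) = D \<and> distinct (lst D)"
  unfolding lst_def by (rule someI_ex) (rule finite_distinct_list)

lemma length_lst: "finite D \<Longrightarrow> length (lst D) = card D"
  using lst distinct_card by metis

definition eqconst :: "'u list \<Rightarrow> 'u fo" where
  "eqconst as = bigconj (map (\<lambda>a. FEq (Var a) (Const (as ! a))) [0..<length as])"

definition InD :: "'u inst \<Rightarrow> rel \<Rightarrow> 'u fo" where
  "InD D0 R = bigdisj (map (\<lambda>f. eqconst (snd f)) (filter (\<lambda>f. fst f = R) (lst D0)))"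

lemma sat_eqconst: "length as = length bs \<Longrightarrow> sat X A (\<lambda>i. as ! i) (eqconst bs) \<longleftrightarrow> as = bs"
  by (auto simp: eqconst_def sat_bigconj intro: nth_equalityI)

lemma sat_InD:
  assumes D0: "instance_over S D0" and len: "length as = arity R"
  shows "sat X A (\<lambda>i. as ! i) (InD D0 R) \<longleftrightarrow> (R, as) \<in> D0"
proof -
  have fin: "finite D0" using D0 by (simp add: instance_over_def)
  have lenD: "\<And>bs. (R, bs) \<in> D0 \<Longrightarrow> length bs = arity R" using D0 by (auto simp: instance_over_def)
  have "sat X A (\<lambda>i. as ! i) (InD D0 R) \<longleftrightarrow> (\<exists>f\<in>set (lst D0). fst f = R \<and> sat X A (\<lambda>i. as ! i) (eqconst (snd f)))"
    unfolding InD_def sat_bigdisj set_map set_filter by blast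
  also have "\<dots> \<longleftrightarrow> (\<exists>f\<in>D0. fst f = R \<and> sat X A (\<lambda>i. as ! i) (eqconst (snd f)))"
    using lst[OF fin] by simp
  also have "\<dots> \<longleftrightarrow> (\<exists>f\<in>D0. fst f = R \<and> as = snd f)"
  proof (rule bex_cong[OF refl])
    fix f assume fD: "f \<in> D0"
    show "(fst f = R \<and> sat X A (\<lambda>i. as ! i) (eqconst (snd f))) \<longleftrightarrow> (fst f = R \<and> as = snd f)"
    proof (cases "fst f = R")
      case True
      then have "length (snd f) = arity R" using lenD[of "snd f"] fD by (cases f) auto
      then show ?thesis using sat_eqconst[of as "snd f"] len True by simp
    qed simp
  qed
  also have "\<dots> \<longleftrightarrow> (R, as) \<in> D0" by force
  finally show ?thesis .
qed

lemma fv_InD: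
  assumes D0: "instance_over S D0"
  shows "fv (InD D0 R) \<subseteq> {..<arity R}"
proof -
  have fin: "finite D0" using D0 by (simp add: instance_over_def)
  have lenD: "\<And>bs. (R, bs) \<in> D0 \<Longrightarrow> length bs = arity R" using D0 by (auto simp: instance_over_def)
  have fe: "fv (eqconst bs) \<subseteq> {..<length bs}" for bs :: "'a list"
    by (auto simp: eqconst_def fv_bigconj)
  show ?thesis
  proof
    fix x assume "x \<in> fv (InD D0 R)"
    then obtain f where f: "f \<in> set (lst D0)" "fst f = R" "x \<in> fv (eqconst (snd f))"
      unfolding InD_def fv_bigdisj by auto
    have "length (snd f) = arity R" using lenD[of "snd f"] f lst[OF fin] by (cases f) auto
    then show "x \<in> {..<arity R}" using subsetD[OF fe[of "snd f"] f(3)] by simp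
  qed
qed

lemma rels_InD: "rels (InD D0 R) = {}"
  by (auto simp: InD_def rels_bigdisj eqconst_def rels_bigconj)

lemma consts_InD:
  assumes D0: "instance_over S D0" and "(R, as) \<in> D0"
  shows "set as \<subseteq> fo_consts (InD D0 R)"
proof -
  have fin: "finite D0" using D0 by (simp add: instance_over_def)
  have "set as \<subseteq> fo_consts (eqconst as)"
  proof
    fix x assume "x \<in> set as"
    then obtain i where "i < length as" "as ! i = x" by (auto simp: in_set_conv_nth)
    then show "x \<in> fo_consts (eqconst as)" unfolding eqconst_def consts_bigconj by force
  qed
  moreover have "eqconst as \<in> set (map (\<lambda>f. eqconst (snd f)) (filter (\<lambda>f. fst f = R) (lst D0)))"
    using assms lst[OF fin] by force
  ultimately show ?thesis unfolding InD_def consts_bigdisj by blast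
qed

lemma fact_adom: "(R, as) \<in> X \<Longrightarrow> set as \<subseteq> adom X"
  unfolding adom_def by auto

lemma ex_atom:
  assumes "adom X \<subseteq> A"
  shows "sat X A \<sigma> (exN v n (Atom R (vars v n))) \<longleftrightarrow> (\<exists>vs. length vs = n \<and> (R, vs) \<in> X)"
proof -
  have "sat X A \<sigma> (exN v n (Atom R (vars v n))) \<longleftrightarrow> (\<exists>vs. length vs = n \<and> set vs \<subseteq> A \<and> (R, vs) \<in> X)"
    unfolding sat_exN by (auto simp: eval_vars)
  also have "\<dots> \<longleftrightarrow> (\<exists>vs. length vs = n \<and> (R, vs) \<in> X)"
    using assms fact_adom by blast
  finally show ?thesis .
qed

lemma mem_view_apply: "(R, as) \<in> view_apply S \<Phi> X \<longleftrightarrow>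
   R \<in> S \<and> length as = arity R \<and> set as \<subseteq> adom X \<union> fo_consts (\<Phi> R) \<and> sat_adom X (\<Phi> R) as"
  unfolding view_apply_def by blast

lemma view_apply_eqI:
  assumes sem: "\<And>R as. R \<in> S \<Longrightarrow> length as = arity R \<Longrightarrow> set as \<subseteq> adom X \<union> fo_consts (\<Phi> R) \<Longrightarrow>
        sat_adom X (\<Phi> R) as \<longleftrightarrow> (R, as) \<in> Out"
    and out: "\<And>R as. (R, as) \<in> Out \<Longrightarrow> R \<in> S \<and> length as = arity R \<and> set as \<subseteq> adom X \<union> fo_consts (\<Phi> R)"
  shows "view_apply S \<Phi> X = Out"
proof (rule set_eqI)
  fix f :: "'a fact"
  obtain R as where fRas: "f = (R, as)" by (cases f)
  show "f \<in> view_apply S \<Phi> X \<longleftrightarrow> f \<in> Out"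
    unfolding fRas mem_view_apply using out[of R as] sem[of R as] by blast
qed

lemma countable_instances:
  assumes "countable (UNIV :: 'u set)"
  shows "countable {D :: 'u inst. finite D}"
proof -
  have "countable (UNIV :: 'u list set)" using countable_lists[OF assms] by (simp add: lists_UNIV)
  then have "countable (UNIV :: 'u fact set)"
    using countable_SIGMA[of "UNIV :: rel set" "\<lambda>_. UNIV :: 'u list set"] by simp
  then show ?thesis using countable_Collect_finite_subset[of "UNIV :: 'u fact set"] by simp
qed

definition Ep :: "rel \<Rightarrow> rel" where "Ep R = (fst R, snd R + 3)"

lemma Ep_inj: "Ep R = Ep R' \<Longrightarrow> R = R'"
  by (cases R; cases R') (auto simp: Ep_def)

lemma arity_Ep: "arity (Ep R) = 3 + arity R" by (simp add: Ep_def arity_def)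

locale p1setup =
  fixes S :: "rel set" and DD :: "'u inst set" and \<nu> :: "nat \<Rightarrow> 'u"
  assumes S: "schema S" and DDne: "DD \<noteq> {}" and DDinst: "\<And>D. D \<in> DD \<Longrightarrow> instance_over S D"
    and cnt: "countable DD" and inj_nu: "inj \<nu>"
begin

definition D0 :: "'u inst" where "D0 = (if {} \<in> DD then {} else (SOME D. D \<in> DD))"
definition W :: "'u inst set" where "W = DD - {D0}"
definition wd :: "nat \<Rightarrow> 'u inst" where "wd i = from_nat_into W i"
definition II :: "nat set" where "II = to_nat_on W ` W"
definition wl :: "nat \<Rightarrow> 'u fact list" where "wl i = lst (wd i)"
definition cw :: "nat \<Rightarrow> nat" where "cw i = card (wd i)"
definition key :: "nat \<Rightarrow> 'u" where "key i = \<nu> (prod_encode (i, 0))"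
definition node :: "nat \<Rightarrow> nat \<Rightarrow> 'u" where "node i j = \<nu> (prod_encode (i, Suc j))"
definition fct :: "nat \<Rightarrow> nat \<Rightarrow> 'u fact" where
  "fct i j = (Ep (fst (wl i ! j)), [key i, node i j, node i (Suc j mod cw i)] @ snd (wl i ! j))"
definition valid :: "nat \<Rightarrow> bool" where
  "valid n \<longleftrightarrow> fst (prod_decode n) \<in> II \<and> snd (prod_decode n) < cw (fst (prod_decode n))"
definition phi :: "nat \<Rightarrow> 'u fact" where "phi n = fct (fst (prod_decode n)) (snd (prod_decode n))"
definition qv :: "nat \<Rightarrow> real" where "qv n = (if valid n then (1/2)^n else 0)"
definition block :: "nat \<Rightarrow> nat set" where "block i = {prod_encode (i, j) |j. j < cw i}"
definition Out :: "nat set \<Rightarrow> 'u inst" where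
  "Out U = (if \<exists>i\<in>II. U = block i then wd (SOME i. i \<in> II \<and> U = block i) else D0)"

lemma D0_DD: "D0 \<in> DD"
  using DDne by (auto simp: D0_def intro: someI_ex)

lemma D0_inst: "instance_over S D0" using D0_DD DDinst by blast

lemma W_ne_empty: "D \<in> W \<Longrightarrow> D \<noteq> {}"
  unfolding W_def D0_def by (auto split: if_splits)

lemma cntW: "countable W" using cnt by (simp add: W_def)

lemma wd_W: "i \<in> II \<Longrightarrow> wd i \<in> W"
  unfolding II_def wd_def using from_nat_into_to_nat_on[OF cntW] by auto

lemma wd_DD: "i \<in> II \<Longrightarrow> wd i \<in> DD" using wd_W by (auto simp: W_def)

lemma wd_inst: "i \<in> II \<Longrightarrow> instance_over S (wd i)" using wd_DD DDinst by blast

lemma wd_fin: "i \<in> II \<Longrightarrow> finite (wd i)" using wd_inst by (simp add: instance_over_def)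

lemma cw_pos: "i \<in> II \<Longrightarrow> 0 < cw i"
  using wd_fin wd_W W_ne_empty by (simp add: cw_def card_gt_0_iff)

lemma wl: "i \<in> II \<Longrightarrow> set (wl i) = wd i \<and> distinct (wl i) \<and> length (wl i) = cw i"
  using lst[OF wd_fin] length_lst[OF wd_fin] by (simp add: wl_def cw_def)

lemma wl_mem: "i \<in> II \<Longrightarrow> j < cw i \<Longrightarrow> wl i ! j \<in> wd i"
  using wl by (metis nth_mem)

lemma wl_fact: "i \<in> II \<Longrightarrow> j < cw i \<Longrightarrow> fst (wl i ! j) \<in> S \<and> length (snd (wl i ! j)) = arity (fst (wl i ! j))"
  using wl_mem wd_inst unfolding instance_over_def by (metis (mono_tags, lifting) case_prod_beta)

lemma wd_surj: "D \<in> W \<Longrightarrow> \<exists>i\<in>II. wd i = D"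
  unfolding II_def wd_def using from_nat_into_to_nat_on[OF cntW] by auto

lemma key_inj: "key i = key i' \<Longrightarrow> i = i'"
  using inj_nu by (auto simp: key_def dest: injD)

lemma node_inj: "node i j = node i' j' \<Longrightarrow> i = i' \<and> j = j'"
  using inj_nu by (auto simp: node_def dest: injD)

lemma key_node: "key i \<noteq> node i' j"
  using inj_nu by (auto simp: key_def node_def dest: injD)

lemma valid_pe: "valid (prod_encode (i, j)) \<longleftrightarrow> i \<in> II \<and> j < cw i"
  by (simp add: valid_def)

lemma phi_pe: "phi (prod_encode (i, j)) = fct i j" by (simp add: phi_def)

lemma valid_E: "valid n \<Longrightarrow> (\<And>i j. n = prod_encode (i, j) \<Longrightarrow> i \<in> II \<Longrightarrow> j < cw i \<Longrightarrow> P) \<Longrightarrow> P"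
  by (metis prod.collapse prod_decode_inverse valid_def)

lemma fct_inj: "fct i j = fct i' j' \<Longrightarrow> i = i' \<and> j = j'"
  unfolding fct_def using key_inj node_inj by auto

lemma phi_inj: "inj_on phi {n. valid n}"
proof (rule inj_onI)
  fix n n' assume v: "n \<in> {n. valid n}" "n' \<in> {n. valid n}" and eq: "phi n = phi n'"
  obtain i j where "n = prod_encode (i, j)" using valid_E[of n] v by blast
  moreover obtain i' j' where "n' = prod_encode (i', j')" using valid_E[of n'] v by blast
  ultimately have "n = prod_encode (i, j)" "n' = prod_encode (i', j')" by auto
  then show "n = n'" using eq fct_inj by (auto simp: phi_pe)
qed

lemma fct_shape:
  assumes "i \<in> II" "j < cw i"
  shows "\<exists>R as. fct i j = (Ep R, [key i, node i j, node i (Suc j mod cw i)] @ as) \<and> (R, as) = wl i ! j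
     \<and> R \<in> S \<and> length as = arity R"
  using wl_fact[OF assms]
  by (intro exI[of _ "fst (wl i ! j)"] exI[of _ "snd (wl i ! j)"]) (auto simp: fct_def)

definition WF :: "'u inst \<Rightarrow> bool" where
  "WF X \<longleftrightarrow> (\<forall>f\<in>X. \<exists>R\<in>S. fst f = Ep R \<and> length (snd f) = 3 + arity R)"

lemma WF_phi: "(\<And>n. n \<in> U \<Longrightarrow> valid n) \<Longrightarrow> WF (phi ` U)"
  unfolding WF_def
proof
  fix f assume vU: "\<And>n. n \<in> U \<Longrightarrow> valid n" and "f \<in> phi ` U"
  then obtain n where n: "n \<in> U" "f = phi n" by auto
  then obtain i j where ij: "n = prod_encode (i, j)" "i \<in> II" "j < cw i" using valid_E[OF vU[OF n(1)]] by blast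
  then show "\<exists>R\<in>S. fst f = Ep R \<and> length (snd f) = 3 + arity R"
    using fct_shape[OF ij(2,3)] n by (auto simp: phi_pe)
qed

definition GoodSem :: "'u inst \<Rightarrow> bool" where
  "GoodSem X \<longleftrightarrow> X \<noteq> {} \<and> (\<forall>f1\<in>X. \<forall>f2\<in>X. snd f1 ! 0 = snd f2 ! 0) \<and> (\<forall>f1\<in>X. \<exists>f2\<in>X. snd f2 ! 1 = snd f1 ! 2)"

lemma fct_key: "snd (fct i j) ! 0 = key i" by (simp add: fct_def)
lemma fct_tail: "snd (fct i j) ! 1 = node i j" by (simp add: fct_def)
lemma fct_head: "snd (fct i j) ! 2 = node i (Suc j mod cw i)" by (simp add: fct_def)

lemma block_ne: "i \<in> II \<Longrightarrow> block i \<noteq> {}"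
  using cw_pos by (auto simp: block_def)

lemma block_inj: "i \<in> II \<Longrightarrow> block i = block i' \<Longrightarrow> i = i'"
proof -
  assume i: "i \<in> II" and eq: "block i = block i'"
  have "prod_encode (i, 0) \<in> block i" using cw_pos[OF i] by (auto simp: block_def)
  then have "prod_encode (i, 0) \<in> block i'" using eq by simp
  then show "i = i'" by (auto simp: block_def prod_encode_eq)
qed

lemma block_valid: "i \<in> II \<Longrightarrow> n \<in> block i \<Longrightarrow> valid n"
  by (auto simp: block_def valid_pe)

lemma Out_block: "i \<in> II \<Longrightarrow> Out (block i) = wd i"
proof -
  assume i: "i \<in> II"
  have "(SOME i'. i' \<in> II \<and> block i = block i') = i"
    by (rule some_equality) (use i block_inj in auto)
  then show ?thesis using i by (auto simp: Out_def)
qed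

lemma Out_not: "\<not> (\<exists>i\<in>II. U = block i) \<Longrightarrow> Out U = D0"
  by (simp add: Out_def)

lemma GoodSem_block: "i \<in> II \<Longrightarrow> GoodSem (phi ` block i)"
  unfolding GoodSem_def
proof (intro conjI ballI)
  assume i: "i \<in> II"
  show "phi ` block i \<noteq> {}" using block_ne[OF i] by simp
  fix f1 assume "f1 \<in> phi ` block i"
  then obtain j1 where j1: "j1 < cw i" "f1 = fct i j1" by (auto simp: block_def phi_pe)
  {
    fix f2 assume "f2 \<in> phi ` block i"
    then obtain j2 where j2: "j2 < cw i" "f2 = fct i j2" by (auto simp: block_def phi_pe)
    show "snd f1 ! 0 = snd f2 ! 0" using j1 j2 by (simp add: fct_key)
  }
  show "\<exists>f2\<in>phi ` block i. snd f2 ! 1 = snd f1 ! 2"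
  proof
    show "fct i (Suc j1 mod cw i) \<in> phi ` block i"
      using cw_pos[OF i] by (auto simp: block_def phi_pe intro!: rev_image_eqI[of "prod_encode (i, Suc j1 mod cw i)"])
    show "snd (fct i (Suc j1 mod cw i)) ! 1 = snd f1 ! 2" using j1 by (simp add: fct_def)
  qed
qed

lemma GoodSem_imp_block:
  assumes vU: "\<And>n. n \<in> U \<Longrightarrow> valid n" and G: "GoodSem (phi ` U)"
  shows "\<exists>i\<in>II. U = block i"
proof -
  have G1: "phi ` U \<noteq> {}" and G2: "\<forall>f1\<in>phi ` U. \<forall>f2\<in>phi ` U. snd f1 ! 0 = snd f2 ! 0"
    and G3: "\<forall>f1\<in>phi ` U. \<exists>f2\<in>phi ` U. snd f2 ! 1 = snd f1 ! 2"
    using G unfolding GoodSem_def by blast+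
  from G1 have ne: "U \<noteq> {}" by simp
  then obtain n0 where n0: "n0 \<in> U" by auto
  then obtain i j0 where ij0: "n0 = prod_encode (i, j0)" "i \<in> II" "j0 < cw i" using valid_E[OF vU[OF n0]] by blast
  have inblock: "n \<in> U \<Longrightarrow> \<exists>j. n = prod_encode (i, j) \<and> j < cw i" for n
  proof -
    assume nU: "n \<in> U"
    then obtain i' j where ij: "n = prod_encode (i', j)" "i' \<in> II" "j < cw i'" using valid_E[OF vU[OF nU]] by blast
    have "snd (phi n) ! 0 = snd (phi n0) ! 0" using G2 nU n0 by blast
    then have "key i' = key i" using ij ij0 by (simp add: phi_pe fct_key)
    then have "i' = i" by (rule key_inj)
    then show ?thesis using ij by auto
  qed
  define J where "J = {j. prod_encode (i, j) \<in> U}"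
  have step: "j \<in> J \<Longrightarrow> Suc j mod cw i \<in> J" for j
  proof -
    assume "j \<in> J"
    then have jU: "prod_encode (i, j) \<in> U" by (simp add: J_def)
    then obtain f2 where f2: "f2 \<in> phi ` U" "snd f2 ! 1 = snd (phi (prod_encode (i, j))) ! 2"
      using G3 by blast
    then obtain n2 where n2: "n2 \<in> U" "f2 = phi n2" by auto
    then obtain j2 where j2: "n2 = prod_encode (i, j2)" "j2 < cw i" using inblock by blast
    have "node i j2 = node i (Suc j mod cw i)" using f2(2) n2 j2 by (simp add: phi_pe fct_def)
    then have "j2 = Suc j mod cw i" using node_inj by blast
    then show ?thesis using n2 j2 by (simp add: J_def)
  qed
  have j0J: "j0 \<in> J" using n0 ij0 by (simp add: J_def)
  have all: "(j0 + k) mod cw i \<in> J" for k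
  proof (induction k)
    case 0 then show ?case using j0J ij0 by simp
  next
    case (Suc k)
    then have "Suc ((j0 + k) mod cw i) mod cw i \<in> J" by (rule step)
    then show ?case by (simp add: mod_Suc_eq)
  qed
  have "U = block i"
  proof
    show "U \<subseteq> block i" using inblock by (auto simp: block_def)
    show "block i \<subseteq> U"
    proof
      fix n assume "n \<in> block i"
      then obtain j where j: "n = prod_encode (i, j)" "j < cw i" by (auto simp: block_def)
      have "(j0 + (cw i - j0 + j)) mod cw i = j" using ij0(3) j(2) by simp
      then have "j \<in> J" using all[of "cw i - j0 + j"] by simp
      then show "n \<in> U" using j by (simp add: J_def)
    qed
  qed
  then show ?thesis using ij0 by blast
qed

lemma qv_nonneg: "0 \<le> qv n" by (simp add: qv_def)

lemma qv_summable: "summable qv"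
proof (rule summable_comparison_test'[of "\<lambda>n. (1/2::real)^n"])
  show "summable (\<lambda>n. (1/2::real)^n)" by (rule summable_geometric) simp
  fix n show "norm (qv n) \<le> (1/2)^n" by (simp add: qv_def)
qed

lemma qv_pos: "0 < qv n \<longleftrightarrow> valid n" by (simp add: qv_def)

sublocale qseq qv by standard (auto simp: qv_nonneg qv_summable)

end

lemma eval_vars_under:
  "length vs = n \<Longrightarrow> v + n \<le> w \<Longrightarrow> map (eval_trm (upd (upd \<sigma> v vs) w ws)) (vars v n) = vs"
  by (auto simp: vars_def upd_def intro!: nth_equalityI)

context p1setup
begin

definition Amax :: nat where "Amax = Max (arity ` S)"
definition v2 :: nat where "v2 = 2 * Amax + 3"
definition Sl :: "rel list" where "Sl = lst S"
definition atomE :: "nat \<Rightarrow> rel \<Rightarrow> 'u fo" where "atomE v R = Atom (Ep R) (vars v (3 + arity R))"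
definition NonEmpty :: "'u fo" where
  "NonEmpty = bigdisj (map (\<lambda>R. exN Amax (3 + arity R) (atomE Amax R)) Sl)"
definition SameKey :: "'u fo" where
  "SameKey = bigconj (concat (map (\<lambda>R1. map (\<lambda>R2. allN Amax (3 + arity R1) (allN v2 (3 + arity R2)
      (Impl (Conj (atomE Amax R1) (atomE v2 R2)) (FEq (Var Amax) (Var v2))))) Sl) Sl))"
definition OutEdge :: "'u fo" where
  "OutEdge = bigconj (map (\<lambda>R1. allN Amax (3 + arity R1) (Impl (atomE Amax R1)
      (bigdisj (map (\<lambda>R2. exN v2 (3 + arity R2) (Conj (atomE v2 R2) (FEq (Var (Suc v2)) (Var (Suc (Suc Amax)))))) Sl)))) Sl)"
definition Good :: "'u fo" where "Good = Conj NonEmpty (Conj SameKey OutEdge)"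
definition Dec :: "rel \<Rightarrow> 'u fo" where "Dec R = exN Amax 3 (Atom (Ep R) (vars Amax 3 @ vars 0 (arity R)))"
definition Phi1 :: "rel \<Rightarrow> 'u fo" where "Phi1 R = Disj (Conj Good (Dec R)) (Conj (Neg Good) (InD D0 R))"

lemma finS: "finite S" and neS: "S \<noteq> {}" using S by (auto simp: schema_def)

lemma set_Sl: "set Sl = S" using lst[OF finS] by (simp add: Sl_def)

lemma ar_le: "R \<in> S \<Longrightarrow> arity R \<le> Amax"
  unfolding Amax_def using finS by simp

lemma WF_E:
  assumes "WF X" "f \<in> X"
  obtains R vs where "f = (Ep R, vs)" "R \<in> S" "length vs = 3 + arity R"
  using assms unfolding WF_def by (metis prod.collapse)

lemma sat_NonEmpty:
  assumes wf: "WF X" and A: "adom X \<subseteq> A"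
  shows "sat X A \<sigma> NonEmpty \<longleftrightarrow> X \<noteq> {}"
proof -
  have "sat X A \<sigma> NonEmpty \<longleftrightarrow> (\<exists>R\<in>S. \<exists>vs. length vs = 3 + arity R \<and> (Ep R, vs) \<in> X)"
    unfolding NonEmpty_def sat_bigdisj atomE_def set_map set_Sl using ex_atom[OF A] by auto
  also have "\<dots> \<longleftrightarrow> X \<noteq> {}"
  proof
    assume "X \<noteq> {}"
    then obtain f where "f \<in> X" by auto
    then show "\<exists>R\<in>S. \<exists>vs. length vs = 3 + arity R \<and> (Ep R, vs) \<in> X"
      using WF_E[OF wf] by metis
  qed auto
  finally show ?thesis .
qed

lemma sat_atom_vars: "length vs = n \<Longrightarrow> sat X A (upd \<sigma> v vs) (Atom R (vars v n)) \<longleftrightarrow> (R, vs) \<in> X"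
  by (simp add: eval_vars)

lemma sat_atom_vars2: "length vs = n \<Longrightarrow> v + n \<le> w \<Longrightarrow> sat X A (upd (upd \<sigma> v vs) w ws) (Atom R (vars v n)) \<longleftrightarrow> (R, vs) \<in> X"
  by (simp add: eval_vars_under)

lemma v2_gt: "R \<in> S \<Longrightarrow> Amax + (3 + arity R) \<le> v2"
  using ar_le by (simp add: v2_def)

lemma sat_SameKey:
  assumes wf: "WF X" and A: "adom X \<subseteq> A"
  shows "sat X A \<sigma> SameKey \<longleftrightarrow> (\<forall>f1\<in>X. \<forall>f2\<in>X. snd f1 ! 0 = snd f2 ! 0)"
proof -
  have inner: "sat X A \<sigma> (allN Amax (3 + arity R1) (allN v2 (3 + arity R2)
      (Impl (Conj (atomE Amax R1) (atomE v2 R2)) (FEq (Var Amax) (Var v2))))) \<longleftrightarrow>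
      (\<forall>vs. length vs = 3 + arity R1 \<longrightarrow> set vs \<subseteq> A \<longrightarrow> (\<forall>ws. length ws = 3 + arity R2 \<longrightarrow> set ws \<subseteq> A \<longrightarrow>
         ((Ep R1, vs) \<in> X \<and> (Ep R2, ws) \<in> X \<longrightarrow> vs ! 0 = ws ! 0)))"
    if R1: "R1 \<in> S" for R1 R2
  proof -
    have le: "Amax + (3 + arity R1) \<le> v2" by (rule v2_gt[OF R1])
    have ev1: "upd (upd \<sigma> Amax vs) v2 ws Amax = vs ! 0" if "length vs = 3 + arity R1" for vs ws
    proof -
      have "upd (upd \<sigma> Amax vs) v2 ws Amax = upd \<sigma> Amax vs Amax" by (rule upd_low) (use le in simp)
      also have "\<dots> = vs ! 0" using upd_in[of 0 vs \<sigma> Amax] that by simp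
      finally show ?thesis .
    qed
    have ev2: "upd (upd \<sigma> Amax vs) v2 ws v2 = ws ! 0" if "length ws = 3 + arity R2" for vs ws
      using upd_in[of 0 ws "upd \<sigma> Amax vs" v2] that by simp
    show ?thesis
      by (simp add: sat_allN atomE_def eval_vars eval_vars_under[OF _ le] ev1 ev2 cong: imp_cong)
  qed
  have "sat X A \<sigma> SameKey \<longleftrightarrow> (\<forall>R1\<in>S. \<forall>R2\<in>S. \<forall>vs. length vs = 3 + arity R1 \<longrightarrow> set vs \<subseteq> A \<longrightarrow>
      (\<forall>ws. length ws = 3 + arity R2 \<longrightarrow> set ws \<subseteq> A \<longrightarrow> ((Ep R1, vs) \<in> X \<and> (Ep R2, ws) \<in> X \<longrightarrow> vs ! 0 = ws ! 0)))"
    unfolding SameKey_def sat_bigconj by (simp add: set_Sl inner)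
  also have "\<dots> \<longleftrightarrow> (\<forall>f1\<in>X. \<forall>f2\<in>X. snd f1 ! 0 = snd f2 ! 0)"
  proof
    assume H: "\<forall>R1\<in>S. \<forall>R2\<in>S. \<forall>vs. length vs = 3 + arity R1 \<longrightarrow> set vs \<subseteq> A \<longrightarrow>
      (\<forall>ws. length ws = 3 + arity R2 \<longrightarrow> set ws \<subseteq> A \<longrightarrow> ((Ep R1, vs) \<in> X \<and> (Ep R2, ws) \<in> X \<longrightarrow> vs ! 0 = ws ! 0))"
    show "\<forall>f1\<in>X. \<forall>f2\<in>X. snd f1 ! 0 = snd f2 ! 0"
    proof (intro ballI)
      fix f1 f2 assume f1: "f1 \<in> X" and f2: "f2 \<in> X"
      obtain R1 vs where 1: "f1 = (Ep R1, vs)" "R1 \<in> S" "length vs = 3 + arity R1" using WF_E[OF wf f1] by metis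
      obtain R2 ws where 2: "f2 = (Ep R2, ws)" "R2 \<in> S" "length ws = 3 + arity R2" using WF_E[OF wf f2] by metis
      have "set vs \<subseteq> A" using fact_adom[of "Ep R1" vs X] f1 1(1) A by auto
      moreover have "set ws \<subseteq> A" using fact_adom[of "Ep R2" ws X] f2 2(1) A by auto
      moreover have "(Ep R1, vs) \<in> X \<and> (Ep R2, ws) \<in> X" using f1 f2 1(1) 2(1) by simp
      ultimately have "vs ! 0 = ws ! 0" using H 1(2,3) 2(2,3) by blast
      then show "snd f1 ! 0 = snd f2 ! 0" using 1(1) 2(1) by simp
    qed
  next
    assume H: "\<forall>f1\<in>X. \<forall>f2\<in>X. snd f1 ! 0 = snd f2 ! 0"
    show "\<forall>R1\<in>S. \<forall>R2\<in>S. \<forall>vs. length vs = 3 + arity R1 \<longrightarrow> set vs \<subseteq> A \<longrightarrow>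
      (\<forall>ws. length ws = 3 + arity R2 \<longrightarrow> set ws \<subseteq> A \<longrightarrow> ((Ep R1, vs) \<in> X \<and> (Ep R2, ws) \<in> X \<longrightarrow> vs ! 0 = ws ! 0))"
    proof (intro ballI allI impI)
      fix R1 R2 vs ws assume m: "(Ep R1, vs) \<in> X \<and> (Ep R2, ws) \<in> X"
      have "snd (Ep R1, vs) ! 0 = snd (Ep R2, ws) ! 0" using H m by blast
      then show "vs ! 0 = ws ! 0" by simp
    qed
  qed
  finally show ?thesis .
qed

lemma sat_OutEdge:
  assumes wf: "WF X" and A: "adom X \<subseteq> A"
  shows "sat X A \<sigma> OutEdge \<longleftrightarrow> (\<forall>f1\<in>X. \<exists>f2\<in>X. snd f2 ! 1 = snd f1 ! 2)"
proof -
  have inner: "sat X A \<sigma> (allN Amax (3 + arity R1) (Impl (atomE Amax R1)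
      (bigdisj (map (\<lambda>R2. exN v2 (3 + arity R2) (Conj (atomE v2 R2) (FEq (Var (Suc v2)) (Var (Suc (Suc Amax)))))) Sl)))) \<longleftrightarrow>
      (\<forall>vs. length vs = 3 + arity R1 \<longrightarrow> set vs \<subseteq> A \<longrightarrow> (Ep R1, vs) \<in> X \<longrightarrow>
         (\<exists>R2\<in>S. \<exists>ws. length ws = 3 + arity R2 \<and> set ws \<subseteq> A \<and> (Ep R2, ws) \<in> X \<and> ws ! 1 = vs ! 2))"
    if R1: "R1 \<in> S" for R1
  proof -
    have le: "Amax + (3 + arity R1) \<le> v2" by (rule v2_gt[OF R1])
    have ev1: "upd (upd \<sigma> Amax vs) v2 ws (Suc v2) = ws ! 1" if "length ws = 3 + arity R2" for vs ws R2
      using upd_in[of 1 ws "upd \<sigma> Amax vs" v2] that by simp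
    have ev2: "upd (upd \<sigma> Amax vs) v2 ws (Suc (Suc Amax)) = vs ! 2" if lv: "length vs = 3 + arity R1" for vs ws
    proof -
      have "upd (upd \<sigma> Amax vs) v2 ws (Suc (Suc Amax)) = upd \<sigma> Amax vs (Amax + 2)"
        using le by (simp add: upd_low)
      also have "\<dots> = vs ! 2" using lv by (intro upd_in) simp
      finally show ?thesis .
    qed
    show ?thesis
      by (simp add: sat_allN sat_exN atomE_def eval_vars sat_bigdisj set_Sl ev1 ev2 cong: imp_cong conj_cong)
  qed
  have "sat X A \<sigma> OutEdge \<longleftrightarrow> (\<forall>R1\<in>S. \<forall>vs. length vs = 3 + arity R1 \<longrightarrow> set vs \<subseteq> A \<longrightarrow> (Ep R1, vs) \<in> X \<longrightarrow>
         (\<exists>R2\<in>S. \<exists>ws. length ws = 3 + arity R2 \<and> set ws \<subseteq> A \<and> (Ep R2, ws) \<in> X \<and> ws ! 1 = vs ! 2))"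
    unfolding OutEdge_def sat_bigconj by (simp add: set_Sl inner)
  also have "\<dots> \<longleftrightarrow> (\<forall>f1\<in>X. \<exists>f2\<in>X. snd f2 ! 1 = snd f1 ! 2)"
  proof
    assume H: "\<forall>R1\<in>S. \<forall>vs. length vs = 3 + arity R1 \<longrightarrow> set vs \<subseteq> A \<longrightarrow> (Ep R1, vs) \<in> X \<longrightarrow>
         (\<exists>R2\<in>S. \<exists>ws. length ws = 3 + arity R2 \<and> set ws \<subseteq> A \<and> (Ep R2, ws) \<in> X \<and> ws ! 1 = vs ! 2)"
    show "\<forall>f1\<in>X. \<exists>f2\<in>X. snd f2 ! 1 = snd f1 ! 2"
    proof
      fix f1 assume f1: "f1 \<in> X"
      obtain R1 vs where 1: "f1 = (Ep R1, vs)" "R1 \<in> S" "length vs = 3 + arity R1" using WF_E[OF wf f1] by metis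
      have "set vs \<subseteq> A" using fact_adom[of "Ep R1" vs X] f1 1(1) A by auto
      moreover have "(Ep R1, vs) \<in> X" using f1 1(1) by simp
      ultimately obtain R2 ws where "(Ep R2, ws) \<in> X" "ws ! 1 = vs ! 2" using H 1(2,3) by blast
      then show "\<exists>f2\<in>X. snd f2 ! 1 = snd f1 ! 2" using 1 by force
    qed
  next
    assume H: "\<forall>f1\<in>X. \<exists>f2\<in>X. snd f2 ! 1 = snd f1 ! 2"
    show "\<forall>R1\<in>S. \<forall>vs. length vs = 3 + arity R1 \<longrightarrow> set vs \<subseteq> A \<longrightarrow> (Ep R1, vs) \<in> X \<longrightarrow>
         (\<exists>R2\<in>S. \<exists>ws. length ws = 3 + arity R2 \<and> set ws \<subseteq> A \<and> (Ep R2, ws) \<in> X \<and> ws ! 1 = vs ! 2)"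
    proof (intro ballI allI impI)
      fix R1 vs assume "R1 \<in> S" "(Ep R1, vs) \<in> X" "length vs = 3 + arity R1"
      then obtain f2 where f2: "f2 \<in> X" "snd f2 ! 1 = vs ! 2" using H by force
      obtain R2 ws where 2: "f2 = (Ep R2, ws)" "R2 \<in> S" "length ws = 3 + arity R2" using WF_E[OF wf f2(1)] by metis
      have "set ws \<subseteq> A" using fact_adom[of "Ep R2" ws X] f2(1) 2(1) A by auto
      then show "\<exists>R2\<in>S. \<exists>ws. length ws = 3 + arity R2 \<and> set ws \<subseteq> A \<and> (Ep R2, ws) \<in> X \<and> ws ! 1 = vs ! 2"
        using 2 f2 by auto
    qed
  qed
  finally show ?thesis .
qed

lemma sat_Good:
  assumes wf: "WF X" and A: "adom X \<subseteq> A"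
  shows "sat X A \<sigma> Good \<longleftrightarrow> GoodSem X"
  unfolding Good_def GoodSem_def using sat_NonEmpty[OF wf A] sat_SameKey[OF wf A] sat_OutEdge[OF wf A] by simp

lemma sat_Dec:
  assumes A: "adom X \<subseteq> A" and R: "R \<in> S" and len: "length as = arity R"
  shows "sat X A (\<lambda>i. as ! i) (Dec R) \<longleftrightarrow> (\<exists>ws. length ws = 3 \<and> (Ep R, ws @ as) \<in> X)"
proof -
  have ev0: "map (eval_trm (upd (\<lambda>i. as ! i) Amax ws)) (vars 0 (arity R)) = as" for ws
    using ar_le[OF R] len by (auto simp: vars_def upd_low intro!: nth_equalityI)
  have "sat X A (\<lambda>i. as ! i) (Dec R) \<longleftrightarrow> (\<exists>ws. length ws = 3 \<and> set ws \<subseteq> A \<and> (Ep R, ws @ as) \<in> X)"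
    unfolding Dec_def sat_exN sat.simps by (simp add: ev0 eval_vars cong: conj_cong)
  also have "\<dots> \<longleftrightarrow> (\<exists>ws. length ws = 3 \<and> (Ep R, ws @ as) \<in> X)"
  proof
    assume "\<exists>ws. length ws = 3 \<and> (Ep R, ws @ as) \<in> X"
    then obtain ws where ws: "length ws = 3" "(Ep R, ws @ as) \<in> X" by blast
    then have "set ws \<subseteq> A" using fact_adom[OF ws(2)] A by auto
    then show "\<exists>ws. length ws = 3 \<and> set ws \<subseteq> A \<and> (Ep R, ws @ as) \<in> X" using ws by blast
  qed blast
  finally show ?thesis .
qed

end

context p1setup
begin

lemma valid_sup: "U \<in> set_pmf (Lam qv) \<Longrightarrow> finite U \<and> (\<forall>n\<in>U. valid n)"
  using Lam_sup qv_pos by blast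

lemma Dec_block:
  assumes i: "i \<in> II"
  shows "(\<exists>ws. length ws = 3 \<and> (Ep R, ws @ as) \<in> phi ` block i) \<longleftrightarrow> (R, as) \<in> wd i"
proof
  assume "\<exists>ws. length ws = 3 \<and> (Ep R, ws @ as) \<in> phi ` block i"
  then obtain ws n where ws: "length ws = 3" "n \<in> block i" "(Ep R, ws @ as) = phi n" by auto
  then obtain j where j: "n = prod_encode (i, j)" "j < cw i" by (auto simp: block_def)
  obtain R' as' where sh: "fct i j = (Ep R', [key i, node i j, node i (Suc j mod cw i)] @ as')" "(R', as') = wl i ! j"
    using fct_shape[OF i j(2)] by blast
  have eq: "(Ep R, ws @ as) = (Ep R', [key i, node i j, node i (Suc j mod cw i)] @ as')"
    using ws(3) j(1) sh(1) by (simp add: phi_pe)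
  then have "R = R'" using Ep_inj by simp
  moreover have "as = as'"
  proof -
    have "snd (Ep R, ws @ as) = snd (Ep R', [key i, node i j, node i (Suc j mod cw i)] @ as')"
      using eq by (rule arg_cong)
    then have "ws @ as = [key i, node i j, node i (Suc j mod cw i)] @ as'" by (simp only: snd_conv)
    then show ?thesis using ws(1) by (subst (asm) append_eq_append_conv) auto
  qed
  ultimately have "(R, as) = wl i ! j" using sh(2) by simp
  then show "(R, as) \<in> wd i" using wl_mem[OF i j(2)] by simp
next
  assume "(R, as) \<in> wd i"
  then obtain j where j: "j < cw i" "wl i ! j = (R, as)" using wl[OF i] by (metis in_set_conv_nth)
  have "phi (prod_encode (i, j)) = (Ep R, [key i, node i j, node i (Suc j mod cw i)] @ as)"
    using j by (simp add: phi_pe fct_def)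
  moreover have "prod_encode (i, j) \<in> block i" using j by (auto simp: block_def)
  ultimately show "\<exists>ws. length ws = 3 \<and> (Ep R, ws @ as) \<in> phi ` block i"
    by (intro exI[of _ "[key i, node i j, node i (Suc j mod cw i)]"]) (auto intro: rev_image_eqI)
qed

lemma consts_Phi1: "fo_consts (InD D0 R) \<subseteq> fo_consts (Phi1 R)"
  by (auto simp: Phi1_def)

lemma view_phi:
  assumes U: "finite U" "\<forall>n\<in>U. valid n"
  shows "view_apply S Phi1 (phi ` U) = Out U"
proof (rule view_apply_eqI)
  have wf: "WF (phi ` U)" using WF_phi U by blast
  fix R :: rel and as :: "'u list" assume R: "R \<in> S" and len: "length as = arity R"
  define A where "A = adom (phi ` U) \<union> fo_consts (Phi1 R)"
  have A: "adom (phi ` U) \<subseteq> A" by (simp add: A_def)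
  have "sat_adom (phi ` U) (Phi1 R) as \<longleftrightarrow>
      (GoodSem (phi ` U) \<and> (\<exists>ws. length ws = 3 \<and> (Ep R, ws @ as) \<in> phi ` U)) \<or> (\<not> GoodSem (phi ` U) \<and> (R, as) \<in> D0)"
  proof -
    have "sat_adom (phi ` U) (Phi1 R) as = sat (phi ` U) A (\<lambda>i. as ! i) (Phi1 R)"
      by (simp add: sat_adom_def A_def)
    also have "\<dots> = ((GoodSem (phi ` U) \<and> (\<exists>ws. length ws = 3 \<and> (Ep R, ws @ as) \<in> phi ` U)) \<or> (\<not> GoodSem (phi ` U) \<and> (R, as) \<in> D0))"
      unfolding Phi1_def sat.simps sat_Good[OF wf A] sat_Dec[OF A R len] sat_InD[OF D0_inst len] ..
    finally show ?thesis .
  qed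
  also have "\<dots> \<longleftrightarrow> (R, as) \<in> Out U"
  proof (cases "GoodSem (phi ` U)")
    case True
    then obtain i where i: "i \<in> II" "U = block i" using GoodSem_imp_block U by blast
    have "(\<exists>ws. length ws = 3 \<and> (Ep R, ws @ as) \<in> phi ` U) \<longleftrightarrow> (R, as) \<in> wd i"
      unfolding i(2) by (rule Dec_block[OF i(1)])
    moreover have "Out U = wd i" unfolding i(2) by (rule Out_block[OF i(1)])
    ultimately show ?thesis using True by simp
  next
    case False
    then have "\<not> (\<exists>i\<in>II. U = block i)" using GoodSem_block by blast
    then have "Out U = D0" by (rule Out_not)
    then show ?thesis using False by simp
  qed
  finally show "sat_adom (phi ` U) (Phi1 R) as \<longleftrightarrow> (R, as) \<in> Out U" .
next
  fix R :: rel and as :: "'u list" assume o: "(R, as) \<in> Out U"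
  show "R \<in> S \<and> length as = arity R \<and> set as \<subseteq> adom (phi ` U) \<union> fo_consts (Phi1 R)"
  proof (cases "\<exists>i\<in>II. U = block i")
    case True
    then obtain i where i: "i \<in> II" "U = block i" by blast
    then have Rw: "(R, as) \<in> wd i" using o Out_block by simp
    then have "R \<in> S \<and> length as = arity R" using wd_inst[OF i(1)] by (auto simp: instance_over_def)
    moreover obtain ws where ws: "(Ep R, ws @ as) \<in> phi ` U"
      using Dec_block[OF i(1), of R as] Rw unfolding i(2) by blast
    have "set (ws @ as) \<subseteq> adom (phi ` U)" by (rule fact_adom[OF ws])
    then have "set as \<subseteq> adom (phi ` U)" by simp
    ultimately show ?thesis by blast
  next
    case False
    then have D: "(R, as) \<in> D0" using o Out_not by simp
    then have "R \<in> S \<and> length as = arity R" using D0_inst by (auto simp: instance_over_def)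
    moreover have "set as \<subseteq> fo_consts (Phi1 R)" using consts_InD[OF D0_inst D] consts_Phi1 by blast
    ultimately show ?thesis by blast
  qed
qed

lemma fv_atom_vars: "fv (Atom R (vars v n)) = {v..<v+n}"
  by (auto simp: vars_def)

lemma fv_Good: "fv Good = {}"
proof -
  have "fv NonEmpty = {}"
    by (auto simp: NonEmpty_def fv_bigdisj fv_exN atomE_def vars_def)
  moreover have "fv SameKey = {}"
    by (auto simp: SameKey_def fv_bigconj fv_allN atomE_def vars_def v2_def)
  moreover have "fv OutEdge = {}"
    by (auto simp: OutEdge_def fv_bigconj fv_bigdisj fv_allN fv_exN atomE_def vars_def v2_def)
  ultimately show ?thesis by (simp add: Good_def)
qed

lemma rels_Good: "rels Good \<subseteq> Ep ` S"
  by (auto simp: Good_def NonEmpty_def SameKey_def OutEdge_def rels_bigconj rels_bigdisj rels_allN rels_exN atomE_def set_Sl)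

lemma fo_view_Phi1: "fo_view (Ep ` S) S Phi1"
  unfolding fo_view_def
proof (intro conjI ballI)
  show "schema (Ep ` S)" using finS neS by (simp add: schema_def)
  show "schema S" by (rule S)
  fix R assume R: "R \<in> S"
  have "fv (Dec R) \<subseteq> {..<arity R}"
    using ar_le[OF R] by (auto simp: Dec_def fv_exN vars_def)
  then show "fv (Phi1 R) \<subseteq> {..<arity R}"
    using fv_Good fv_InD[OF D0_inst, of R] by (auto simp: Phi1_def)
  show "rels (Phi1 R) \<subseteq> Ep ` S"
    using rels_Good R by (auto simp: Phi1_def Dec_def rels_exN rels_InD)
qed

lemma p1_result: "\<exists>P1. pdb S P1 \<and> worlds P1 = DD \<and> in_FO_TI S P1"
proof -
  define I where "I = map_pmf ((`) phi) (Lam qv)"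
  define P1 where "P1 = map_pmf Out (Lam qv)"
  have P1I: "P1 = map_pmf (view_apply S Phi1) I"
    unfolding P1_def I_def map_pmf_comp
    by (rule map_pmf_cong[OF refl]) (use valid_sup view_phi in auto)
  have tiI: "tuple_independent I" unfolding tuple_independent_ti I_def
    by (rule ti_map_inj[OF Lam_ti _ phi_inj]) (use valid_sup in auto)
  have pdbI: "pdb (Ep ` S) I"
    unfolding pdb_def
  proof (intro conjI ballI)
    show "schema (Ep ` S)" using finS neS by (simp add: schema_def)
    fix X assume "X \<in> set_pmf I"
    then obtain U where U: "U \<in> set_pmf (Lam qv)" "X = phi ` U" by (auto simp: I_def)
    have wf: "WF X" using WF_phi valid_sup[OF U(1)] U(2) by blast
    show "instance_over (Ep ` S) X"
      unfolding instance_over_def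
    proof (intro conjI ballI)
      show "finite X" using valid_sup[OF U(1)] U(2) by simp
      fix f assume "f \<in> X"
      then obtain R vs where "f = (Ep R, vs)" "R \<in> S" "length vs = 3 + arity R" using WF_E[OF wf] by metis
      then show "case f of (R', as) \<Rightarrow> R' \<in> Ep ` S \<and> length as = arity R'" by (simp add: arity_Ep)
    qed
  qed
  have inFO: "in_FO_TI S P1" unfolding in_FO_TI_def using pdbI tiI fo_view_Phi1 P1I by blast
  have worlds: "set_pmf P1 = DD"
  proof
    show "set_pmf P1 \<subseteq> DD"
    proof
      fix D assume "D \<in> set_pmf P1"
      then obtain U where "D = Out U" by (auto simp: P1_def)
      then show "D \<in> DD" using wd_DD D0_DD by (auto simp: Out_def intro: someI2_ex)
    qed
    show "DD \<subseteq> set_pmf P1"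
    proof
      fix D assume D: "D \<in> DD"
      show "D \<in> set_pmf P1"
      proof (cases "D = D0")
        case True
        have "{} \<in> set_pmf (Lam qv)" using Lam_pos[of "{}"] by (simp add: set_pmf_iff)
        moreover have "Out {} = D0" using block_ne by (intro Out_not) auto
        ultimately show ?thesis using True by (auto simp: P1_def)
      next
        case False
        then have "D \<in> W" using D by (simp add: W_def)
        then obtain i where i: "i \<in> II" "wd i = D" using wd_surj by blast
        have fin: "finite (block i)" by (simp add: block_def)
        have "0 < pmf (Lam qv) (block i)"
          by (rule Lam_pos[OF fin]) (use block_valid[OF i(1)] qv_pos in auto)
        then have "block i \<in> set_pmf (Lam qv)" by (simp add: set_pmf_iff)
        then show ?thesis using Out_block[OF i(1)] i(2) by (auto simp: P1_def)
      qed
    qed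
  qed
  have pdb: "pdb S P1" using worlds S DDinst by (simp add: pdb_def)
  show ?thesis using pdb worlds inFO by (auto simp: worlds_def)
qed

end

primrec layers :: "nat \<Rightarrow> nat set pmf \<Rightarrow> (nat \<times> nat) set pmf" where
  "layers 0 \<Lambda> = return_pmf {}"
| "layers (Suc k) \<Lambda> = upair (map_pmf ((`) (Pair k)) \<Lambda>) (layers k \<Lambda>)"

definition slice :: "nat \<Rightarrow> (nat \<times> nat) set \<Rightarrow> nat set" where "slice k U = {n. (k, n) \<in> U}"
definition issing :: "nat set \<Rightarrow> bool" where "issing X \<longleftrightarrow> (\<exists>n. X = {n})"

lemma layers_sup:
  "Y \<in> set_pmf (layers k \<Lambda>) \<Longrightarrow> Y \<subseteq> {..<k} \<times> UNIV \<and> (\<forall>j<k. slice j Y \<in> set_pmf \<Lambda>)"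
proof (induction k arbitrary: Y)
  case 0 then show ?case by simp
next
  case (Suc k)
  from Suc.prems obtain X Y' where XY: "Y = X \<union> Y'" "X \<in> set_pmf (map_pmf ((`) (Pair k)) \<Lambda>)"
    "Y' \<in> set_pmf (layers k \<Lambda>)" by (auto simp: set_pmf_upair)
  obtain L where L: "L \<in> set_pmf \<Lambda>" "X = Pair k ` L" using XY(2) by auto
  have IH: "Y' \<subseteq> {..<k} \<times> UNIV" "\<forall>j<k. slice j Y' \<in> set_pmf \<Lambda>" using Suc.IH[OF XY(3)] by auto
  have "Y \<subseteq> {..<Suc k} \<times> UNIV" using XY(1) L(2) IH(1) by auto
  moreover have "slice j Y \<in> set_pmf \<Lambda>" if "j < Suc k" for j
  proof (cases "j = k")
    case True
    have "slice j Y = L" using True XY(1) L(2) IH(1) by (auto simp: slice_def)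
    then show ?thesis using L(1) by simp
  next
    case False
    then have "j < k" using that by simp
    have "slice j Y = slice j Y'" using False XY(1) L(2) by (auto simp: slice_def)
    then show ?thesis using IH(2) \<open>j < k\<close> by simp
  qed
  ultimately show ?case by blast
qed

lemma layers_ti: "ti \<Lambda> \<Longrightarrow> ti (layers k \<Lambda>)"
proof (induction k)
  case 0 then show ?case by (auto intro: ti_small)
next
  case (Suc k)
  have t1: "ti (map_pmf ((`) (Pair k)) \<Lambda>)"
    by (rule ti_map_inj[OF Suc.prems, of UNIV]) (auto simp: inj_on_def)
  show ?case unfolding layers.simps
  proof (rule ti_upair[OF t1 Suc.IH[OF Suc.prems]])
    show "\<And>X. X \<in> set_pmf (map_pmf ((`) (Pair k)) \<Lambda>) \<Longrightarrow> X \<subseteq> {k} \<times> UNIV" by auto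
    show "\<And>Y. Y \<in> set_pmf (layers k \<Lambda>) \<Longrightarrow> Y \<subseteq> {..<k} \<times> UNIV" using layers_sup by blast
  qed auto
qed

locale b1setup =
  fixes S :: "rel set" and DD :: "'u inst set" and \<nu> :: "nat \<Rightarrow> 'u" and P :: "'u inst pmf" and c :: nat
  assumes S: "schema S" and DDinst: "\<And>D. D \<in> DD \<Longrightarrow> instance_over S D"
    and cnt: "countable DD" and inj_nu: "inj \<nu>" and PDD: "set_pmf P = DD"
    and bnd: "\<And>D. D \<in> DD \<Longrightarrow> card D \<le> c"
begin

definition D0 :: "'u inst" where "D0 = (SOME D. D \<in> DD)"
definition W :: "'u inst set" where "W = DD - {D0}"
definition II :: "nat set" where "II = to_nat_on W ` W"
definition wd :: "nat \<Rightarrow> 'u inst" where "wd i = from_nat_into W i"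
definition Amax :: nat where "Amax = Max (arity ` S)"
definition B :: nat where "B = Suc Amax"
definition L :: nat where "L = c * B"
definition e0 :: 'u where "e0 = \<nu> 0"
definition eR :: "rel \<Rightarrow> 'u" where "eR R = \<nu> (Suc (prod_encode R))"
definition encf :: "'u inst \<Rightarrow> nat \<Rightarrow> nat \<Rightarrow> 'u" where
  "encf D j i = (if j < length (lst D) then (if i = 0 then eR (fst (lst D ! j))
      else if i - 1 < length (snd (lst D ! j)) then snd (lst D ! j) ! (i - 1) else e0) else e0)"
definition enc :: "'u inst \<Rightarrow> 'u list" where "enc D = map (\<lambda>p. encf D (p div B) (p mod B)) [0..<L]"
definition qb :: "nat \<Rightarrow> real" where "qb n = (if n \<in> II then pmf P (wd n) else 0)"

lemma DDne: "DD \<noteq> {}" using PDD set_pmf_not_empty by blast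
lemma D0_DD: "D0 \<in> DD" using DDne by (auto simp: D0_def intro: someI_ex)
lemma D0_inst: "instance_over S D0" using D0_DD DDinst by blast
lemma cntW: "countable W" using cnt by (simp add: W_def)
lemma wd_W: "i \<in> II \<Longrightarrow> wd i \<in> W"
  unfolding II_def wd_def using from_nat_into_to_nat_on[OF cntW] by auto
lemma wd_DD: "i \<in> II \<Longrightarrow> wd i \<in> DD" using wd_W by (auto simp: W_def)
lemma wd_ne: "i \<in> II \<Longrightarrow> wd i \<noteq> D0" using wd_W by (auto simp: W_def)
lemma wd_surj: "D \<in> W \<Longrightarrow> to_nat_on W D \<in> II \<and> wd (to_nat_on W D) = D"
  unfolding II_def wd_def using from_nat_into_to_nat_on[OF cntW] by auto
lemma wd_inj: "i \<in> II \<Longrightarrow> i' \<in> II \<Longrightarrow> wd i = wd i' \<Longrightarrow> i = i'"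
  unfolding II_def wd_def using from_nat_into_to_nat_on[OF cntW] by auto

lemma finS: "finite S" and neS: "S \<noteq> {}" using S by (auto simp: schema_def)
lemma ar_le: "R \<in> S \<Longrightarrow> arity R \<le> Amax"
  unfolding Amax_def using finS by simp

lemma length_enc[simp]: "length (enc D) = L" by (simp add: enc_def)

lemma enc_nth: "j < c \<Longrightarrow> i < B \<Longrightarrow> enc D ! (j * B + i) = encf D j i"
proof -
  assume j: "j < c" and i: "i < B"
  have lt: "j * B + i < L"
  proof -
    have "j * B + i < j * B + B" using i by simp
    also have "\<dots> = Suc j * B" by simp
    also have "\<dots> \<le> c * B" using j by (intro mult_right_mono) auto
    finally show ?thesis by (simp add: L_def)
  qed
  have B0: "0 < B" by (simp add: B_def)
  have "(j * B + i) div B = j" using i B0 by simp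
  moreover have "(j * B + i) mod B = i" using i by simp
  ultimately show ?thesis using lt by (simp add: enc_def)
qed

lemma eR_inj: "eR R = eR R' \<Longrightarrow> R = R'"
  using inj_nu by (auto simp: eR_def dest: injD)
lemma eR_e0: "eR R \<noteq> e0"
  using inj_nu by (auto simp: eR_def e0_def dest: injD)

lemma decode:
  assumes D: "D \<in> DD" and R: "R \<in> S" and len: "length as = arity R"
  shows "(\<exists>j<c. enc D ! (j * B) = eR R \<and> (\<forall>a<arity R. as ! a = enc D ! (j * B + Suc a))) \<longleftrightarrow> (R, as) \<in> D"
proof -
  have fin: "finite D" using DDinst[OF D] by (simp add: instance_over_def)
  have xs: "set (lst D) = D" "length (lst D) = card D" using lst[OF fin] length_lst[OF fin] by auto
  have lc: "length (lst D) \<le> c" using xs bnd[OF D] by simp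
  have aB: "a < arity R \<Longrightarrow> Suc a < B" for a using ar_le[OF R] by (simp add: B_def)
  have B0: "0 < B" by (simp add: B_def)
  show ?thesis
  proof
    assume "\<exists>j<c. enc D ! (j * B) = eR R \<and> (\<forall>a<arity R. as ! a = enc D ! (j * B + Suc a))"
    then obtain j where j: "j < c" "enc D ! (j * B) = eR R" "\<forall>a<arity R. as ! a = enc D ! (j * B + Suc a)" by blast
    have e: "encf D j 0 = eR R" using j(2) enc_nth[OF j(1) B0] by simp
    have jl: "j < length (lst D)"
    proof (rule ccontr)
      assume "\<not> j < length (lst D)"
      then have "encf D j 0 = e0" by (simp add: encf_def)
      then show False using e eR_e0 by simp
    qed
    obtain R' as' where f: "lst D ! j = (R', as')" by (cases "lst D ! j")
    have fD: "(R', as') \<in> D" using f jl xs(1) by (metis nth_mem)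
    have "eR R' = eR R" using e jl f by (simp add: encf_def)
    then have RR: "R' = R" by (rule eR_inj)
    have len': "length as' = arity R" using DDinst[OF D] fD RR by (auto simp: instance_over_def)
    have "as = as'"
    proof (rule nth_equalityI)
      show "length as = length as'" using len len' by simp
      fix a assume "a < length as"
      then have a: "a < arity R" using len by simp
      have "as ! a = encf D j (Suc a)" using j(3) a enc_nth[OF j(1) aB[OF a]] by simp
      also have "\<dots> = as' ! a" using jl f a len' by (simp add: encf_def)
      finally show "as ! a = as' ! a" .
    qed
    then show "(R, as) \<in> D" using fD RR by simp
  next
    assume "(R, as) \<in> D"
    then obtain j where j: "j < length (lst D)" "lst D ! j = (R, as)" using xs(1) by (metis in_set_conv_nth)
    have jc: "j < c" using j(1) lc by simp
    have "enc D ! (j * B) = eR R" using enc_nth[OF jc B0] j by (simp add: encf_def)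
    moreover have "\<forall>a<arity R. as ! a = enc D ! (j * B + Suc a)"
    proof (intro allI impI)
      fix a assume a: "a < arity R"
      show "as ! a = enc D ! (j * B + Suc a)" using enc_nth[OF jc aB[OF a]] j a len by (simp add: encf_def)
    qed
    ultimately show "\<exists>j<c. enc D ! (j * B) = eR R \<and> (\<forall>a<arity R. as ! a = enc D ! (j * B + Suc a))" using jc by blast
  qed
qed

lemma enc_inj:
  assumes D: "D \<in> DD" and D': "D' \<in> DD" and eq: "enc D = enc D'"
  shows "D = D'"
proof -
  have "f \<in> D \<longleftrightarrow> f \<in> D'" if "f \<in> D \<union> D'" for f
  proof -
    obtain R as where f: "f = (R, as)" by (cases f)
    have "R \<in> S \<and> length as = arity R"
      using that DDinst[OF D] DDinst[OF D'] f by (auto simp: instance_over_def)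
    then show ?thesis using decode[OF D, of R as] decode[OF D', of R as] eq f by simp
  qed
  then show ?thesis by blast
qed

lemma qb_nonneg: "0 \<le> qb n" by (simp add: qb_def)

lemma qb_pos: "0 < qb n \<longleftrightarrow> n \<in> II"
  using wd_DD PDD by (auto simp: qb_def pmf_positive)

lemma prob_W: "measure_pmf.prob P W = 1 - pmf P D0"
proof -
  have "measure_pmf.prob P W = measure_pmf.prob P (space (measure_pmf P) - {D0})"
    by (rule prob_cong_support) (auto simp: W_def PDD)
  also have "\<dots> = 1 - pmf P D0" using measure_pmf.prob_compl[of "{D0}" P] by (simp add: measure_pmf_single)
  finally show ?thesis .
qed

lemma qb_partial: "finite F \<Longrightarrow> sum qb F \<le> 1 - pmf P D0"
proof -
  assume fin: "finite F"
  have "sum qb F = sum qb (F \<inter> II)"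
    by (rule sum.mono_neutral_right) (use fin in \<open>auto simp: qb_def\<close>)
  also have "\<dots> = (\<Sum>n\<in>F \<inter> II. pmf P (wd n))" by (simp add: qb_def)
  also have "\<dots> = sum (pmf P) (wd ` (F \<inter> II))"
  proof -
    have inj: "inj_on wd (F \<inter> II)" by (rule inj_onI) (auto dest: wd_inj)
    show ?thesis by (simp add: sum.reindex[OF inj] comp_def)
  qed
  also have "\<dots> = measure_pmf.prob P (wd ` (F \<inter> II))" using fin by (simp add: measure_measure_pmf_finite)
  also have "\<dots> \<le> measure_pmf.prob P W" by (rule measure_pmf.finite_measure_mono) (auto intro: wd_W)
  finally show ?thesis using prob_W by simp
qed

lemma qb_summable: "summable qb"
  by (rule summableI_nonneg_bounded[OF qb_nonneg]) (rule qb_partial, simp)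

sublocale qseq qb by standard (auto simp: qb_nonneg qb_summable)

definition s :: real where "s = suminf qb"

lemma s_le: "s \<le> 1 - pmf P D0"
  unfolding s_def by (rule suminf_le_const[OF qb_summable]) (rule qb_partial, simp)

lemma s_nonneg: "0 \<le> s" unfolding s_def by (rule suminf_nonneg[OF qb_summable qb_nonneg])

lemma s_lt1: "s < 1"
proof -
  have "0 < pmf P D0" using D0_DD PDD by (simp add: pmf_positive)
  then show ?thesis using s_le by linarith
qed

end

lemma upd_at: "v \<le> x \<Longrightarrow> x < v + length vs \<Longrightarrow> upd \<sigma> v vs x = vs ! (x - v)"
  by (simp add: upd_def)

lemma eval_vars_under':
  "length vs = n \<Longrightarrow> v + n \<le> w \<Longrightarrow> map (eval_trm (upd (upd \<sigma> v vs) w ws)) (vars v n) = vs"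
  by (auto simp: vars_def upd_def intro!: nth_equalityI)

definition Wrel :: "nat \<Rightarrow> nat \<Rightarrow> rel" where "Wrel L k = (Suc k, L)"
definition swrel :: rel where "swrel = (0, 0)"

lemma Wrel_inj: "Wrel L k = Wrel L k' \<Longrightarrow> k = k'" by (simp add: Wrel_def)
lemma Wrel_sw: "Wrel L k \<noteq> swrel" by (simp add: Wrel_def swrel_def)
lemma sw_Wrel: "swrel \<noteq> Wrel L k" by (simp add: Wrel_def swrel_def)

context b1setup
begin

definition V2 :: nat where "V2 = Amax + L"
definition AtomW :: "nat \<Rightarrow> nat \<Rightarrow> 'u fo" where "AtomW k v = Atom (Wrel L k) (vars v L)"
definition eqs :: "nat \<Rightarrow> nat \<Rightarrow> nat \<Rightarrow> 'u fo" where
  "eqs v w n = bigconj (map (\<lambda>i. FEq (Var (v + i)) (Var (w + i))) [0..<n])"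
definition Single :: "nat \<Rightarrow> 'u fo" where
  "Single k = exN Amax L (Conj (AtomW k Amax) (allN V2 L (Impl (AtomW k V2) (eqs V2 Amax L))))"
definition DisjB :: "rel \<Rightarrow> 'u fo" where
  "DisjB R = bigdisj (map (\<lambda>j. Conj (FEq (Var (Amax + j * B)) (Const (eR R)))
      (bigconj (map (\<lambda>a. FEq (Var a) (Var (Amax + j * B + Suc a))) [0..<arity R]))) [0..<c])"
definition DecB :: "nat \<Rightarrow> rel \<Rightarrow> 'u fo" where
  "DecB k R = exN Amax L (Conj (AtomW k Amax) (DisjB R))"
primrec OutF :: "nat \<Rightarrow> rel \<Rightarrow> 'u fo" where
  "OutF 0 R = InD D0 R"
| "OutF (Suc k) R = Disj (Conj (Single k) (DecB k R)) (Conj (Neg (Single k)) (OutF k R))"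
definition Sw :: "'u fo" where "Sw = Atom swrel []"
definition PhiB :: "nat \<Rightarrow> rel \<Rightarrow> 'u fo" where
  "PhiB m R = Disj (Conj Sw (InD D0 R)) (Conj (Neg Sw) (OutF m R))"

primrec sel :: "nat \<Rightarrow> (nat \<times> nat) set \<Rightarrow> 'u inst" where
  "sel 0 U = D0"
| "sel (Suc k) U = (if issing (slice k U) then wd (the_elem (slice k U)) else sel k U)"

definition OutB :: "nat \<Rightarrow> (nat \<times> nat) set \<Rightarrow> 'u inst" where
  "OutB m U = (if (m, 0) \<in> U then D0 else sel m U)"

definition phib :: "nat \<Rightarrow> nat \<times> nat \<Rightarrow> 'u fact" where
  "phib m kn = (if fst kn < m then (Wrel L (fst kn), enc (wd (snd kn))) else (swrel, []))"

definition goodU :: "nat \<Rightarrow> (nat \<times> nat) set \<Rightarrow> bool" where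
  "goodU m U \<longleftrightarrow> finite U \<and> U \<subseteq> ({..<m} \<times> II) \<union> {(m, 0)}"

lemma sat_Single:
  assumes A: "adom X \<subseteq> A" and lenX: "\<And>ws. (Wrel L k, ws) \<in> X \<Longrightarrow> length ws = L"
  shows "sat X A \<sigma> (Single k) \<longleftrightarrow> (\<exists>vs. {ws. (Wrel L k, ws) \<in> X} = {vs})"
proof -
  have le: "Amax + L \<le> V2" by (simp add: V2_def)
  have ev_eqs: "sat X A (upd (upd \<sigma> Amax vs) V2 ws) (eqs V2 Amax L) \<longleftrightarrow> ws = vs"
    if "length vs = L" "length ws = L" for vs ws
  proof -
    have "sat X A (upd (upd \<sigma> Amax vs) V2 ws) (eqs V2 Amax L) \<longleftrightarrow> (\<forall>i<L. ws ! i = vs ! i)"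
    proof -
      have a: "upd (upd \<sigma> Amax vs) V2 ws (V2 + i) = ws ! i" if "i < L" for i
        using upd_in[of i ws _ V2] that \<open>length ws = L\<close> by simp
      have b: "upd (upd \<sigma> Amax vs) V2 ws (Amax + i) = vs ! i" if "i < L" for i
      proof -
        have "upd (upd \<sigma> Amax vs) V2 ws (Amax + i) = upd \<sigma> Amax vs (Amax + i)"
          using that by (intro upd_low) (simp add: V2_def)
        also have "\<dots> = vs ! i" using that \<open>length vs = L\<close> by (intro upd_in) simp
        finally show ?thesis .
      qed
      show ?thesis unfolding eqs_def sat_bigconj using a b by auto
    qed
    also have "\<dots> \<longleftrightarrow> ws = vs" using that by (auto intro: nth_equalityI)
    finally show ?thesis .
  qed
  have "sat X A \<sigma> (Single k) \<longleftrightarrow> (\<exists>vs. length vs = L \<and> set vs \<subseteq> A \<and> (Wrel L k, vs) \<in> X \<and>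
        (\<forall>ws. length ws = L \<longrightarrow> set ws \<subseteq> A \<longrightarrow> (Wrel L k, ws) \<in> X \<longrightarrow> ws = vs))"
    unfolding Single_def AtomW_def sat_exN sat_allN sat.simps
    by (simp add: eval_vars eval_vars_under'[OF _ le] ev_eqs cong: conj_cong imp_cong)
  also have "\<dots> \<longleftrightarrow> (\<exists>vs. {ws. (Wrel L k, ws) \<in> X} = {vs})"
  proof
    assume "\<exists>vs. length vs = L \<and> set vs \<subseteq> A \<and> (Wrel L k, vs) \<in> X \<and>
        (\<forall>ws. length ws = L \<longrightarrow> set ws \<subseteq> A \<longrightarrow> (Wrel L k, ws) \<in> X \<longrightarrow> ws = vs)"
    then obtain vs where vs: "(Wrel L k, vs) \<in> X"
      "\<forall>ws. length ws = L \<longrightarrow> set ws \<subseteq> A \<longrightarrow> (Wrel L k, ws) \<in> X \<longrightarrow> ws = vs" by blast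
    have "{ws. (Wrel L k, ws) \<in> X} = {vs}"
    proof (intro set_eqI iffI)
      fix ws assume "ws \<in> {ws. (Wrel L k, ws) \<in> X}"
      then have m: "(Wrel L k, ws) \<in> X" by simp
      have "set ws \<subseteq> A" using fact_adom[OF m] A by simp
      then show "ws \<in> {vs}" using vs(2) lenX[OF m] m by simp
    qed (use vs(1) in simp)
    then show "\<exists>vs. {ws. (Wrel L k, ws) \<in> X} = {vs}" by blast
  next
    assume "\<exists>vs. {ws. (Wrel L k, ws) \<in> X} = {vs}"
    then obtain vs where vs: "{ws. (Wrel L k, ws) \<in> X} = {vs}" by blast
    then have m: "(Wrel L k, vs) \<in> X" by auto
    have "length vs = L" by (rule lenX[OF m])
    moreover have "set vs \<subseteq> A" using fact_adom[OF m] A by simp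
    moreover have "\<forall>ws. length ws = L \<longrightarrow> set ws \<subseteq> A \<longrightarrow> (Wrel L k, ws) \<in> X \<longrightarrow> ws = vs"
      using vs by auto
    ultimately show "\<exists>vs. length vs = L \<and> set vs \<subseteq> A \<and> (Wrel L k, vs) \<in> X \<and>
        (\<forall>ws. length ws = L \<longrightarrow> set ws \<subseteq> A \<longrightarrow> (Wrel L k, ws) \<in> X \<longrightarrow> ws = vs)" using m by blast
  qed
  finally show ?thesis .
qed

lemma jB_lt: "j < c \<Longrightarrow> i < B \<Longrightarrow> j * B + i < L"
proof -
  assume j: "j < c" and i: "i < B"
  have "j * B + i < j * B + B" using i by simp
  also have "\<dots> = Suc j * B" by simp
  also have "\<dots> \<le> c * B" using j by (intro mult_right_mono) auto
  finally show ?thesis by (simp add: L_def)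
qed

lemma sat_DecB:
  assumes A: "adom X \<subseteq> A" and R: "R \<in> S" and len: "length as = arity R"
    and lenX: "\<And>ws. (Wrel L k, ws) \<in> X \<Longrightarrow> length ws = L"
  shows "sat X A (\<lambda>i. as ! i) (DecB k R) \<longleftrightarrow>
    (\<exists>vs. (Wrel L k, vs) \<in> X \<and> (\<exists>j<c. vs ! (j * B) = eR R \<and> (\<forall>a<arity R. as ! a = vs ! (j * B + Suc a))))"
proof -
  have aB: "a < arity R \<Longrightarrow> Suc a < B" for a using ar_le[OF R] by (simp add: B_def)
  have inner: "sat X A (upd (\<lambda>i. as ! i) Amax vs) (DisjB R) \<longleftrightarrow>
      (\<exists>j<c. vs ! (j * B) = eR R \<and> (\<forall>a<arity R. as ! a = vs ! (j * B + Suc a)))"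
    if lv: "length vs = L" for vs
  proof -
    have e1: "upd (\<lambda>i. as ! i) Amax vs (Amax + j * B) = vs ! (j * B)" if "j < c" for j
      using upd_in[of "j * B" vs _ Amax] jB_lt[OF that, of 0] lv by (simp add: B_def)
    have e2: "upd (\<lambda>i. as ! i) Amax vs a = as ! a" if "a < arity R" for a
      using that ar_le[OF R] by (intro upd_low) simp
    have e3: "upd (\<lambda>i. as ! i) Amax vs (Amax + j * B + Suc a) = vs ! (j * B + Suc a)" if "j < c" "a < arity R" for j a
      using upd_at[of Amax "Amax + j * B + Suc a" vs] jB_lt[OF that(1) aB[OF that(2)]] lv by simp
    have fj: "sat X A (upd (\<lambda>i. as ! i) Amax vs) (Conj (FEq (Var (Amax + j * B)) (Const (eR R)))
      (bigconj (map (\<lambda>a. FEq (Var a) (Var (Amax + j * B + Suc a))) [0..<arity R]))) \<longleftrightarrow>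
      vs ! (j * B) = eR R \<and> (\<forall>a<arity R. as ! a = vs ! (j * B + Suc a))" if j: "j < c" for j
    proof -
      have "sat X A (upd (\<lambda>i. as ! i) Amax vs) (Conj (FEq (Var (Amax + j * B)) (Const (eR R)))
        (bigconj (map (\<lambda>a. FEq (Var a) (Var (Amax + j * B + Suc a))) [0..<arity R]))) \<longleftrightarrow>
        upd (\<lambda>i. as ! i) Amax vs (Amax + j * B) = eR R \<and>
        (\<forall>a\<in>{0..<arity R}. upd (\<lambda>i. as ! i) Amax vs a = upd (\<lambda>i. as ! i) Amax vs (Amax + j * B + Suc a))"
        by (simp add: sat_bigconj)
      also have "\<dots> \<longleftrightarrow> vs ! (j * B) = eR R \<and> (\<forall>a\<in>{0..<arity R}. as ! a = vs ! (j * B + Suc a))"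
      proof (intro conj_cong ball_cong refl)
        show "(upd (\<lambda>i. as ! i) Amax vs (Amax + j * B) = eR R) = (vs ! (j * B) = eR R)" using e1[OF j] by simp
        fix a assume "a \<in> {0..<arity R}"
        then have "a < arity R" by simp
        then show "(upd (\<lambda>i. as ! i) Amax vs a = upd (\<lambda>i. as ! i) Amax vs (Amax + j * B + Suc a)) =
          (as ! a = vs ! (j * B + Suc a))" using e2 e3[OF j] by simp
      qed
      finally show ?thesis by (auto simp: atLeast0LessThan)
    qed
    have "sat X A (upd (\<lambda>i. as ! i) Amax vs) (bigdisj (map (\<lambda>j. Conj (FEq (Var (Amax + j * B)) (Const (eR R)))
      (bigconj (map (\<lambda>a. FEq (Var a) (Var (Amax + j * B + Suc a))) [0..<arity R]))) [0..<c])) \<longleftrightarrow>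
      (\<exists>j\<in>{0..<c}. sat X A (upd (\<lambda>i. as ! i) Amax vs) (Conj (FEq (Var (Amax + j * B)) (Const (eR R)))
      (bigconj (map (\<lambda>a. FEq (Var a) (Var (Amax + j * B + Suc a))) [0..<arity R]))))"
      by (simp add: sat_bigdisj del: sat.simps)
    also have "\<dots> \<longleftrightarrow> (\<exists>j\<in>{0..<c}. vs ! (j * B) = eR R \<and> (\<forall>a<arity R. as ! a = vs ! (j * B + Suc a)))"
    proof (rule bex_cong[OF refl])
      fix j assume "j \<in> {0..<c}"
      then have "j < c" by simp
      then show "sat X A (upd (\<lambda>i. as ! i) Amax vs) (Conj (FEq (Var (Amax + j * B)) (Const (eR R)))
      (bigconj (map (\<lambda>a. FEq (Var a) (Var (Amax + j * B + Suc a))) [0..<arity R]))) \<longleftrightarrow>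
      vs ! (j * B) = eR R \<and> (\<forall>a<arity R. as ! a = vs ! (j * B + Suc a))" by (rule fj)
    qed
    finally show ?thesis unfolding DisjB_def by (auto simp: atLeast0LessThan)
  qed
  have pt: "sat X A (upd (\<lambda>i. as ! i) Amax vs) (Conj (AtomW k Amax) (DisjB R)) \<longleftrightarrow>
      (Wrel L k, vs) \<in> X \<and> (\<exists>j<c. vs ! (j * B) = eR R \<and> (\<forall>a<arity R. as ! a = vs ! (j * B + Suc a)))"
    if lv: "length vs = L" for vs
  proof -
    have "map (eval_trm (upd (\<lambda>i. as ! i) Amax vs)) (vars Amax L) = vs" by (rule eval_vars[OF lv])
    then show ?thesis unfolding sat.simps AtomW_def inner[OF lv] by simp
  qed
  have "sat X A (\<lambda>i. as ! i) (DecB k R) \<longleftrightarrow> (\<exists>vs. length vs = L \<and> set vs \<subseteq> A \<and> (Wrel L k, vs) \<in> X \<and>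
      (\<exists>j<c. vs ! (j * B) = eR R \<and> (\<forall>a<arity R. as ! a = vs ! (j * B + Suc a))))"
  proof -
    have "sat X A (\<lambda>i. as ! i) (DecB k R) \<longleftrightarrow> (\<exists>vs. length vs = L \<and> set vs \<subseteq> A \<and>
        sat X A (upd (\<lambda>i. as ! i) Amax vs) (Conj (AtomW k Amax) (DisjB R)))"
      unfolding DecB_def sat_exN ..
    also have "\<dots> \<longleftrightarrow> (\<exists>vs. length vs = L \<and> set vs \<subseteq> A \<and> (Wrel L k, vs) \<in> X \<and>
      (\<exists>j<c. vs ! (j * B) = eR R \<and> (\<forall>a<arity R. as ! a = vs ! (j * B + Suc a))))"
    proof
      assume "\<exists>vs. length vs = L \<and> set vs \<subseteq> A \<and> sat X A (upd (\<lambda>i. as ! i) Amax vs) (Conj (AtomW k Amax) (DisjB R))"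
      then obtain vs where "length vs = L" "set vs \<subseteq> A" "sat X A (upd (\<lambda>i. as ! i) Amax vs) (Conj (AtomW k Amax) (DisjB R))" by blast
      then show "\<exists>vs. length vs = L \<and> set vs \<subseteq> A \<and> (Wrel L k, vs) \<in> X \<and>
      (\<exists>j<c. vs ! (j * B) = eR R \<and> (\<forall>a<arity R. as ! a = vs ! (j * B + Suc a)))" using pt by blast
    next
      assume "\<exists>vs. length vs = L \<and> set vs \<subseteq> A \<and> (Wrel L k, vs) \<in> X \<and>
      (\<exists>j<c. vs ! (j * B) = eR R \<and> (\<forall>a<arity R. as ! a = vs ! (j * B + Suc a)))"
      then obtain vs where vs: "length vs = L" "set vs \<subseteq> A" "(Wrel L k, vs) \<in> X"
        "\<exists>j<c. vs ! (j * B) = eR R \<and> (\<forall>a<arity R. as ! a = vs ! (j * B + Suc a))" by blast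
      then have "sat X A (upd (\<lambda>i. as ! i) Amax vs) (Conj (AtomW k Amax) (DisjB R))" using pt[OF vs(1)] by blast
      then show "\<exists>vs. length vs = L \<and> set vs \<subseteq> A \<and> sat X A (upd (\<lambda>i. as ! i) Amax vs) (Conj (AtomW k Amax) (DisjB R))"
        using vs by blast
    qed
    finally show ?thesis .
  qed
  also have "\<dots> \<longleftrightarrow> (\<exists>vs. (Wrel L k, vs) \<in> X \<and> (\<exists>j<c. vs ! (j * B) = eR R \<and> (\<forall>a<arity R. as ! a = vs ! (j * B + Suc a))))"
  proof
    assume "\<exists>vs. (Wrel L k, vs) \<in> X \<and> (\<exists>j<c. vs ! (j * B) = eR R \<and> (\<forall>a<arity R. as ! a = vs ! (j * B + Suc a)))"
    then obtain vs where vs: "(Wrel L k, vs) \<in> X" "\<exists>j<c. vs ! (j * B) = eR R \<and> (\<forall>a<arity R. as ! a = vs ! (j * B + Suc a))"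
      by blast
    have "length vs = L" by (rule lenX[OF vs(1)])
    moreover have "set vs \<subseteq> A" using fact_adom[OF vs(1)] A by simp
    ultimately show "\<exists>vs. length vs = L \<and> set vs \<subseteq> A \<and> (Wrel L k, vs) \<in> X \<and>
      (\<exists>j<c. vs ! (j * B) = eR R \<and> (\<forall>a<arity R. as ! a = vs ! (j * B + Suc a)))" using vs by blast
  qed blast
  finally show ?thesis .
qed

lemma phib_W: "goodU m U \<Longrightarrow> (Wrel L k, ws) \<in> phib m ` U \<longleftrightarrow> k < m \<and> (\<exists>n\<in>slice k U. ws = enc (wd n))"
proof
  assume g: "goodU m U" and "(Wrel L k, ws) \<in> phib m ` U"
  then obtain k' n where kn: "(k', n) \<in> U" "(Wrel L k, ws) = phib m (k', n)" by auto
  show "k < m \<and> (\<exists>n\<in>slice k U. ws = enc (wd n))"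
  proof (cases "k' < m")
    case True
    then have "(Wrel L k, ws) = (Wrel L k', enc (wd n))" using kn(2) by (simp add: phib_def)
    then have "k = k'" "ws = enc (wd n)" using Wrel_inj by auto
    then show ?thesis using True kn(1) by (auto simp: slice_def)
  next
    case False
    then have "(Wrel L k, ws) = (swrel, [])" using kn(2) by (simp add: phib_def)
    then show ?thesis using Wrel_sw by simp
  qed
next
  assume "k < m \<and> (\<exists>n\<in>slice k U. ws = enc (wd n))"
  then obtain n where n: "k < m" "(k, n) \<in> U" "ws = enc (wd n)" by (auto simp: slice_def)
  then have "phib m (k, n) = (Wrel L k, ws)" by (simp add: phib_def)
  then show "(Wrel L k, ws) \<in> phib m ` U" using n(2) by (metis image_eqI)
qed

lemma phib_len: "goodU m U \<Longrightarrow> (Wrel L k, ws) \<in> phib m ` U \<Longrightarrow> length ws = L"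
  using phib_W by auto

lemma phib_sw: "goodU m U \<Longrightarrow> (swrel, []) \<in> phib m ` U \<longleftrightarrow> (m, 0) \<in> U"
proof
  assume g: "goodU m U" and "(swrel, []) \<in> phib m ` U"
  then obtain k n where kn: "(k, n) \<in> U" "(swrel, []) = phib m (k, n)" by auto
  have "\<not> k < m" using kn(2) sw_Wrel by (auto simp: phib_def)
  then have "(k, n) = (m, 0)" using kn(1) g by (auto simp: goodU_def)
  then show "(m, 0) \<in> U" using kn(1) by simp
next
  assume "(m, 0) \<in> U"
  moreover have "phib m (m, 0) = (swrel, [])" by (simp add: phib_def)
  ultimately show "(swrel, []) \<in> phib m ` U" by (metis image_eqI)
qed

lemma slice_II: "goodU m U \<Longrightarrow> k < m \<Longrightarrow> slice k U \<subseteq> II"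
  by (auto simp: goodU_def slice_def)

lemma encw_inj: "inj_on (\<lambda>n. enc (wd n)) II"
proof (rule inj_onI)
  fix n n' assume n: "n \<in> II" and n': "n' \<in> II" and e: "enc (wd n) = enc (wd n')"
  have "wd n = wd n'" by (rule enc_inj[OF wd_DD[OF n] wd_DD[OF n'] e])
  then show "n = n'" by (rule wd_inj[OF n n'])
qed

lemma Single_slice:
  assumes g: "goodU m U" and k: "k < m" and A: "adom (phib m ` U) \<subseteq> A"
  shows "sat (phib m ` U) A \<sigma> (Single k) \<longleftrightarrow> issing (slice k U)"
proof -
  have eq: "{ws. (Wrel L k, ws) \<in> phib m ` U} = (\<lambda>n. enc (wd n)) ` slice k U"
    using phib_W[OF g] k by auto
  have inj: "inj_on (\<lambda>n. enc (wd n)) (slice k U)" using inj_on_subset[OF encw_inj slice_II[OF g k]] .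
  have "(\<exists>vs. (\<lambda>n. enc (wd n)) ` slice k U = {vs}) \<longleftrightarrow> issing (slice k U)"
  proof
    assume "\<exists>vs. (\<lambda>n. enc (wd n)) ` slice k U = {vs}"
    then obtain vs where vs: "(\<lambda>n. enc (wd n)) ` slice k U = {vs}" by blast
    then obtain n where n: "n \<in> slice k U" by auto
    have "slice k U = {n}"
    proof
      show "slice k U \<subseteq> {n}"
      proof
        fix n' assume n': "n' \<in> slice k U"
        have "enc (wd n') \<in> {vs}" using vs n' by (metis image_eqI)
        moreover have "enc (wd n) \<in> {vs}" using vs n by (metis image_eqI)
        ultimately have "enc (wd n') = enc (wd n)" by simp
        then show "n' \<in> {n}" using inj n n' by (auto dest: inj_onD)
      qed
    qed (use n in simp)
    then show "issing (slice k U)" by (auto simp: issing_def)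
  next
    assume "issing (slice k U)"
    then show "\<exists>vs. (\<lambda>n. enc (wd n)) ` slice k U = {vs}" by (auto simp: issing_def)
  qed
  then show ?thesis using sat_Single[OF A phib_len[OF g]] eq by simp
qed

lemma DecB_slice:
  assumes g: "goodU m U" and k: "k < m" and A: "adom (phib m ` U) \<subseteq> A"
    and sl: "slice k U = {n}" and R: "R \<in> S" and len: "length as = arity R"
  shows "sat (phib m ` U) A (\<lambda>i. as ! i) (DecB k R) \<longleftrightarrow> (R, as) \<in> wd n"
proof -
  have nII: "n \<in> II" using slice_II[OF g k] sl by auto
  have "(Wrel L k, vs) \<in> phib m ` U \<longleftrightarrow> vs = enc (wd n)" for vs
    using phib_W[OF g] k sl by auto
  then have "sat (phib m ` U) A (\<lambda>i. as ! i) (DecB k R) \<longleftrightarrow>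
    (\<exists>j<c. enc (wd n) ! (j * B) = eR R \<and> (\<forall>a<arity R. as ! a = enc (wd n) ! (j * B + Suc a)))"
    using sat_DecB[OF A R len phib_len[OF g]] by simp
  also have "\<dots> \<longleftrightarrow> (R, as) \<in> wd n" by (rule decode[OF wd_DD[OF nII] R len])
  finally show ?thesis .
qed

lemma OutF_sem:
  assumes g: "goodU m U" and A: "adom (phib m ` U) \<subseteq> A" and R: "R \<in> S" and len: "length as = arity R"
  shows "k \<le> m \<Longrightarrow> sat (phib m ` U) A (\<lambda>i. as ! i) (OutF k R) \<longleftrightarrow> (R, as) \<in> sel k U"
proof (induction k)
  case 0
  then show ?case using sat_InD[OF D0_inst len] by simp
next
  case (Suc k)
  then have k: "k < m" by simp
  show ?case
  proof (cases "issing (slice k U)")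
    case True
    then obtain n where n: "slice k U = {n}" by (auto simp: issing_def)
    have "sat (phib m ` U) A (\<lambda>i. as ! i) (OutF (Suc k) R) \<longleftrightarrow> (R, as) \<in> wd n"
      using Single_slice[OF g k A] DecB_slice[OF g k A n R len] True by simp
    then show ?thesis using n True by (simp add: issing_def)
  next
    case False
    then show ?thesis using Single_slice[OF g k A] Suc.IH Suc.prems by simp
  qed
qed

lemma sel_cases: "sel k U = D0 \<or> (\<exists>j<k. \<exists>n. slice j U = {n} \<and> sel k U = wd n)"
proof (induction k)
  case 0 then show ?case by simp
next
  case (Suc k)
  show ?case
  proof (cases "issing (slice k U)")
    case True
    then obtain n where n: "slice k U = {n}" by (auto simp: issing_def)
    then have "sel (Suc k) U = wd n" by (simp add: issing_def)
    then show ?thesis using n by blast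
  next
    case False
    then have e: "sel (Suc k) U = sel k U" by simp
    from Suc.IH show ?thesis
    proof
      assume "sel k U = D0" then show ?thesis using e by simp
    next
      assume "\<exists>j<k. \<exists>n. slice j U = {n} \<and> sel k U = wd n"
      then obtain j n where "j < k" "slice j U = {n}" "sel k U = wd n" by blast
      then show ?thesis using e by (intro disjI2 exI[of _ j]) auto
    qed
  qed
qed

lemma sat_Sw: "goodU m U \<Longrightarrow> sat (phib m ` U) A \<sigma> Sw \<longleftrightarrow> (m, 0) \<in> U"
  using phib_sw by (simp add: Sw_def)

lemma view_B:
  assumes g: "goodU m U"
  shows "view_apply S (PhiB m) (phib m ` U) = OutB m U"
proof (rule view_apply_eqI)
  fix R :: rel and as :: "'u list" assume R: "R \<in> S" and len: "length as = arity R"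
  define A where "A = adom (phib m ` U) \<union> fo_consts (PhiB m R)"
  have A: "adom (phib m ` U) \<subseteq> A" by (simp add: A_def)
  have "sat_adom (phib m ` U) (PhiB m R) as = sat (phib m ` U) A (\<lambda>i. as ! i) (PhiB m R)"
    by (simp add: sat_adom_def A_def)
  also have "\<dots> \<longleftrightarrow> ((m, 0) \<in> U \<and> (R, as) \<in> D0) \<or> ((m, 0) \<notin> U \<and> (R, as) \<in> sel m U)"
    unfolding PhiB_def sat.simps sat_Sw[OF g] sat_InD[OF D0_inst len] OutF_sem[OF g A R len le_refl] ..
  also have "\<dots> \<longleftrightarrow> (R, as) \<in> OutB m U" by (simp add: OutB_def)
  finally show "sat_adom (phib m ` U) (PhiB m R) as \<longleftrightarrow> (R, as) \<in> OutB m U" .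
next
  fix R :: rel and as :: "'u list" assume o: "(R, as) \<in> OutB m U"
  show "R \<in> S \<and> length as = arity R \<and> set as \<subseteq> adom (phib m ` U) \<union> fo_consts (PhiB m R)"
  proof (cases "OutB m U = D0")
    case True
    then have D: "(R, as) \<in> D0" using o by simp
    then have "R \<in> S \<and> length as = arity R" using D0_inst by (auto simp: instance_over_def)
    moreover have "set as \<subseteq> fo_consts (PhiB m R)"
      using consts_InD[OF D0_inst D] by (auto simp: PhiB_def)
    ultimately show ?thesis by blast
  next
    case False
    then have "(m, 0) \<notin> U" and sm: "OutB m U = sel m U" by (auto simp: OutB_def split: if_splits)
    then obtain j n where jn: "j < m" "slice j U = {n}" "sel m U = wd n"
      using sel_cases[of m U] False by auto
    have nII: "n \<in> II" using slice_II[OF g jn(1)] jn(2) by auto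
    have Rw: "(R, as) \<in> wd n" using o sm jn(3) by simp
    then have RS: "R \<in> S \<and> length as = arity R" using DDinst[OF wd_DD[OF nII]] by (auto simp: instance_over_def)
    have fact: "(Wrel L j, enc (wd n)) \<in> phib m ` U" using phib_W[OF g] jn(1,2) by auto
    have "set (enc (wd n)) \<subseteq> adom (phib m ` U)" by (rule fact_adom[OF fact])
    moreover have "set as \<subseteq> set (enc (wd n))"
    proof
      fix x assume "x \<in> set as"
      then obtain a where a: "a < length as" "as ! a = x" by (auto simp: in_set_conv_nth)
      obtain j' where j': "j' < c" "\<forall>a<arity R. as ! a = enc (wd n) ! (j' * B + Suc a)"
        using decode[OF wd_DD[OF nII], of R as] RS Rw by blast
      have aR: "a < arity R" using a RS by simp
      have "Suc a < B" using ar_le[of R] RS aR by (simp add: B_def)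
      then have "j' * B + Suc a < length (enc (wd n))" using jB_lt[OF j'(1) \<open>Suc a < B\<close>] by simp
      then show "x \<in> set (enc (wd n))" using j'(2) aR a(2) by (metis nth_mem)
    qed
    ultimately show ?thesis using RS by blast
  qed
qed

lemma fv_Single: "fv (Single k) = {}"
  by (auto simp: Single_def fv_exN fv_allN AtomW_def eqs_def fv_bigconj vars_def V2_def)

lemma fv_DisjB: "R \<in> S \<Longrightarrow> fv (DisjB R) \<subseteq> {..<arity R} \<union> {Amax..<Amax + L}"
proof
  fix x assume R: "R \<in> S" and x: "x \<in> fv (DisjB R)"
  have aB: "a < arity R \<Longrightarrow> Suc a < B" for a using ar_le[OF R] by (simp add: B_def)
  from x obtain j where j: "j \<in> set [0..<c]"
    and xj: "x \<in> fv (Conj (FEq (Var (Amax + j * B)) (Const (eR R)))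
      (bigconj (map (\<lambda>a. FEq (Var a) (Var (Amax + j * B + Suc a))) [0..<arity R])))"
    unfolding DisjB_def fv_bigdisj by auto
  have jc: "j < c" using j by simp
  have xj': "x = Amax + j * B \<or> (\<exists>a\<in>set [0..<arity R]. x \<in> {a, Amax + j * B + Suc a})"
    using xj by (simp add: fv_bigconj) blast
  show "x \<in> {..<arity R} \<union> {Amax..<Amax + L}"
  proof (cases "x = Amax + j * B")
    case True
    then show ?thesis using jB_lt[OF jc, of 0] by (simp add: B_def)
  next
    case False
    then obtain a where a: "a < arity R" "x \<in> {a, Amax + j * B + Suc a}" using xj' by auto
    then consider "x = a" | "x = Amax + j * B + Suc a" by blast
    then show ?thesis
    proof cases
      case 1 then show ?thesis using a by simp
    next
      case 2
      have "j * B + Suc a < L" by (rule jB_lt[OF jc aB[OF a(1)]])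
      then show ?thesis using 2 by simp
    qed
  qed
qed

lemma fv_DecB: "R \<in> S \<Longrightarrow> fv (DecB k R) \<subseteq> {..<arity R}"
proof -
  assume R: "R \<in> S"
  have "fv (DecB k R) = (fv (AtomW k Amax) \<union> fv (DisjB R)) - {Amax..<Amax + L}"
    by (simp add: DecB_def fv_exN)
  also have "fv (AtomW k Amax) = {Amax..<Amax + L}" by (auto simp: AtomW_def vars_def)
  finally show ?thesis using fv_DisjB[OF R] by auto
qed

lemma fv_OutF: "R \<in> S \<Longrightarrow> fv (OutF k R) \<subseteq> {..<arity R}"
  by (induction k) (use fv_InD[OF D0_inst] fv_Single fv_DecB in auto)

lemma rels_OutF: "rels (OutF k R) \<subseteq> Wrel L ` {..<k}"
  by (induction k) (auto simp: rels_InD Single_def DecB_def rels_exN rels_allN AtomW_def eqs_def DisjB_def rels_bigconj rels_bigdisj)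

definition Sinb :: "nat \<Rightarrow> rel set" where "Sinb m = insert swrel (Wrel L ` {..<m})"

lemma fo_view_B: "fo_view (Sinb m) S (PhiB m)"
  unfolding fo_view_def
proof (intro conjI ballI)
  show "schema (Sinb m)" by (simp add: schema_def Sinb_def)
  show "schema S" by (rule S)
  fix R assume R: "R \<in> S"
  show "fv (PhiB m R) \<subseteq> {..<arity R}"
    using fv_OutF[OF R] fv_InD[OF D0_inst, of R] by (auto simp: PhiB_def Sw_def)
  show "rels (PhiB m R) \<subseteq> Sinb m"
    using rels_OutF[of m R] by (auto simp: PhiB_def Sw_def rels_InD Sinb_def)
qed

end

lemma pmf_eq_except:
  fixes P Q :: "'a pmf"
  assumes "\<And>D. D \<noteq> D0 \<Longrightarrow> pmf Q D = pmf P D"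
  shows "Q = P"
proof (rule pmf_eqI)
  fix D show "pmf Q D = pmf P D"
  proof (cases "D = D0")
    case True
    have cQ: "measure_pmf.prob Q (UNIV - {D0}) = 1 - pmf Q D0"
      using measure_pmf.prob_compl[of "{D0}" Q] by (simp add: measure_pmf_single)
    have cP: "measure_pmf.prob P (UNIV - {D0}) = 1 - pmf P D0"
      using measure_pmf.prob_compl[of "{D0}" P] by (simp add: measure_pmf_single)
    have "measure_pmf.prob Q (UNIV - {D0}) = measure_pmf.prob P (UNIV - {D0})"
      unfolding measure_pmf_conv_infsetsum by (rule infsetsum_cong) (use assms in auto)
    then show ?thesis using True cQ cP by simp
  qed (use assms in auto)
qed



context b1setup
begin

lemma sel_slices: "(\<And>j. j < k \<Longrightarrow> slice j U = slice j U') \<Longrightarrow> sel k U = sel k U'"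
  by (induction k) auto

abbreviation \<Lambda> :: "nat set pmf" where "\<Lambda> \<equiv> Lam qb"

definition Swp :: "real \<Rightarrow> nat \<Rightarrow> (nat \<times> nat) set pmf" where
  "Swp r m = map_pmf (\<lambda>b. if b then {(m, 0)} else {}) (bernoulli_pmf r)"
definition Zm :: "real \<Rightarrow> nat \<Rightarrow> (nat \<times> nat) set pmf" where
  "Zm r m = upair (Swp r m) (layers m \<Lambda>)"

lemma Lam_sup': "LL \<in> set_pmf \<Lambda> \<Longrightarrow> finite LL \<and> LL \<subseteq> II"
  using Lam_sup qb_pos by blast

lemma layers_good: "Y \<in> set_pmf (layers m \<Lambda>) \<Longrightarrow> finite Y \<and> Y \<subseteq> {..<m} \<times> II"
proof -
  assume Y: "Y \<in> set_pmf (layers m \<Lambda>)"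
  then have Y1: "Y \<subseteq> {..<m} \<times> UNIV" and Y2: "\<And>j. j < m \<Longrightarrow> slice j Y \<in> set_pmf \<Lambda>"
    using layers_sup by blast+
  have sub: "Y \<subseteq> (\<Union>j\<in>{..<m}. {j} \<times> slice j Y)" using Y1 by (auto simp: slice_def)
  have sf: "finite (slice j Y) \<and> slice j Y \<subseteq> II" if "j < m" for j using Lam_sup'[OF Y2[OF that]] .
  have "finite (\<Union>j\<in>{..<m}. {j} \<times> slice j Y)" using sf by (intro finite_UN_I) auto
  moreover have "(\<Union>j\<in>{..<m}. {j} \<times> slice j Y) \<subseteq> {..<m} \<times> II" using sf by auto
  ultimately show ?thesis using sub by (meson finite_subset subset_trans)
qed

lemma Swp_sup: "X \<in> set_pmf (Swp r m) \<Longrightarrow> X \<subseteq> {(m, 0)}"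
  by (auto simp: Swp_def)

lemma Zm_good: "U \<in> set_pmf (Zm r m) \<Longrightarrow> goodU m U"
proof -
  assume "U \<in> set_pmf (Zm r m)"
  then obtain X Y where U: "U = X \<union> Y" "X \<in> set_pmf (Swp r m)" "Y \<in> set_pmf (layers m \<Lambda>)"
    by (auto simp: Zm_def set_pmf_upair)
  have "X \<subseteq> {(m, 0)}" using Swp_sup U(2) by blast
  moreover have "finite Y \<and> Y \<subseteq> {..<m} \<times> II" using layers_good U(3) by blast
  ultimately show ?thesis using U(1) finite_subset by (auto simp: goodU_def)
qed

lemma ti_Zm: "ti (Zm r m)"
  unfolding Zm_def
proof (rule ti_upair[where UA="{(m, 0)}" and UB="{..<m} \<times> UNIV"])
  show "ti (Swp r m)" unfolding Swp_def by (rule ti_small) auto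
  show "ti (layers m \<Lambda>)" by (rule layers_ti[OF Lam_ti])
  show "\<And>X. X \<in> set_pmf (Swp r m) \<Longrightarrow> X \<subseteq> {(m, 0)}" by (rule Swp_sup)
  show "\<And>Y. Y \<in> set_pmf (layers m \<Lambda>) \<Longrightarrow> Y \<subseteq> {..<m} \<times> UNIV" using layers_sup by blast
qed auto

lemma phib_inj: "inj_on (phib m) (({..<m} \<times> II) \<union> {(m, 0)})"
proof (rule inj_onI)
  fix x y assume x: "x \<in> ({..<m} \<times> II) \<union> {(m, 0)}" and y: "y \<in> ({..<m} \<times> II) \<union> {(m, 0)}"
    and e: "phib m x = phib m y"
  obtain k n where xk: "x = (k, n)" by (cases x)
  obtain k' n' where yk: "y = (k', n')" by (cases y)
  show "x = y"
  proof (cases "k < m")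
    case True
    then have nII: "n \<in> II" using x xk by auto
    show ?thesis
    proof (cases "k' < m")
      case True': True
      then have n'II: "n' \<in> II" using y yk by auto
      have "(Wrel L k, enc (wd n)) = (Wrel L k', enc (wd n'))" using e xk yk True True' by (simp add: phib_def)
      then have "k = k'" "enc (wd n) = enc (wd n')" using Wrel_inj by auto
      moreover have "n = n'" using calculation(2) encw_inj nII n'II by (auto dest: inj_onD)
      ultimately show ?thesis using xk yk by simp
    next
      case False
      have "(Wrel L k, enc (wd n)) = (swrel, [])" using e xk yk True False by (simp add: phib_def)
      then show ?thesis using Wrel_sw by simp
    qed
  next
    case False
    then have "x = (m, 0)" using x xk by auto
    moreover have "\<not> k' < m"
    proof
      assume k': "k' < m"
      have "(swrel, []) = (Wrel L k', enc (wd n'))" using e xk yk False k' by (simp add: phib_def)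
      then show False using sw_Wrel by simp
    qed
    then have "y = (m, 0)" using y yk by auto
    ultimately show ?thesis by simp
  qed
qed

lemma pdb_B: "pdb (Sinb m) (map_pmf ((`) (phib m)) (Zm r m))"
  unfolding pdb_def
proof (intro conjI ballI)
  show "schema (Sinb m)" by (simp add: schema_def Sinb_def)
  fix X assume "X \<in> set_pmf (map_pmf ((`) (phib m)) (Zm r m))"
  then obtain U where U: "U \<in> set_pmf (Zm r m)" "X = phib m ` U" by auto
  have g: "goodU m U" by (rule Zm_good[OF U(1)])
  show "instance_over (Sinb m) X"
    unfolding instance_over_def
  proof (intro conjI ballI)
    show "finite X" using g U(2) by (simp add: goodU_def)
    fix f assume "f \<in> X"
    then obtain k n where kn: "(k, n) \<in> U" "f = phib m (k, n)" using U(2) by auto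
    show "case f of (R, as) \<Rightarrow> R \<in> Sinb m \<and> length as = arity R"
      using kn by (auto simp: phib_def Sinb_def arity_def Wrel_def swrel_def)
  qed
qed

definition cs :: real where "cs = measure_pmf.prob \<Lambda> {X. issing X}"

lemma cs_eq: "cs = s * Tq qb 0"
proof -
  have disj: "disjoint_family (\<lambda>n. {{n}} :: nat set set)" by (auto simp: disjoint_family_on_def)
  have "(\<lambda>n. measure_pmf.prob \<Lambda> {{n}}) sums measure_pmf.prob \<Lambda> (\<Union>n. {{n}})"
    by (rule measure_pmf.finite_measure_UNION[OF _ disj]) auto
  moreover have "(\<Union>n. {{n}}) = {X :: nat set. issing X}" by (auto simp: issing_def)
  ultimately have "(\<lambda>n. qb n * Tq qb 0) sums cs" by (simp add: cs_def measure_pmf_single pmf_Lam_single)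
  moreover have "(\<lambda>n. qb n * Tq qb 0) sums (s * Tq qb 0)"
    unfolding s_def by (rule sums_mult2[OF summable_sums[OF qb_summable]])
  ultimately show ?thesis by (simp add: sums_unique2)
qed

lemma aD_W: "D \<in> W \<Longrightarrow> measure_pmf.prob \<Lambda> {X. issing X \<and> wd (the_elem X) = D} = pmf P D * Tq qb 0"
proof -
  assume D: "D \<in> W"
  define i where "i = to_nat_on W D"
  have i: "i \<in> II" "wd i = D" using wd_surj[OF D] by (auto simp: i_def)
  have "measure_pmf.prob \<Lambda> {X. issing X \<and> wd (the_elem X) = D} = measure_pmf.prob \<Lambda> {{i}}"
  proof (rule prob_cong_support)
    fix X assume "X \<in> set_pmf \<Lambda>"
    then have XI: "X \<subseteq> II" using Lam_sup' by blast
    show "X \<in> {X. issing X \<and> wd (the_elem X) = D} \<longleftrightarrow> X \<in> {{i}}"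
    proof
      assume "X \<in> {X. issing X \<and> wd (the_elem X) = D}"
      then obtain n where n: "X = {n}" "wd n = D" by (auto simp: issing_def)
      then have "n = i" using XI i wd_inj by auto
      then show "X \<in> {{i}}" using n by simp
    qed (use i in \<open>auto simp: issing_def\<close>)
  qed
  also have "\<dots> = qb i * Tq qb 0" by (simp add: measure_pmf_single pmf_Lam_single)
  also have "qb i = pmf P D" using i by (simp add: qb_def)
  finally show ?thesis .
qed

lemma aD_out: "D \<notin> DD \<Longrightarrow> measure_pmf.prob \<Lambda> {X. issing X \<and> wd (the_elem X) = D} = 0"
proof (rule prob_zero_support)
  fix X assume D: "D \<notin> DD" and "X \<in> set_pmf \<Lambda>"
  then have XI: "X \<subseteq> II" using Lam_sup' by blast
  show "X \<notin> {X. issing X \<and> wd (the_elem X) = D}"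
  proof
    assume "X \<in> {X. issing X \<and> wd (the_elem X) = D}"
    then obtain n where n: "X = {n}" "wd n = D" by (auto simp: issing_def)
    then show False using XI wd_DD D by auto
  qed
qed

lemma g_rec:
  assumes D: "D \<noteq> D0"
  shows "measure_pmf.prob (layers (Suc k) \<Lambda>) {Y. sel (Suc k) Y = D} =
    measure_pmf.prob \<Lambda> {X. issing X \<and> wd (the_elem X) = D} + (1 - cs) * measure_pmf.prob (layers k \<Lambda>) {Y. sel k Y = D}"
proof -
  define tg where "tg = map_pmf ((`) (Pair k)) \<Lambda>"
  define T1 where "T1 = {X. issing (slice k X) \<and> wd (the_elem (slice k X)) = D}"
  define T2 where "T2 = {X. \<not> issing (slice k X)}"
  have "measure_pmf.prob (layers (Suc k) \<Lambda>) {Y. sel (Suc k) Y = D} =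
      measure_pmf.prob (pair_pmf tg (layers k \<Lambda>)) {(X, Y). sel (Suc k) (X \<union> Y) = D}"
    unfolding layers.simps upair_def tg_def measure_map_pmf
    by (intro arg_cong[where f="measure_pmf.prob _"]) auto
  also have "\<dots> = measure_pmf.prob (pair_pmf tg (layers k \<Lambda>))
      ({(X, Y). X \<in> T1 \<and> Y \<in> UNIV} \<union> {(X, Y). X \<in> T2 \<and> Y \<in> {Y. sel k Y = D}})"
  proof (rule prob_cong_support)
    fix z assume "z \<in> set_pmf (pair_pmf tg (layers k \<Lambda>))"
    then obtain X Y where z: "z = (X, Y)" "X \<in> set_pmf tg" "Y \<in> set_pmf (layers k \<Lambda>)" by auto
    obtain Lx where Lx: "X = Pair k ` Lx" using z(2) by (auto simp: tg_def)
    have Yk: "Y \<subseteq> {..<k} \<times> UNIV" using layers_sup z(3) by blast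
    have sk: "slice k (X \<union> Y) = slice k X" using Yk Lx by (auto simp: slice_def)
    have sj: "sel k (X \<union> Y) = sel k Y"
      by (rule sel_slices) (use Lx in \<open>auto simp: slice_def\<close>)
    show "z \<in> {(X, Y). sel (Suc k) (X \<union> Y) = D} \<longleftrightarrow>
      z \<in> {(X, Y). X \<in> T1 \<and> Y \<in> UNIV} \<union> {(X, Y). X \<in> T2 \<and> Y \<in> {Y. sel k Y = D}}"
      using z(1) sk sj by (auto simp: T1_def T2_def)
  qed
  also have "\<dots> = measure_pmf.prob (pair_pmf tg (layers k \<Lambda>)) {(X, Y). X \<in> T1 \<and> Y \<in> UNIV} +
      measure_pmf.prob (pair_pmf tg (layers k \<Lambda>)) {(X, Y). X \<in> T2 \<and> Y \<in> {Y. sel k Y = D}}"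
    by (rule measure_pmf.finite_measure_Union) (auto simp: T1_def T2_def)
  also have "\<dots> = measure_pmf.prob tg T1 * measure_pmf.prob (layers k \<Lambda>) UNIV +
      measure_pmf.prob tg T2 * measure_pmf.prob (layers k \<Lambda>) {Y. sel k Y = D}"
    by (simp only: prob_pair_product)
  also have "\<dots> = measure_pmf.prob tg T1 + measure_pmf.prob tg T2 * measure_pmf.prob (layers k \<Lambda>) {Y. sel k Y = D}"
    by simp
  also have "measure_pmf.prob tg T1 = measure_pmf.prob \<Lambda> {X. issing X \<and> wd (the_elem X) = D}"
  proof -
    have "\<And>LL. slice k (Pair k ` LL) = LL" by (auto simp: slice_def)
    then show ?thesis unfolding tg_def T1_def measure_map_pmf vimage_def by simp
  qed
  also have "measure_pmf.prob tg T2 = 1 - cs"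
  proof -
    have "\<And>LL. slice k (Pair k ` LL) = LL" by (auto simp: slice_def)
    then have "measure_pmf.prob tg T2 = measure_pmf.prob \<Lambda> (space (measure_pmf \<Lambda>) - {X. issing X})"
      unfolding tg_def T2_def measure_map_pmf vimage_def by (intro arg_cong[where f="measure_pmf.prob _"]) auto
    then show ?thesis unfolding cs_def using measure_pmf.prob_compl[of "{X. issing X}" \<Lambda>] by simp
  qed
  finally show ?thesis .
qed

lemma g_closed:
  assumes D: "D \<noteq> D0"
  shows "measure_pmf.prob (layers k \<Lambda>) {Y. sel k Y = D} * cs =
    measure_pmf.prob \<Lambda> {X. issing X \<and> wd (the_elem X) = D} * (1 - (1 - cs) ^ k)"
proof (induction k)
  case 0 then show ?case using D by simp
next
  case (Suc k)
  define a where "a = measure_pmf.prob \<Lambda> {X. issing X \<and> wd (the_elem X) = D}"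
  define g where "g = measure_pmf.prob (layers k \<Lambda>) {Y. sel k Y = D}"
  have IH: "g * cs = a * (1 - (1 - cs) ^ k)" using Suc by (simp add: a_def g_def)
  have "measure_pmf.prob (layers (Suc k) \<Lambda>) {Y. sel (Suc k) Y = D} * cs = a * cs + (1 - cs) * (g * cs)"
    unfolding g_rec[OF D] a_def g_def by (simp add: algebra_simps)
  also have "\<dots> = a * cs + (1 - cs) * (a * (1 - (1 - cs) ^ k))" using IH by simp
  also have "\<dots> = a * (1 - (1 - cs) ^ Suc k)" by (simp add: algebra_simps)
  finally show ?case by (simp add: a_def)
qed

lemma outB_prob:
  assumes D: "D \<noteq> D0" and r: "0 \<le> r" "r \<le> 1"
  shows "pmf (map_pmf (OutB m) (Zm r m)) D = (1 - r) * measure_pmf.prob (layers m \<Lambda>) {Y. sel m Y = D}"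
proof -
  have "pmf (map_pmf (OutB m) (Zm r m)) D = measure_pmf.prob (pair_pmf (Swp r m) (layers m \<Lambda>)) {(X, Y). OutB m (X \<union> Y) = D}"
    unfolding pmf_map Zm_def upair_def measure_map_pmf
    by (intro arg_cong[where f="measure_pmf.prob _"]) auto
  also have "\<dots> = measure_pmf.prob (pair_pmf (Swp r m) (layers m \<Lambda>)) {(X, Y). X \<in> {{}} \<and> Y \<in> {Y. sel m Y = D}}"
  proof (rule prob_cong_support)
    fix z assume "z \<in> set_pmf (pair_pmf (Swp r m) (layers m \<Lambda>))"
    then obtain X Y where z: "z = (X, Y)" "X \<in> set_pmf (Swp r m)" "Y \<in> set_pmf (layers m \<Lambda>)" by auto
    have X: "X \<subseteq> {(m, 0)}" using Swp_sup z(2) by blast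
    have Ym: "Y \<subseteq> {..<m} \<times> UNIV" using layers_sup z(3) by blast
    have sj: "sel m (X \<union> Y) = sel m Y"
      by (rule sel_slices) (use X in \<open>auto simp: slice_def\<close>)
    have mem: "(m, 0) \<in> X \<union> Y \<longleftrightarrow> X \<noteq> {}" using X Ym by auto
    show "z \<in> {(X, Y). OutB m (X \<union> Y) = D} \<longleftrightarrow> z \<in> {(X, Y). X \<in> {{}} \<and> Y \<in> {Y. sel m Y = D}}"
      using z(1) sj mem D by (auto simp: OutB_def)
  qed
  also have "\<dots> = measure_pmf.prob (Swp r m) {{}} * measure_pmf.prob (layers m \<Lambda>) {Y. sel m Y = D}"
    by (rule prob_pair_product)
  also have "measure_pmf.prob (Swp r m) {{}} = 1 - r"
    unfolding Swp_def measure_pmf_single using bern_single_pmf(2)[OF r, of "(m, 0)"] by simp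
  finally show ?thesis .
qed

lemma part1: "in_FO_TI S P"
proof -
  define T0 where "T0 = Tq qb 0"
  have T0: "0 < T0" by (simp add: T0_def Tq_pos)
  have cs0: "0 \<le> cs" by (simp add: cs_def)
  have cs1: "cs \<le> 1" by (simp add: cs_def)
  obtain m r where mr: "0 \<le> r" "r \<le> 1" "\<And>D. D \<noteq> D0 \<Longrightarrow> pmf (map_pmf (OutB m) (Zm r m)) D = pmf P D"
  proof (cases "s = 0")
    case True
    have W0: "W = {}"
    proof (rule ccontr)
      assume "W \<noteq> {}"
      then obtain D where D: "D \<in> W" by blast
      have "qb (to_nat_on W D) \<le> s"
        unfolding s_def using sum_le_suminf[OF qb_summable, of "{to_nat_on W D}"] qb_nonneg by simp
      moreover have "0 < qb (to_nat_on W D)" using wd_surj[OF D] qb_pos by blast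
      ultimately show False using True by simp
    qed
    show ?thesis
    proof (rule that[of 0 0])
      fix D assume D: "D \<noteq> D0"
      have "pmf P D = 0" using W0 D PDD by (auto simp: W_def set_pmf_iff)
      moreover have "pmf (map_pmf (OutB 0) (Zm 0 0)) D = 0"
        using outB_prob[OF D, of 0 0] D by simp
      ultimately show "pmf (map_pmf (OutB 0) (Zm 0 0)) D = pmf P D" by simp
    qed auto
  next
    case False
    then have s0: "0 < s" using s_nonneg by simp
    have csp: "0 < cs" using s0 T0 by (simp add: cs_eq T0_def)
    obtain m where m: "(1 - cs) ^ m < 1 - s" using real_arch_pow_inv[of "1 - s" "1 - cs"] s_lt1 csp by auto
    have xm0: "0 \<le> (1 - cs) ^ m" using cs1 by simp
    define G where "G = (1 - (1 - cs) ^ m) / s"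
    have G1: "1 < G" using m s0 by (simp add: G_def field_simps)
    define r where "r = 1 - 1 / G"
    have r: "0 \<le> r" "r \<le> 1" using G1 by (auto simp: r_def field_simps)
    show ?thesis
    proof (rule that[OF r])
      fix D assume D: "D \<noteq> D0"
      define a where "a = measure_pmf.prob \<Lambda> {X. issing X \<and> wd (the_elem X) = D}"
      have ga: "measure_pmf.prob (layers m \<Lambda>) {Y. sel m Y = D} = a * (1 - (1 - cs) ^ m) / cs"
        using g_closed[OF D, of m] csp by (simp add: a_def field_simps)
      have a: "a = pmf P D * T0"
      proof (cases "D \<in> DD")
        case True then have "D \<in> W" using D by (simp add: W_def)
        then show ?thesis unfolding a_def T0_def by (rule aD_W)
      next
        case False
        then have "pmf P D = 0" using PDD by (metis set_pmf_iff)
        then show ?thesis unfolding a_def using aD_out[OF False] by simp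
      qed
      have "pmf (map_pmf (OutB m) (Zm r m)) D = (1 - r) * (a * (1 - (1 - cs) ^ m) / cs)"
        using outB_prob[OF D r] ga by simp
      also have "\<dots> = pmf P D * ((1 - r) * T0 * (1 - (1 - cs) ^ m) / cs)" using a by simp
      also have "(1 - r) * T0 * (1 - (1 - cs) ^ m) / cs = 1"
        using G1 s0 T0 csp by (simp add: r_def G_def cs_eq T0_def field_simps)
      finally show "pmf (map_pmf (OutB m) (Zm r m)) D = pmf P D" by simp
    qed
  qed
  have PP: "map_pmf (OutB m) (Zm r m) = P" by (rule pmf_eq_except[OF mr(3)])
  define I where "I = map_pmf ((`) (phib m)) (Zm r m)"
  have "map_pmf (view_apply S (PhiB m)) I = map_pmf (OutB m) (Zm r m)"
    unfolding I_def map_pmf_comp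
    by (rule map_pmf_cong[OF refl]) (use Zm_good view_B in auto)
  then have "P = map_pmf (view_apply S (PhiB m)) I" using PP by simp
  moreover have "tuple_independent I"
    unfolding tuple_independent_ti I_def
    by (rule ti_map_inj[OF ti_Zm _ phib_inj]) (use Zm_good in \<open>auto simp: goodU_def\<close>)
  moreover have "pdb (Sinb m) I" unfolding I_def by (rule pdb_B)
  ultimately show ?thesis unfolding in_FO_TI_def using fo_view_B by blast
qed

end

theorem theorem6p8:
  fixes DD :: "'u inst set" and S :: "rel set"
  assumes "countable (UNIV :: 'u set)" and "infinite (UNIV :: 'u set)"
    and "schema S"
    and "DD \<noteq> {}"
    and "\<forall>D \<in> DD. instance_over S D"
  shows "(bounded_instance_size DD \<longrightarrow>
            (\<forall>P :: 'u inst pmf. pdb S P \<and> worlds P = DD \<longrightarrow> in_FO_TI S P))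
       \<and> (\<not> bounded_instance_size DD \<longrightarrow>
            (\<exists>P1 P2 :: 'u inst pmf. pdb S P1 \<and> pdb S P2 \<and> worlds P1 = DD \<and> worlds P2 = DD \<and>
               in_FO_TI S P1 \<and> \<not> in_FO_TI S P2))"
proof -
  obtain \<nu> :: "nat \<Rightarrow> 'u" where nu: "inj \<nu>" using infinite_countable_subset[OF assms(2)] by blast
  have inst: "\<And>D. D \<in> DD \<Longrightarrow> instance_over S D" using assms(5) by blast
  have cntDD: "countable DD"
  proof (rule countable_subset[OF _ countable_instances[OF assms(1)]])
    show "DD \<subseteq> {D. finite D}" using inst by (auto simp: instance_over_def)
  qed
  have part1: "\<forall>P :: 'u inst pmf. pdb S P \<and> worlds P = DD \<longrightarrow> in_FO_TI S P"
    if bd: "bounded_instance_size DD"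
  proof (intro allI impI)
    obtain c where c: "\<And>D. D \<in> DD \<Longrightarrow> card D \<le> c" using bd by (auto simp: bounded_instance_size_def)
    fix P :: "'u inst pmf" assume "pdb S P \<and> worlds P = DD"
    then have PDD: "set_pmf P = DD" by (simp add: worlds_def)
    have "b1setup S DD \<nu> P c"
      unfolding b1setup_def using assms(3) inst cntDD nu PDD c by blast
    then show "in_FO_TI S P" by (rule b1setup.part1)
  qed
  have part2: "\<exists>P1 P2 :: 'u inst pmf. pdb S P1 \<and> pdb S P2 \<and> worlds P1 = DD \<and> worlds P2 = DD \<and>
               in_FO_TI S P1 \<and> \<not> in_FO_TI S P2"
    if nb: "\<not> bounded_instance_size DD"
  proof -
    have "p1setup S DD \<nu>"
      unfolding p1setup_def using assms(3,4) inst cntDD nu by blast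
    then obtain P1 where P1: "pdb S P1" "worlds P1 = DD" "in_FO_TI S P1"
      using p1setup.p1_result by blast
    have big: "\<exists>D\<in>DD. k < card D" for k :: nat
      using nb by (auto simp: bounded_instance_size_def not_le)
    define E where "E n = (SOME D. D \<in> DD \<and> (n * 2^(n+3))^n < card D)" for n :: nat
    have E: "E n \<in> DD \<and> (n * 2^(n+3))^n < card (E n)" for n
      unfolding E_def by (rule someI_ex) (use big in blast)
    have "set_pmf P1 = DD" using P1(2) by (simp add: worlds_def)
    then obtain P2 :: "'u inst pmf" where P2: "set_pmf P2 = DD"
      "\<forall>n A. E n \<in> A \<longrightarrow> 1/2^(n+2) \<le> measure_pmf.prob P2 A"
      using heavy_pmf_exists[of P1 DD E] E by blast
    have notP2: "\<not> in_FO_TI S P2"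
      by (rule not_FO_TI_heavy[of E P2 S]) (use E P2 in auto)
    have "pdb S P2" using P2(1) assms(3) inst by (simp add: pdb_def)
    then show ?thesis using P1 P2(1) notP2 by (auto simp: worlds_def)
  qed
  show ?thesis using part1 part2 by blast
qed

end
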